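(* Let $n$ be a positive integer, $1\le k\le n$, $w\in\mathfrak S_n$. The map $\mathrm{Rev}_{n,k,w}:\mathcal B_w(n,k)\to\mathcal C_w(n,k+1)$, $[\rho]\mapsto\mathrm{Rev}_{n,k,w}(\rho)$, is a well-defined poset isomorphism, and its inverse sends $R\in\mathcal C_w(n,k+1)$ to the set $\mathscr L(\mathrm{Inv}_k(w),\le_R)$ of linear extensions of $(\mathrm{Inv}_k(w),\le_R)$ (which is a single commutation class).
   Context: $\mathfrak S_n$ is the symmetric group on $[n]$. For $m\ge0$, $\binom{[n]}{m}$ is the set of $m$-subsets of $[n]$ written $[x_1,\dots,x_m]$ with $x_1<\dots<x_m$; $X_i$ is $X$ with $x_i$ removed; $P(X)=\{X_1,\dots,X_m\}$ with lex order $(X_m,\dots,X_1)$ and antilex order $(X_1,\dots,X_m)$; a prefix is a set $\{X_m,\dots,X_i\}$, a suffix a set $\{X_i,\dots,X_1\}$ (empty set counts as both). $\mathrm{Inv}_m(w)=\{[x_1,\dots,x_m]\in\binom{[n]}{m}:w^{-1}(x_1)>\dots>w^{-1}(x_m)\}$. $X$ is an $m$-quasi-inversion if exactly one pair $[x_a,x_b]$, $a<b$, is not in $\mathrm{Inv}_2(w)$. Quasi-inversion relations on $\mathrm{Inv}_m(w)$: for a quasi-inversion $X\in\binom{[n]}{m+1}$ with $P(X)\cap\mathrm{Inv}_m(w)=\{X_i,X_{i+1}\}$, $X_i<X_{i+1}$ if $m-i$ is odd, $X_{i+1}<X_i$ if $m-i$ is even; $\mathcal P_w(n,m)$ is the reflexive-transitive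 closure on $\mathrm{Inv}_m(w)$. $\mathcal A_w(n,k)$: total orders $\rho$ of $\mathrm{Inv}_k(w)$ that are linear extensions of $\mathcal P_w(n,k)$ with $\rho|_{P(X)}$ lex or antilex for every $X\in\mathrm{Inv}_{k+1}(w)$. $\mathrm{Rev}_{n,k,w}(\rho)=\{X\in\mathrm{Inv}_{k+1}(w):\rho|_{P(X)}=(X_1,\dots,X_{k+1})\}$. Elements of $\mathrm{Inv}_k(w)$ commute if incomparable in $\mathcal P_w(n,k)$ and not both in some packet $P(Z)$, $Z\in\binom{[n]}{k+1}$; $\sim_w$ is generated by swapping adjacent commuting elements. For $X\in\mathrm{Inv}_{k+1}(w)$ whose packet occupies consecutive positions of $\rho$ in lex order, the lex-to-antilex packet flip reverses that block. $\mathcal B_w(n,k)$ is the poset on $\mathcal A_w(n,k)/\!\sim_w$ with $[\rho]\le[\sigma]$ iff $\sigma$ is obtained from $\rho$ by commutations and lex-to-antilex packet flips. $R\subseteq\mathrm{Inv}_{m}(w)$ is consistent if it is a lower ideal of $\mathcal P_w(n,m)$ and $P(X)\cap R$ is a prefix or suffix of $P(X)$ for all $X\in\mathrm{Inv}_{m+1}(w)$; $\mathcal C_w(n,m)$ is the set of consistent sets ordered by $R\le R'$ iff there is a chain of consistent sets $R=R_0\subset\dots\subset R_t=R'$ with $|R_{j+1}\setminus R_j|=1$. For $R\in\mathcal C_w(n,k+1)$, $G_R$ is the directed graph on $\mathrm{Inv}_k(w)$ with edges $X\to Y$ for each quasi-inversion relation $X<Y$ on $\mathrm{Inv}_k(w)$,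 $X_i\to X_{i+1}$ ($1\le i\le k$) for $X\in R$, and $X_{i+1}\to X_i$ ($1\le i\le k$) for $X\in\mathrm{Inv}_{k+1}(w)\setminus R$. $G_R$ is acyclic, and $\le_R$ denotes the partial order on $\mathrm{Inv}_k(w)$ given by its reflexive-transitive closure. *)

theory Defs
  imports "HOL-Combinatorics.Permutations"
begin

(* Subsets of [n] are finite sets of naturals; X_i = X with its i-th smallest element removed *)
definition del :: "nat set \<Rightarrow> nat \<Rightarrow> nat set" where
  "del X i = X - {sorted_list_of_set X ! (i - 1)}"

definition packet :: "nat set \<Rightarrow> nat set set" where
  "packet X = {X - {x} | x. x \<in> X}"

definition lexl :: "nat set \<Rightarrow> nat set list" where
  "lexl X = map (del X) (rev [1..<card X + 1])"

definition antilexl :: "nat set \<Rightarrow> nat set list" where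
  "antilexl X = map (del X) [1..<card X + 1]"

definition subs :: "nat \<Rightarrow> nat \<Rightarrow> nat set set" where
  "subs n m = {X. X \<subseteq> {1..n} \<and> card X = m}"

definition Inv :: "nat \<Rightarrow> (nat \<Rightarrow> nat) \<Rightarrow> nat \<Rightarrow> nat set set" where
  "Inv n w m = {X \<in> subs n m. \<forall>x\<in>X. \<forall>y\<in>X. x < y \<longrightarrow> inv w x > inv w y}"

definition quasi_inv :: "(nat \<Rightarrow> nat) \<Rightarrow> nat set \<Rightarrow> bool" where
  "quasi_inv w X = (card {(a, b). a \<in> X \<and> b \<in> X \<and> a < b \<and> inv w a < inv w b} = 1)"

definition qrel :: "nat \<Rightarrow> (nat \<Rightarrow> nat) \<Rightarrow> nat \<Rightarrow> (nat set \<times> nat set) set" where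
  "qrel n w m = {(A, B). \<exists>X i. X \<in> subs n (m + 1) \<and> quasi_inv w X \<and> 1 \<le> i \<and> i \<le> m \<and>
      packet X \<inter> Inv n w m = {del X i, del X (i + 1)} \<and>
      (if odd (m - i) then (A, B) = (del X i, del X (i + 1))
       else (A, B) = (del X (i + 1), del X i))}"

definition Pw :: "nat \<Rightarrow> (nat \<Rightarrow> nat) \<Rightarrow> nat \<Rightarrow> (nat set \<times> nat set) set" where
  "Pw n w m = (qrel n w m)\<^sup>* \<inter> (Inv n w m \<times> Inv n w m)"

definition is_linext :: "'a set \<Rightarrow> ('a \<times> 'a) set \<Rightarrow> 'a list \<Rightarrow> bool" where
  "is_linext S r \<rho> = (distinct \<rho> \<and> set \<rho> = S \<and>
     (\<forall>i<length \<rho>. \<forall>j<length \<rho>. (\<rho> ! i, \<rho> ! j) \<in> r \<longrightarrow> i \<le> j))"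

definition Aw :: "nat \<Rightarrow> (nat \<Rightarrow> nat) \<Rightarrow> nat \<Rightarrow> nat set list set" where
  "Aw n w k = {\<rho>. is_linext (Inv n w k) (Pw n w k) \<rho> \<and>
      (\<forall>X\<in>Inv n w (k + 1). filter (\<lambda>Y. Y \<in> packet X) \<rho> \<in> {lexl X, antilexl X})}"

definition Rev :: "nat \<Rightarrow> (nat \<Rightarrow> nat) \<Rightarrow> nat \<Rightarrow> nat set list \<Rightarrow> nat set set" where
  "Rev n w k \<rho> = {X \<in> Inv n w (k + 1). filter (\<lambda>Y. Y \<in> packet X) \<rho> = antilexl X}"

definition commute :: "nat \<Rightarrow> (nat \<Rightarrow> nat) \<Rightarrow> nat \<Rightarrow> nat set \<Rightarrow> nat set \<Rightarrow> bool" where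
  "commute n w k Y Z = (Y \<in> Inv n w k \<and> Z \<in> Inv n w k \<and>
      (Y, Z) \<notin> Pw n w k \<and> (Z, Y) \<notin> Pw n w k \<and>
      \<not> (\<exists>Z' \<in> subs n (k + 1). Y \<in> packet Z' \<and> Z \<in> packet Z'))"

definition swapstep :: "nat \<Rightarrow> (nat \<Rightarrow> nat) \<Rightarrow> nat \<Rightarrow> (nat set list \<times> nat set list) set" where
  "swapstep n w k = {(xs @ [a, b] @ ys, xs @ [b, a] @ ys) | xs a b ys. commute n w k a b}"

definition flipstep :: "nat \<Rightarrow> (nat \<Rightarrow> nat) \<Rightarrow> nat \<Rightarrow> (nat set list \<times> nat set list) set" where
  "flipstep n w k = {(xs @ lexl X @ ys, xs @ antilexl X @ ys) | xs X ys. X \<in> Inv n w (k + 1)}"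

definition simw :: "nat \<Rightarrow> (nat \<Rightarrow> nat) \<Rightarrow> nat \<Rightarrow> (nat set list \<times> nat set list) set" where
  "simw n w k = (swapstep n w k \<inter> (Aw n w k \<times> Aw n w k))\<^sup>*"

definition Bw :: "nat \<Rightarrow> (nat \<Rightarrow> nat) \<Rightarrow> nat \<Rightarrow> nat set list set set" where
  "Bw n w k = Aw n w k // simw n w k"

definition Bw_le :: "nat \<Rightarrow> (nat \<Rightarrow> nat) \<Rightarrow> nat \<Rightarrow> nat set list set \<Rightarrow> nat set list set \<Rightarrow> bool" where
  "Bw_le n w k c d = (\<exists>\<rho>\<in>c. \<exists>\<sigma>\<in>d.
      (\<rho>, \<sigma>) \<in> ((swapstep n w k \<union> flipstep n w k) \<inter> (Aw n w k \<times> Aw n w k))\<^sup>*)"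

(* prefix / suffix of P(X) (in lex order (X_m,...,X_1)); empty set is both *)
definition is_prefix :: "nat set \<Rightarrow> nat set set \<Rightarrow> bool" where
  "is_prefix X S = (\<exists>j. S = del X ` {i. j \<le> i \<and> 1 \<le> i \<and> i \<le> card X})"

definition is_suffix :: "nat set \<Rightarrow> nat set set \<Rightarrow> bool" where
  "is_suffix X S = (\<exists>j. S = del X ` {i. 1 \<le> i \<and> i \<le> j \<and> i \<le> card X})"

definition consistent :: "nat \<Rightarrow> (nat \<Rightarrow> nat) \<Rightarrow> nat \<Rightarrow> nat set set \<Rightarrow> bool" where
  "consistent n w m R = (R \<subseteq> Inv n w m \<and>
      (\<forall>X Y. (X, Y) \<in> Pw n w m \<and> Y \<in> R \<longrightarrow> X \<in> R) \<and>
      (\<forall>X\<in>Inv n w (m + 1). is_prefix X (packet X \<inter> R) \<or> is_suffix X (packet X \<inter> R)))"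

definition Cw :: "nat \<Rightarrow> (nat \<Rightarrow> nat) \<Rightarrow> nat \<Rightarrow> nat set set set" where
  "Cw n w m = {R. consistent n w m R}"

definition Cw_le :: "nat \<Rightarrow> (nat \<Rightarrow> nat) \<Rightarrow> nat \<Rightarrow> nat set set \<Rightarrow> nat set set \<Rightarrow> bool" where
  "Cw_le n w m R R' = (R \<in> Cw n w m \<and> R' \<in> Cw n w m \<and>
      (R, R') \<in> {(S, S'). S \<in> Cw n w m \<and> S' \<in> Cw n w m \<and> S \<subset> S' \<and> card (S' - S) = 1}\<^sup>*)"

definition GR :: "nat \<Rightarrow> (nat \<Rightarrow> nat) \<Rightarrow> nat \<Rightarrow> nat set set \<Rightarrow> (nat set \<times> nat set) set" where
  "GR n w k R = qrel n w k
     \<union> {(del X i, del X (i + 1)) | X i. X \<in> R \<and> 1 \<le> i \<and> i \<le> k}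
     \<union> {(del X (i + 1), del X i) | X i. X \<in> Inv n w (k + 1) - R \<and> 1 \<le> i \<and> i \<le> k}"

definition leR :: "nat \<Rightarrow> (nat \<Rightarrow> nat) \<Rightarrow> nat \<Rightarrow> nat set set \<Rightarrow> (nat set \<times> nat set) set" where
  "leR n w k R = (GR n w k R)\<^sup>* \<inter> (Inv n w k \<times> Inv n w k)"

definition Linext :: "nat \<Rightarrow> (nat \<Rightarrow> nat) \<Rightarrow> nat \<Rightarrow> nat set set \<Rightarrow> nat set list set" where
  "Linext n w k R = {\<rho>. is_linext (Inv n w k) (leR n w k R) \<rho>}"

definition RevB :: "nat \<Rightarrow> (nat \<Rightarrow> nat) \<Rightarrow> nat \<Rightarrow> nat set list set \<Rightarrow> nat set set" where
  "RevB n w k c = the_elem (Rev n w k ` c)"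

end

theory Submission
  imports Defs
begin


definition rk :: "nat set \<Rightarrow> nat \<Rightarrow> nat" where
  "rk X x = card {y\<in>X. y < x}"

lemma strict_take_less:
  fixes xs :: "nat list"
  assumes "sorted_wrt (<) xs" "t < length xs"
  shows "{y \<in> set xs. y < xs ! t} = set (take t xs)"
proof
  show "{y \<in> set xs. y < xs ! t} \<subseteq> set (take t xs)"
  proof
    fix y assume "y \<in> {y \<in> set xs. y < xs ! t}"
    then obtain s where s: "s < length xs" "xs ! s = y" "y < xs ! t" by (auto simp: in_set_conv_nth)
    have "s < t"
    proof (rule ccontr)
      assume "\<not> s < t"
      then have "t \<le> s" by simp
      have "xs ! t \<le> xs ! s"
      proof (cases "t = s")
        case False
        with \<open>t \<le> s\<close> have "t < s" by simp
        then show ?thesis using sorted_wrt_nth_less[OF assms(1) \<open>t < s\<close> s(1)] by simp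
      qed simp
      then show False using s by linarith
    qed
    then show "y \<in> set (take t xs)" using s by (auto simp: in_set_conv_nth)
  qed
next
  show "set (take t xs) \<subseteq> {y \<in> set xs. y < xs ! t}"
  proof
    fix y assume "y \<in> set (take t xs)"
    then obtain s where s: "s < t" "xs ! s = y" using assms(2) by (auto simp: in_set_conv_nth)
    then show "y \<in> {y \<in> set xs. y < xs ! t}" using assms
      by (auto intro: sorted_wrt_nth_less)
  qed
qed

lemma sl_props:
  assumes "finite X"
  shows "sorted_wrt (<) (sorted_list_of_set X)" "set (sorted_list_of_set X) = X"
    "distinct (sorted_list_of_set X)" "length (sorted_list_of_set X) = card X"
  using assms by auto

lemma rk_nth:
  assumes "finite X" "t < card X"
  shows "rk X (sorted_list_of_set X ! t) = t"
proof -
  let ?xs = "sorted_list_of_set X"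
  have "{y\<in>X. y < ?xs ! t} = set (take t ?xs)"
    using strict_take_less[of ?xs t] sl_props[OF assms(1)] assms(2) by simp
  moreover have "card (set (take t ?xs)) = t"
    using sl_props[OF assms(1)] assms(2) by (simp add: distinct_card)
  ultimately show ?thesis unfolding rk_def by simp
qed

lemma rk_less_card:
  assumes "finite X" "x \<in> X" shows "rk X x < card X"
proof -
  have "{y\<in>X. y < x} \<subset> X" using assms by auto
  then show ?thesis unfolding rk_def using assms by (simp add: psubset_card_mono)
qed

lemma nth_rk:
  assumes "finite X" "x \<in> X"
  shows "sorted_list_of_set X ! rk X x = x"
proof -
  let ?xs = "sorted_list_of_set X"
  obtain t where t: "t < length ?xs" "?xs ! t = x"
    using assms sl_props[OF assms(1)] by (metis in_set_conv_nth)
  then show ?thesis using rk_nth[OF assms(1), of t] sl_props[OF assms(1)] by simp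
qed

lemma rk_mono:
  assumes "finite X" "x \<in> X" "y \<in> X" "x < y"
  shows "rk X x < rk X y"
proof -
  have "{z\<in>X. z < x} \<subset> {z\<in>X. z < y}" using assms by auto
  then show ?thesis unfolding rk_def using assms by (simp add: psubset_card_mono)
qed

lemma rk_inj:
  assumes "finite X" "x \<in> X" "y \<in> X" "rk X x = rk X y"
  shows "x = y"
  using rk_mono[OF assms(1,2,3)] rk_mono[OF assms(1,3,2)] assms(4)
  by (metis less_irrefl nat_neq_iff)

lemma rk_less_iff:
  assumes "finite X" "x \<in> X" "y \<in> X"
  shows "rk X x < rk X y \<longleftrightarrow> x < y"
  using rk_mono[OF assms(1,2,3)] rk_mono[OF assms(1,3,2)] assms
  by (metis less_asym nat_neq_iff)

lemma nth_in:
  assumes "finite X" "t < card X"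
  shows "sorted_list_of_set X ! t \<in> X"
  using assms sl_props[OF assms(1)] by (metis nth_mem)

lemma del_rk:
  assumes "finite X" "x \<in> X"
  shows "del X (Suc (rk X x)) = X - {x}"
  using nth_rk[OF assms] unfolding del_def by simp

lemma del_eq:
  assumes "finite X" "1 \<le> i" "i \<le> card X"
  shows "\<exists>x\<in>X. del X i = X - {x} \<and> rk X x = i - 1"
proof -
  let ?x = "sorted_list_of_set X ! (i - 1)"
  have "?x \<in> X" using nth_in[OF assms(1)] assms by simp
  moreover have "rk X ?x = i - 1" using rk_nth[OF assms(1)] assms by simp
  ultimately show ?thesis unfolding del_def by blast
qed

lemma map_del_eq:
  assumes "finite X"
  shows "map (del X) [1..<card X + 1] = map (\<lambda>x. X - {x}) (sorted_list_of_set X)"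
proof -
  let ?xs = "sorted_list_of_set X"
  have "[1..<card X + 1] = map Suc [0..<card X]" by (simp add: map_Suc_upt)
  then have "map (del X) [1..<card X + 1] = map (\<lambda>j. X - {?xs ! j}) [0..<card X]"
    by (simp add: del_def)
  moreover have "map (\<lambda>j. ?xs ! j) [0..<card X] = ?xs"
    using map_nth[of ?xs] sl_props[OF assms] by simp
  moreover have "map (\<lambda>j. X - {?xs ! j}) [0..<card X] = map (\<lambda>x. X - {x}) (map (\<lambda>j. ?xs ! j) [0..<card X])"
    by simp
  ultimately show ?thesis by simp
qed

lemma antilexl_eq: "finite X \<Longrightarrow> antilexl X = map (\<lambda>x. X - {x}) (sorted_list_of_set X)"
  unfolding antilexl_def using map_del_eq by simp

lemma lexl_rev: "lexl X = rev (antilexl X)"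
  unfolding lexl_def antilexl_def by (simp add: rev_map)

lemma lexl_eq: "finite X \<Longrightarrow> lexl X = map (\<lambda>x. X - {x}) (rev (sorted_list_of_set X))"
  using lexl_rev antilexl_eq by (simp add: rev_map)

lemma packet_eq: "packet X = (\<lambda>x. X - {x}) ` X"
  unfolding packet_def by auto


definition invd :: "(nat \<Rightarrow> nat) \<Rightarrow> nat set \<Rightarrow> bool" where
  "invd p X = (\<forall>x\<in>X. \<forall>y\<in>X. x < y \<longrightarrow> p y < p x)"

definition IG :: "nat set \<Rightarrow> (nat \<Rightarrow> nat) \<Rightarrow> nat \<Rightarrow> nat set set" where
  "IG S p m = {X. X \<subseteq> S \<and> card X = m \<and> invd p X}"

definition qpair :: "(nat \<Rightarrow> nat) \<Rightarrow> nat set \<Rightarrow> nat \<Rightarrow> nat \<Rightarrow> bool" where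
  "qpair p Z u v = (u \<in> Z \<and> v \<in> Z \<and> u < v \<and> p u < p v \<and> invd p (Z - {u}) \<and> invd p (Z - {v}))"

definition qE :: "nat set \<Rightarrow> (nat \<Rightarrow> nat) \<Rightarrow> nat \<Rightarrow> (nat set \<times> nat set) set" where
  "qE S p m = {(A, B). \<exists>Z u v. Z \<subseteq> S \<and> card Z = Suc m \<and> qpair p Z u v \<and>
     (if odd (m - Suc (rk Z u)) then (A, B) = (Z - {u}, Z - {v}) else (A, B) = (Z - {v}, Z - {u}))}"

definition adj :: "nat set \<Rightarrow> nat \<Rightarrow> nat \<Rightarrow> bool" where
  "adj X x y = (x \<in> X \<and> y \<in> X \<and> x < y \<and> (\<forall>z\<in>X. \<not> (x < z \<and> z < y)))"

definition GE :: "nat set \<Rightarrow> (nat \<Rightarrow> nat) \<Rightarrow> nat \<Rightarrow> nat set set \<Rightarrow> (nat set \<times> nat set) set" where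
  "GE S p k R = qE S p k
     \<union> {(X - {x}, X - {y}) | X x y. X \<in> R \<and> adj X x y}
     \<union> {(X - {y}, X - {x}) | X x y. X \<in> IG S p (Suc k) - R \<and> adj X x y}"

definition updown :: "nat set \<Rightarrow> nat set \<Rightarrow> bool" where
  "updown X J = ((\<forall>x\<in>J. \<forall>y\<in>X. x \<le> y \<longrightarrow> y \<in> J) \<or> (\<forall>x\<in>J. \<forall>y\<in>X. y \<le> x \<longrightarrow> y \<in> J))"

definition cons1 :: "nat set \<Rightarrow> (nat \<Rightarrow> nat) \<Rightarrow> nat \<Rightarrow> nat set set \<Rightarrow> bool" where
  "cons1 S p m R = (R \<subseteq> IG S p m \<and> (\<forall>A B. (A, B) \<in> qE S p m \<longrightarrow> B \<in> R \<longrightarrow> A \<in> R) \<and>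
     (\<forall>X\<in>IG S p (Suc m). updown X {x\<in>X. X - {x} \<in> R}))"

lemma Inv_eq: "Inv n w m = IG {1..n} (inv w) m"
  unfolding Inv_def IG_def subs_def invd_def by auto

lemma IG_finite: "X \<in> IG S p m \<Longrightarrow> finite S \<Longrightarrow> finite X"
  unfolding IG_def using finite_subset by blast

lemma rk_adj:
  assumes "finite X" "x \<in> X" "y \<in> X"
  shows "adj X x y \<longleftrightarrow> rk X y = Suc (rk X x)"
proof
  assume a: "adj X x y"
  have "{z\<in>X. z < y} = insert x {z\<in>X. z < x}"
    using a unfolding adj_def by auto
  moreover have "x \<notin> {z\<in>X. z < x}" by simp
  moreover have "finite {z\<in>X. z < x}" using assms by simp
  ultimately show "rk X y = Suc (rk X x)" unfolding rk_def by simp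
next
  assume a: "rk X y = Suc (rk X x)"
  then have "x < y" using rk_less_iff[OF assms] by simp
  moreover have "\<not> (x < z \<and> z < y)" if "z \<in> X" for z
    using rk_less_iff[OF assms(1,2) that] rk_less_iff[OF assms(1) that assms(3)] a by auto
  ultimately show "adj X x y" unfolding adj_def using assms by auto
qed

lemma qpair_adj:
  assumes "qpair p Z u v"
  shows "adj Z u v"
proof -
  have "\<not> (u < z \<and> z < v)" if "z \<in> Z" for z
  proof
    assume a: "u < z \<and> z < v"
    have "p v < p z" using assms that a unfolding qpair_def invd_def
      by (metis DiffI less_not_refl singletonD)
    moreover have "p z < p u" using assms that a unfolding qpair_def invd_def
      by (metis DiffI less_not_refl singletonD)
    ultimately show False using assms unfolding qpair_def by simp
  qed
  then show ?thesis using assms unfolding qpair_def adj_def by auto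
qed

lemma qpair_pairs:
  assumes "qpair p Z u v"
  shows "{(a, b). a \<in> Z \<and> b \<in> Z \<and> a < b \<and> p a < p b} = {(u, v)}"
proof -
  have "(a, b) = (u, v)" if "a \<in> Z" "b \<in> Z" "a < b" "p a < p b" for a b
  proof -
    have "a = u \<or> b = u"
    proof (rule ccontr)
      assume "\<not> (a = u \<or> b = u)"
      then have "a \<in> Z - {u}" "b \<in> Z - {u}" using that by auto
      then show False using assms that unfolding qpair_def invd_def by force
    qed
    moreover have "a = v \<or> b = v"
    proof (rule ccontr)
      assume "\<not> (a = v \<or> b = v)"
      then have "a \<in> Z - {v}" "b \<in> Z - {v}" using that by auto
      then show False using assms that unfolding qpair_def invd_def by force
    qed
    ultimately show ?thesis using that assms unfolding qpair_def by auto
  qed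
  then show ?thesis using assms unfolding qpair_def by auto
qed

lemma qpair_inv_iff:
  assumes "qpair p Z u v" "x \<in> Z"
  shows "invd p (Z - {x}) \<longleftrightarrow> x = u \<or> x = v"
proof
  assume "invd p (Z - {x})"
  show "x = u \<or> x = v"
  proof (rule ccontr)
    assume "\<not> (x = u \<or> x = v)"
    then have "u \<in> Z - {x}" "v \<in> Z - {x}" using assms unfolding qpair_def by auto
    then show False using \<open>invd p (Z - {x})\<close> assms unfolding qpair_def invd_def by force
  qed
qed (use assms in \<open>auto simp: qpair_def\<close>)

lemma qrel_eq: "qrel n w m = qE {1..n} (inv w) m"
proof (intro set_eqI iffI)
  fix AB assume ABq: "AB \<in> qrel n w m"
  obtain A B where AB: "AB = (A, B)" by fastforce
  have "\<exists>X i. X \<in> subs n (m + 1) \<and> quasi_inv w X \<and> 1 \<le> i \<and> i \<le> m \<and>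
      packet X \<inter> Inv n w m = {del X i, del X (i + 1)} \<and>
      (if odd (m - i) then (A, B) = (del X i, del X (i + 1))
       else (A, B) = (del X (i + 1), del X i))"
    using ABq unfolding qrel_def AB by (simp only: mem_Collect_eq case_prod_conv)
  then obtain X i where X: "X \<in> subs n (m + 1)" "quasi_inv w X" "1 \<le> i" "i \<le> m"
     "packet X \<inter> Inv n w m = {del X i, del X (i + 1)}"
     "if odd (m - i) then (A, B) = (del X i, del X (i + 1)) else (A, B) = (del X (i + 1), del X i)"
    by blast
  have fin: "finite X" and cX: "card X = Suc m" and XS: "X \<subseteq> {1..n}"
    using X(1) unfolding subs_def by (auto intro: finite_subset)
  let ?xs = "sorted_list_of_set X"
  define u where "u = ?xs ! (i - 1)"
  define v where "v = ?xs ! i"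
  have uX: "u \<in> X" unfolding u_def using nth_in[OF fin] X cX by simp
  have vX: "v \<in> X" unfolding v_def using nth_in[OF fin] X cX by simp
  have rku: "rk X u = i - 1" unfolding u_def using rk_nth[OF fin] X cX by simp
  have rkv: "rk X v = i" unfolding v_def using rk_nth[OF fin] X cX by simp
  have uv: "u < v" using rk_less_iff[OF fin uX vX] rku rkv X by simp
  have du: "del X i = X - {u}" unfolding del_def u_def by simp
  have dv: "del X (i + 1) = X - {v}" unfolding del_def v_def by simp
  have iu: "invd (inv w) (X - {u})" using X(5) du unfolding Inv_eq IG_def by auto
  have iv: "invd (inv w) (X - {v})" using X(5) dv unfolding Inv_eq IG_def by auto
  obtain a b where ab: "a \<in> X" "b \<in> X" "a < b" "inv w a < inv w b"
  proof -
    have "card {(a, b). a \<in> X \<and> b \<in> X \<and> a < b \<and> inv w a < inv w b} = 1"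
      using X(2) unfolding quasi_inv_def by simp
    then obtain q where "{(a, b). a \<in> X \<and> b \<in> X \<and> a < b \<and> inv w a < inv w b} = {q}"
      using card_1_singletonE by blast
    then show ?thesis using that by (cases q) auto
  qed
  have "a = u \<or> b = u"
  proof (rule ccontr)
    assume "\<not> (a = u \<or> b = u)"
    then have "a \<in> X - {u}" "b \<in> X - {u}" using ab by auto
    then show False using iu ab unfolding invd_def by force
  qed
  moreover have "a = v \<or> b = v"
  proof (rule ccontr)
    assume "\<not> (a = v \<or> b = v)"
    then have "a \<in> X - {v}" "b \<in> X - {v}" using ab by auto
    then show False using iv ab unfolding invd_def by force
  qed
  ultimately have "a = u" "b = v" using uv ab by auto
  then have qp: "qpair (inv w) X u v" unfolding qpair_def using uX vX uv iu iv ab by auto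
  have mi: "m - Suc (rk X u) = m - i" using rku X by simp
  have e: "if odd (m - Suc (rk X u)) then (A, B) = (X - {u}, X - {v}) else (A, B) = (X - {v}, X - {u})"
    using X(6) unfolding mi du dv .
  have "(A, B) \<in> qE {1..n} (inv w) m"
    unfolding qE_def mem_Collect_eq case_prod_conv
    apply (rule exI[of _ X], rule exI[of _ u], rule exI[of _ v])
    using e qp XS cX by blast
  then show "AB \<in> qE {1..n} (inv w) m" using AB by simp
next
  fix AB assume ABq: "AB \<in> qE {1..n} (inv w) m"
  obtain A B where AB: "AB = (A, B)" by fastforce
  have "\<exists>Z u v. Z \<subseteq> {1..n} \<and> card Z = Suc m \<and> qpair (inv w) Z u v \<and>
     (if odd (m - Suc (rk Z u)) then (A, B) = (Z - {u}, Z - {v}) else (A, B) = (Z - {v}, Z - {u}))"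
    using ABq unfolding qE_def AB by (simp only: mem_Collect_eq case_prod_conv)
  then obtain Z u v where Z: "Z \<subseteq> {1..n}" "card Z = Suc m" "qpair (inv w) Z u v"
    "if odd (m - Suc (rk Z u)) then (A, B) = (Z - {u}, Z - {v}) else (A, B) = (Z - {v}, Z - {u})"
    by blast
  have fin: "finite Z" using Z(1) finite_subset by blast
  have uZ: "u \<in> Z" and vZ: "v \<in> Z" using Z(3) unfolding qpair_def by auto
  have rkv: "rk Z v = Suc (rk Z u)" using rk_adj[OF fin uZ vZ] qpair_adj[OF Z(3)] by simp
  define i where "i = Suc (rk Z u)"
  have i1: "1 \<le> i" unfolding i_def by simp
  have im: "i \<le> m" using rk_less_card[OF fin vZ] rkv Z(2) unfolding i_def by simp
  have du: "del Z i = Z - {u}" unfolding i_def using del_rk[OF fin uZ] .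
  have dv: "del Z (i + 1) = Z - {v}" unfolding i_def using del_rk[OF fin vZ] rkv by simp
  have sub: "Z \<in> subs n (m + 1)" using Z unfolding subs_def by auto
  have qi: "quasi_inv w Z" unfolding quasi_inv_def using qpair_pairs[OF Z(3)] by simp
  have pk: "packet Z \<inter> Inv n w m = {del Z i, del Z (i + 1)}"
  proof -
    have "Z - {x} \<in> Inv n w m \<longleftrightarrow> x = u \<or> x = v" if "x \<in> Z" for x
      using qpair_inv_iff[OF Z(3) that] Z(1,2) fin that unfolding Inv_eq IG_def by auto
    then show ?thesis unfolding packet_eq du dv using uZ vZ by auto
  qed
  have mi: "m - Suc (rk Z u) = m - i" unfolding i_def by simp
  have e: "if odd (m - i) then (A, B) = (del Z i, del Z (i + 1)) else (A, B) = (del Z (i + 1), del Z i)"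
    using Z(4) unfolding mi du dv .
  have "(A, B) \<in> qrel n w m"
    unfolding qrel_def mem_Collect_eq case_prod_conv
    apply (rule exI[of _ Z], rule exI[of _ i])
    using e sub qi i1 im pk by blast
  then show "AB \<in> qrel n w m" using AB by simp
qed

lemma Pw_eq: "Pw n w m = (qE {1..n} (inv w) m)\<^sup>* \<inter> (IG {1..n} (inv w) m \<times> IG {1..n} (inv w) m)"
  unfolding Pw_def qrel_eq Inv_eq ..

lemma card_minus1: "finite Z \<Longrightarrow> card Z = Suc m \<Longrightarrow> u \<in> Z \<Longrightarrow> card (Z - {u}) = m"
  by simp

lemma qE_IG:
  assumes "(A, B) \<in> qE S p m"
  shows "A \<in> IG S p m" "B \<in> IG S p m"
proof -
  obtain Z u v where Z: "Z \<subseteq> S" "card Z = Suc m" "qpair p Z u v"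
    "(A, B) = (Z - {u}, Z - {v}) \<or> (A, B) = (Z - {v}, Z - {u})"
    using assms unfolding qE_def by (auto split: if_splits)
  have fin: "finite Z" by (rule card_ge_0_finite) (simp add: Z(2))
  have "Z - {u} \<in> IG S p m" "Z - {v} \<in> IG S p m"
    using Z fin unfolding IG_def qpair_def by auto
  then show "A \<in> IG S p m" "B \<in> IG S p m" using Z(4) by auto
qed

lemma del_adj:
  assumes "finite X" "card X = Suc k" "1 \<le> i" "i \<le> k"
  shows "\<exists>x y. adj X x y \<and> del X i = X - {x} \<and> del X (i + 1) = X - {y}"
proof -
  obtain x where x: "x \<in> X" "del X i = X - {x}" "rk X x = i - 1"
    using del_eq[OF assms(1), of i] assms by auto
  obtain y where y: "y \<in> X" "del X (i + 1) = X - {y}" "rk X y = i"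
    using del_eq[OF assms(1), of "i + 1"] assms by auto
  have "adj X x y" using rk_adj[OF assms(1) x(1) y(1)] x y assms by simp
  then show ?thesis using x y by blast
qed

lemma adj_del:
  assumes "finite X" "card X = Suc k" "adj X x y"
  shows "\<exists>i. 1 \<le> i \<and> i \<le> k \<and> del X i = X - {x} \<and> del X (i + 1) = X - {y}"
proof -
  have xy: "x \<in> X" "y \<in> X" using assms(3) unfolding adj_def by auto
  have r: "rk X y = Suc (rk X x)" using rk_adj[OF assms(1) xy] assms(3) by simp
  have "rk X y < Suc k" using rk_less_card[OF assms(1) xy(2)] assms(2) by simp
  then show ?thesis using del_rk[OF assms(1) xy(1)] del_rk[OF assms(1) xy(2)] r
    by (intro exI[of _ "Suc (rk X x)"]) auto
qed

lemma GR_eq: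
  assumes "R \<subseteq> Inv n w (k + 1)"
  shows "GR n w k R = GE {1..n} (inv w) k R"
proof -
  have fin: "finite X" "card X = Suc k" if "X \<in> Inv n w (k + 1)" for X
    using that unfolding Inv_eq IG_def by (auto intro: finite_subset)
  have A: "{(del X i, del X (i + 1)) | X i. X \<in> R \<and> 1 \<le> i \<and> i \<le> k}
        = {(X - {x}, X - {y}) | X x y. X \<in> R \<and> adj X x y}"
  proof (intro set_eqI iffI)
    fix e assume "e \<in> {(del X i, del X (i + 1)) | X i. X \<in> R \<and> 1 \<le> i \<and> i \<le> k}"
    then obtain X i where h: "e = (del X i, del X (i + 1))" "X \<in> R" "1 \<le> i" "i \<le> k" by blast
    then have X: "X \<in> Inv n w (k + 1)" using assms by blast
    obtain x y where "adj X x y" "del X i = X - {x}" "del X (i + 1) = X - {y}"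
      using del_adj[OF fin[OF X] h(3,4)] by blast
    then show "e \<in> {(X - {x}, X - {y}) | X x y. X \<in> R \<and> adj X x y}"
      using h(1,2) by blast
  next
    fix e assume "e \<in> {(X - {x}, X - {y}) | X x y. X \<in> R \<and> adj X x y}"
    then obtain X x y where h: "e = (X - {x}, X - {y})" "X \<in> R" "adj X x y" by blast
    then have X: "X \<in> Inv n w (k + 1)" using assms by blast
    obtain i where i: "1 \<le> i" "i \<le> k" "del X i = X - {x}" "del X (i + 1) = X - {y}"
      using adj_del[OF fin[OF X] h(3)] by blast
    have "e = (del X i, del X (i + 1))" using h(1) i by simp
    then show "e \<in> {(del X i, del X (i + 1)) | X i. X \<in> R \<and> 1 \<le> i \<and> i \<le> k}"
      using h(2) i by blast
  qed
  have B: "{(del X (i + 1), del X i) | X i. X \<in> Inv n w (k + 1) - R \<and> 1 \<le> i \<and> i \<le> k}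
        = {(X - {y}, X - {x}) | X x y. X \<in> IG {1..n} (inv w) (Suc k) - R \<and> adj X x y}"
  proof (intro set_eqI iffI)
    fix e assume "e \<in> {(del X (i + 1), del X i) | X i. X \<in> Inv n w (k + 1) - R \<and> 1 \<le> i \<and> i \<le> k}"
    then obtain X i where h: "e = (del X (i + 1), del X i)" "X \<in> Inv n w (k + 1) - R" "1 \<le> i" "i \<le> k" by blast
    then have X: "X \<in> Inv n w (k + 1)" by blast
    obtain x y where "adj X x y" "del X i = X - {x}" "del X (i + 1) = X - {y}"
      using del_adj[OF fin[OF X] h(3,4)] by blast
    moreover have "X \<in> IG {1..n} (inv w) (Suc k) - R" using h(2) unfolding Inv_eq by simp
    ultimately show "e \<in> {(X - {y}, X - {x}) | X x y. X \<in> IG {1..n} (inv w) (Suc k) - R \<and> adj X x y}"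
      using h(1) by blast
  next
    fix e assume "e \<in> {(X - {y}, X - {x}) | X x y. X \<in> IG {1..n} (inv w) (Suc k) - R \<and> adj X x y}"
    then obtain X x y where h: "e = (X - {y}, X - {x})" "X \<in> IG {1..n} (inv w) (Suc k) - R" "adj X x y" by blast
    then have X: "X \<in> Inv n w (k + 1) - R" unfolding Inv_eq by simp
    obtain i where i: "1 \<le> i" "i \<le> k" "del X i = X - {x}" "del X (i + 1) = X - {y}"
      using adj_del[OF fin h(3)] X by blast
    have "e = (del X (i + 1), del X i)" using h(1) i by simp
    then show "e \<in> {(del X (i + 1), del X i) | X i. X \<in> Inv n w (k + 1) - R \<and> 1 \<le> i \<and> i \<le> k}"
      using X i by blast
  qed
  show ?thesis unfolding GR_def GE_def A B qrel_eq ..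
qed

lemma pre_img:
  assumes "finite X"
  shows "del X ` {i. j \<le> i \<and> 1 \<le> i \<and> i \<le> card X} = (\<lambda>x. X - {x}) ` {x\<in>X. j \<le> Suc (rk X x)}"
proof (intro set_eqI iffI)
  fix Y assume "Y \<in> del X ` {i. j \<le> i \<and> 1 \<le> i \<and> i \<le> card X}"
  then obtain i where i: "Y = del X i" "j \<le> i" "1 \<le> i" "i \<le> card X" by blast
  then obtain x where "x \<in> X" "del X i = X - {x}" "rk X x = i - 1" using del_eq[OF assms] by blast
  then show "Y \<in> (\<lambda>x. X - {x}) ` {x\<in>X. j \<le> Suc (rk X x)}" using i by auto
next
  fix Y assume "Y \<in> (\<lambda>x. X - {x}) ` {x\<in>X. j \<le> Suc (rk X x)}"
  then obtain x where x: "Y = X - {x}" "x \<in> X" "j \<le> Suc (rk X x)" by blast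
  then show "Y \<in> del X ` {i. j \<le> i \<and> 1 \<le> i \<and> i \<le> card X}"
    using del_rk[OF assms x(2)] rk_less_card[OF assms x(2)]
    by (intro image_eqI[of _ _ "Suc (rk X x)"]) auto
qed

lemma suf_img:
  assumes "finite X"
  shows "del X ` {i. 1 \<le> i \<and> i \<le> j \<and> i \<le> card X} = (\<lambda>x. X - {x}) ` {x\<in>X. Suc (rk X x) \<le> j}"
proof (intro set_eqI iffI)
  fix Y assume "Y \<in> del X ` {i. 1 \<le> i \<and> i \<le> j \<and> i \<le> card X}"
  then obtain i where i: "Y = del X i" "i \<le> j" "1 \<le> i" "i \<le> card X" by blast
  then obtain x where "x \<in> X" "del X i = X - {x}" "rk X x = i - 1" using del_eq[OF assms] by blast
  then show "Y \<in> (\<lambda>x. X - {x}) ` {x\<in>X. Suc (rk X x) \<le> j}" using i by auto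
next
  fix Y assume "Y \<in> (\<lambda>x. X - {x}) ` {x\<in>X. Suc (rk X x) \<le> j}"
  then obtain x where x: "Y = X - {x}" "x \<in> X" "Suc (rk X x) \<le> j" by blast
  then show "Y \<in> del X ` {i. 1 \<le> i \<and> i \<le> j \<and> i \<le> card X}"
    using del_rk[OF assms x(2)] rk_less_card[OF assms x(2)]
    by (intro image_eqI[of _ _ "Suc (rk X x)"]) auto
qed

lemma inj_rem: "inj_on (\<lambda>x. X - {x}) X"
  unfolding inj_on_def by blast

lemma rk_le_iff:
  assumes "finite X" "x \<in> X" "y \<in> X"
  shows "rk X x \<le> rk X y \<longleftrightarrow> x \<le> y"
  using rk_less_iff[OF assms(1,3,2)] by (simp add: not_less[symmetric])

lemma up_iff:
  assumes "finite X" "J \<subseteq> X"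
  shows "(\<exists>j. J = {x\<in>X. j \<le> Suc (rk X x)}) \<longleftrightarrow> (\<forall>x\<in>J. \<forall>y\<in>X. x \<le> y \<longrightarrow> y \<in> J)"
proof
  assume "\<exists>j. J = {x\<in>X. j \<le> Suc (rk X x)}"
  then obtain j where j: "J = {x\<in>X. j \<le> Suc (rk X x)}" by blast
  show "\<forall>x\<in>J. \<forall>y\<in>X. x \<le> y \<longrightarrow> y \<in> J"
  proof (intro ballI impI)
    fix x y assume "x \<in> J" "y \<in> X" "x \<le> y"
    then show "y \<in> J" using j rk_le_iff[OF assms(1), of x y] by auto
  qed
next
  assume up: "\<forall>x\<in>J. \<forall>y\<in>X. x \<le> y \<longrightarrow> y \<in> J"
  show "\<exists>j. J = {x\<in>X. j \<le> Suc (rk X x)}"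
  proof (cases "J = {}")
    case True
    then show ?thesis using rk_less_card[OF assms(1)]
      by (intro exI[of _ "Suc (card X)"]) force
  next
    case False
    have fJ: "finite J" using assms finite_subset by blast
    let ?m = "Min J"
    have mJ: "?m \<in> J" using Min_in[OF fJ False] .
    have "J = {x\<in>X. Suc (rk X ?m) \<le> Suc (rk X x)}"
    proof (intro set_eqI iffI)
      fix x assume "x \<in> J"
      then show "x \<in> {x\<in>X. Suc (rk X ?m) \<le> Suc (rk X x)}"
        using Min_le[OF fJ] rk_le_iff[OF assms(1)] assms(2) mJ by auto
    next
      fix x assume "x \<in> {x\<in>X. Suc (rk X ?m) \<le> Suc (rk X x)}"
      then show "x \<in> J" using up mJ rk_le_iff[OF assms(1)] assms(2) by auto
    qed
    then show ?thesis by blast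
  qed
qed

lemma down_iff:
  assumes "finite X" "J \<subseteq> X"
  shows "(\<exists>j. J = {x\<in>X. Suc (rk X x) \<le> j}) \<longleftrightarrow> (\<forall>x\<in>J. \<forall>y\<in>X. y \<le> x \<longrightarrow> y \<in> J)"
proof
  assume "\<exists>j. J = {x\<in>X. Suc (rk X x) \<le> j}"
  then obtain j where j: "J = {x\<in>X. Suc (rk X x) \<le> j}" by blast
  show "\<forall>x\<in>J. \<forall>y\<in>X. y \<le> x \<longrightarrow> y \<in> J"
  proof (intro ballI impI)
    fix x y assume "x \<in> J" "y \<in> X" "y \<le> x"
    then show "y \<in> J" using j rk_le_iff[OF assms(1), of y x] by auto
  qed
next
  assume dn: "\<forall>x\<in>J. \<forall>y\<in>X. y \<le> x \<longrightarrow> y \<in> J"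
  show "\<exists>j. J = {x\<in>X. Suc (rk X x) \<le> j}"
  proof (cases "J = {}")
    case True
    then show ?thesis by (intro exI[of _ 0]) auto
  next
    case False
    have fJ: "finite J" using assms finite_subset by blast
    let ?m = "Max J"
    have mJ: "?m \<in> J" using Max_in[OF fJ False] .
    have "J = {x\<in>X. Suc (rk X x) \<le> Suc (rk X ?m)}"
    proof (intro set_eqI iffI)
      fix x assume "x \<in> J"
      then show "x \<in> {x\<in>X. Suc (rk X x) \<le> Suc (rk X ?m)}"
        using Max_ge[OF fJ] rk_le_iff[OF assms(1)] assms(2) mJ by auto
    next
      fix x assume "x \<in> {x\<in>X. Suc (rk X x) \<le> Suc (rk X ?m)}"
      then show "x \<in> J" using dn mJ rk_le_iff[OF assms(1)] assms(2) by auto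
    qed
    then show ?thesis by blast
  qed
qed

lemma packet_R: "packet X \<inter> R = (\<lambda>x. X - {x}) ` {x\<in>X. X - {x} \<in> R}"
  unfolding packet_eq by auto

lemma prefix_iff:
  assumes "finite X"
  shows "is_prefix X (packet X \<inter> R) \<longleftrightarrow> (\<forall>x\<in>{x\<in>X. X - {x} \<in> R}. \<forall>y\<in>X. x \<le> y \<longrightarrow> y \<in> {x\<in>X. X - {x} \<in> R})"
proof -
  have "is_prefix X (packet X \<inter> R) \<longleftrightarrow> (\<exists>j. {x\<in>X. X - {x} \<in> R} = {x\<in>X. j \<le> Suc (rk X x)})"
    unfolding is_prefix_def packet_R pre_img[OF assms]
  proof -
    have "\<And>j. ((\<lambda>x. X - {x}) ` {x\<in>X. X - {x} \<in> R} = (\<lambda>x. X - {x}) ` {x\<in>X. j \<le> Suc (rk X x)})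
       \<longleftrightarrow> ({x\<in>X. X - {x} \<in> R} = {x\<in>X. j \<le> Suc (rk X x)})"
      by (rule inj_on_image_eq_iff[OF inj_rem]) auto
    then show "(\<exists>j. (\<lambda>x. X - {x}) ` {x\<in>X. X - {x} \<in> R} = (\<lambda>x. X - {x}) ` {x\<in>X. j \<le> Suc (rk X x)})
       \<longleftrightarrow> (\<exists>j. {x\<in>X. X - {x} \<in> R} = {x\<in>X. j \<le> Suc (rk X x)})" by simp
  qed
  then show ?thesis using up_iff[OF assms] by auto
qed

lemma suffix_iff:
  assumes "finite X"
  shows "is_suffix X (packet X \<inter> R) \<longleftrightarrow> (\<forall>x\<in>{x\<in>X. X - {x} \<in> R}. \<forall>y\<in>X. y \<le> x \<longrightarrow> y \<in> {x\<in>X. X - {x} \<in> R})"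
proof -
  have "is_suffix X (packet X \<inter> R) \<longleftrightarrow> (\<exists>j. {x\<in>X. X - {x} \<in> R} = {x\<in>X. Suc (rk X x) \<le> j})"
    unfolding is_suffix_def packet_R suf_img[OF assms]
  proof -
    have "\<And>j. ((\<lambda>x. X - {x}) ` {x\<in>X. X - {x} \<in> R} = (\<lambda>x. X - {x}) ` {x\<in>X. Suc (rk X x) \<le> j})
       \<longleftrightarrow> ({x\<in>X. X - {x} \<in> R} = {x\<in>X. Suc (rk X x) \<le> j})"
      by (rule inj_on_image_eq_iff[OF inj_rem]) auto
    then show "(\<exists>j. (\<lambda>x. X - {x}) ` {x\<in>X. X - {x} \<in> R} = (\<lambda>x. X - {x}) ` {x\<in>X. Suc (rk X x) \<le> j})
       \<longleftrightarrow> (\<exists>j. {x\<in>X. X - {x} \<in> R} = {x\<in>X. Suc (rk X x) \<le> j})" by simp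
  qed
  then show ?thesis using down_iff[OF assms] by auto
qed

lemma consistent_eq: "consistent n w m R \<longleftrightarrow> cons1 {1..n} (inv w) m R"
proof -
  let ?S = "{1..n}" and ?p = "inv w"
  have L: "(\<forall>X Y. (X, Y) \<in> Pw n w m \<and> Y \<in> R \<longrightarrow> X \<in> R) \<longleftrightarrow>
        (\<forall>A B. (A, B) \<in> qE ?S ?p m \<longrightarrow> B \<in> R \<longrightarrow> A \<in> R)"
  proof
    assume h: "\<forall>X Y. (X, Y) \<in> Pw n w m \<and> Y \<in> R \<longrightarrow> X \<in> R"
    show "\<forall>A B. (A, B) \<in> qE ?S ?p m \<longrightarrow> B \<in> R \<longrightarrow> A \<in> R"
    proof (intro allI impI)
      fix A B assume "(A, B) \<in> qE ?S ?p m" "B \<in> R"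
      then show "A \<in> R" using h qE_IG[of A B] unfolding Pw_eq by blast
    qed
  next
    assume h: "\<forall>A B. (A, B) \<in> qE ?S ?p m \<longrightarrow> B \<in> R \<longrightarrow> A \<in> R"
    show "\<forall>X Y. (X, Y) \<in> Pw n w m \<and> Y \<in> R \<longrightarrow> X \<in> R"
    proof (intro allI impI)
      fix X Y assume a: "(X, Y) \<in> Pw n w m \<and> Y \<in> R"
      have r: "(X, Y) \<in> (qE ?S ?p m)\<^sup>*" and yR: "Y \<in> R" using a unfolding Pw_eq by auto
      show "X \<in> R" using r
      proof (induction rule: converse_rtrancl_induct)
        case base then show ?case using yR .
      next
        case (step y z)
        then show ?case using h by blast
      qed
    qed
  qed
  have P: "(\<forall>X\<in>Inv n w (m + 1). is_prefix X (packet X \<inter> R) \<or> is_suffix X (packet X \<inter> R)) \<longleftrightarrow>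
        (\<forall>X\<in>IG ?S ?p (Suc m). updown X {x\<in>X. X - {x} \<in> R})"
  proof -
    have "(is_prefix X (packet X \<inter> R) \<or> is_suffix X (packet X \<inter> R)) \<longleftrightarrow> updown X {x\<in>X. X - {x} \<in> R}"
      if "X \<in> IG ?S ?p (Suc m)" for X
      using prefix_iff[OF IG_finite[OF that]] suffix_iff[OF IG_finite[OF that]] unfolding updown_def by simp
    then show ?thesis unfolding Inv_eq by simp
  qed
  show ?thesis unfolding consistent_def cons1_def L using P unfolding Inv_eq by simp
qed


lemma invd_subset: "invd p X \<Longrightarrow> Y \<subseteq> X \<Longrightarrow> invd p Y"
  unfolding invd_def by blast

lemma IG_mono: "S' \<subseteq> S \<Longrightarrow> IG S' p m \<subseteq> IG S p m"
  unfolding IG_def by blast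

lemma qE_mono: "S' \<subseteq> S \<Longrightarrow> qE S' p m \<subseteq> qE S p m"
  unfolding qE_def by blast

lemma invd_insert:
  assumes "\<forall>y\<in>Y. e < y"
  shows "invd p (insert e Y) \<longleftrightarrow> invd p Y \<and> (\<forall>y\<in>Y. p y < p e)"
proof
  assume h: "invd p (insert e Y)"
  then show "invd p Y \<and> (\<forall>y\<in>Y. p y < p e)"
    using assms unfolding invd_def by blast
next
  assume h: "invd p Y \<and> (\<forall>y\<in>Y. p y < p e)"
  show "invd p (insert e Y)" unfolding invd_def
  proof (intro ballI impI)
    fix x y assume xy: "x \<in> insert e Y" "y \<in> insert e Y" "x < y"
    show "p y < p x"
    proof (cases "x = e")
      case True
      then have "y \<in> Y" using xy by auto
      then show ?thesis using h True by blast
    next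
      case False
      then have "x \<in> Y" using xy by auto
      then have "y \<noteq> e" using assms xy by (metis less_asym)
      then have "y \<in> Y" using xy by auto
      then show ?thesis using h \<open>x \<in> Y\<close> xy unfolding invd_def by blast
    qed
  qed
qed

lemma rk_insert_min:
  assumes "finite Y" "\<forall>z\<in>Y. e < z" "y \<in> Y"
  shows "rk (insert e Y) y = Suc (rk Y y)"
proof -
  have "{z \<in> insert e Y. z < y} = insert e {z\<in>Y. z < y}" using assms by auto
  moreover have "e \<notin> {z\<in>Y. z < y}" using assms by auto
  ultimately show ?thesis unfolding rk_def using assms by simp
qed

lemma rk_min0:
  assumes "\<forall>z\<in>Y. e < z"
  shows "rk (insert e Y) e = 0"
  unfolding rk_def using assms by auto

lemma adj_insert_min:
  assumes "\<forall>z\<in>Y. e < z" "x \<noteq> e" "y \<noteq> e"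
  shows "adj (insert e Y) x y \<longleftrightarrow> adj Y x y"
  using assms unfolding adj_def by auto

lemma GE_cases:
  assumes "(U, V) \<in> GE S p k R"
  obtains (q) Z u v where "Z \<subseteq> S" "card Z = Suc k" "qpair p Z u v"
      "(odd (k - Suc (rk Z u)) \<and> U = Z - {u} \<and> V = Z - {v}) \<or> (even (k - Suc (rk Z u)) \<and> U = Z - {v} \<and> V = Z - {u})"
  | (r) X x y where "X \<in> R" "adj X x y" "U = X - {x}" "V = X - {y}"
  | (n) X x y where "X \<in> IG S p (Suc k)" "X \<notin> R" "adj X x y" "U = X - {y}" "V = X - {x}"
proof -
  have "(U, V) \<in> qE S p k \<or> (U, V) \<in> {(X - {x}, X - {y}) | X x y. X \<in> R \<and> adj X x y}
     \<or> (U, V) \<in> {(X - {y}, X - {x}) | X x y. X \<in> IG S p (Suc k) - R \<and> adj X x y}"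
    using assms unfolding GE_def by blast
  then show thesis
  proof (elim disjE)
    assume "(U, V) \<in> qE S p k"
    then obtain Z u v where Z: "Z \<subseteq> S" "card Z = Suc k" "qpair p Z u v"
      "if odd (k - Suc (rk Z u)) then (U, V) = (Z - {u}, Z - {v}) else (U, V) = (Z - {v}, Z - {u})"
      unfolding qE_def by (simp only: mem_Collect_eq case_prod_conv) blast
    show thesis
    proof (cases "odd (k - Suc (rk Z u))")
      case True
      then show thesis using q[OF Z(1,2,3)] Z(4) by simp
    next
      case False
      then show thesis using q[OF Z(1,2,3)] Z(4) by simp
    qed
  next
    assume "(U, V) \<in> {(X - {x}, X - {y}) | X x y. X \<in> R \<and> adj X x y}"
    then show thesis using r by blast
  next
    assume "(U, V) \<in> {(X - {y}, X - {x}) | X x y. X \<in> IG S p (Suc k) - R \<and> adj X x y}"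
    then show thesis using n by blast
  qed
qed

lemma GE_IG:
  assumes "R \<subseteq> IG S p (Suc k)" "(U, V) \<in> GE S p k R"
  shows "U \<in> IG S p k \<and> V \<in> IG S p k"
  using assms(2)
proof (cases rule: GE_cases)
  case (q Z u v)
  then have "(U, V) \<in> qE S p k" unfolding qE_def by auto
  then show ?thesis using qE_IG by blast
next
  case (r X x y)
  then have X: "X \<in> IG S p (Suc k)" using assms(1) by blast
  then have "finite X" unfolding IG_def using card.infinite by fastforce
  then show ?thesis using r X unfolding IG_def adj_def by (auto intro: invd_subset)
next
  case (n X x y)
  then have X: "X \<in> IG S p (Suc k)" by blast
  then have "finite X" unfolding IG_def using card.infinite by fastforce
  then show ?thesis using n X unfolding IG_def adj_def by (auto intro: invd_subset)
qed


lemma IG_fin: "finite S \<Longrightarrow> X \<in> IG S p m \<Longrightarrow> finite X"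
  unfolding IG_def using finite_subset by blast

lemma updown_remove:
  assumes "updown (insert e X) J" "e \<notin> X"
  shows "updown X (J - {e})"
proof -
  have "(\<forall>x\<in>J. \<forall>y\<in>insert e X. x \<le> y \<longrightarrow> y \<in> J) \<or> (\<forall>x\<in>J. \<forall>y\<in>insert e X. y \<le> x \<longrightarrow> y \<in> J)"
    using assms(1) unfolding updown_def .
  then show ?thesis
  proof
    assume h: "\<forall>x\<in>J. \<forall>y\<in>insert e X. x \<le> y \<longrightarrow> y \<in> J"
    have "\<forall>x\<in>J - {e}. \<forall>y\<in>X. x \<le> y \<longrightarrow> y \<in> J - {e}"
    proof (intro ballI impI)
      fix x y assume "x \<in> J - {e}" "y \<in> X" "x \<le> y"
      then show "y \<in> J - {e}" using h assms(2) by auto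
    qed
    then show ?thesis unfolding updown_def by blast
  next
    assume h: "\<forall>x\<in>J. \<forall>y\<in>insert e X. y \<le> x \<longrightarrow> y \<in> J"
    have "\<forall>x\<in>J - {e}. \<forall>y\<in>X. y \<le> x \<longrightarrow> y \<in> J - {e}"
    proof (intro ballI impI)
      fix x y assume "x \<in> J - {e}" "y \<in> X" "y \<le> x"
      then show "y \<in> J - {e}" using h assms(2) by auto
    qed
    then show ?thesis unfolding updown_def by blast
  qed
qed

locale msplit =
  fixes S :: "nat set" and p :: "nat \<Rightarrow> nat" and k' :: nat and R :: "nat set set"
  assumes finS: "finite S" and injp: "inj_on p S" and neS: "S \<noteq> {}"
    and cons: "cons1 S p (Suc (Suc k')) R"
begin

definition "e = Min S"
definition "S0 = S - {e}"
definition "T = {y\<in>S. p y < p e}"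
definition "R0 = {X\<in>R. e \<notin> X}"
definition "R1 = (\<lambda>X. X - {e}) ` {X\<in>R. e \<in> X}"
definition "Q = {Y. (Y \<subseteq> T \<and> insert e Y \<in> R) \<or> (even (Suc k') \<and> \<not> Y \<subseteq> T)}"

lemma eS: "e \<in> S" unfolding e_def using finS neS by simp

lemma e_le: "y \<in> S \<Longrightarrow> e \<le> y" unfolding e_def using finS by simp

lemma e_less: "y \<in> S \<Longrightarrow> y \<noteq> e \<Longrightarrow> e < y" using e_le by (simp add: le_neq_implies_less)

lemma T_S0: "T \<subseteq> S0" unfolding T_def S0_def by auto

lemma eT: "e \<notin> T" unfolding T_def by simp

lemma S0_S: "S0 \<subseteq> S" unfolding S0_def by auto

lemma finS0: "finite S0" using finS S0_S finite_subset by blast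

lemma finT: "finite T" using finS0 T_S0 finite_subset by blast

lemma notT: "y \<in> S0 \<Longrightarrow> y \<notin> T \<Longrightarrow> p e < p y"
proof -
  assume a: "y \<in> S0" "y \<notin> T"
  then have "y \<in> S" "y \<noteq> e" unfolding S0_def by auto
  then have "p y \<noteq> p e" using injp eS unfolding inj_on_def by blast
  moreover have "\<not> p y < p e" using a \<open>y \<in> S\<close> unfolding T_def by auto
  ultimately show ?thesis by simp
qed

lemma inT: "y \<in> T \<Longrightarrow> p y < p e" unfolding T_def by simp

lemma RIG: "R \<subseteq> IG S p (Suc (Suc k'))" using cons unfolding cons1_def by simp

lemma cons_low: "(A, B) \<in> qE S p (Suc (Suc k')) \<Longrightarrow> B \<in> R \<Longrightarrow> A \<in> R"
  using cons unfolding cons1_def by blast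

lemma cons_ud: "X \<in> IG S p (Suc (Suc (Suc k'))) \<Longrightarrow> updown X {x\<in>X. X - {x} \<in> R}"
  using cons unfolding cons1_def by blast

lemma minS0: "Y \<subseteq> S0 \<Longrightarrow> \<forall>y\<in>Y. e < y"
  using e_less unfolding S0_def by blast

lemma qE_lift:
  assumes "(A, B) \<in> qE T p m"
  shows "(insert e A, insert e B) \<in> qE S p (Suc m)"
proof -
  obtain Z u v where Z: "Z \<subseteq> T" "card Z = Suc m" "qpair p Z u v"
    "if odd (m - Suc (rk Z u)) then (A, B) = (Z - {u}, Z - {v}) else (A, B) = (Z - {v}, Z - {u})"
    using assms unfolding qE_def by (simp only: mem_Collect_eq case_prod_conv) blast
  have finZ: "finite Z" using Z(1) finT finite_subset by blast
  have mn: "\<forall>z\<in>Z. e < z" using minS0 Z(1) T_S0 by blast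
  have uv: "u \<in> Z" "v \<in> Z" "u < v" "p u < p v" "invd p (Z - {u})" "invd p (Z - {v})"
    using Z(3) unfolding qpair_def by auto
  have ue: "u \<noteq> e" "v \<noteq> e" using uv mn by auto
  have pT: "\<forall>y\<in>Z. p y < p e" using Z(1) inT by blast
  let ?Z = "insert e Z"
  have eZ: "e \<notin> Z" using mn by auto
  have d1: "?Z - {u} = insert e (Z - {u})" "?Z - {v} = insert e (Z - {v})" using ue by auto
  have "invd p (?Z - {u})" unfolding d1 using invd_insert[of "Z - {u}" e p] mn pT uv by auto
  moreover have "invd p (?Z - {v})" unfolding d1 using invd_insert[of "Z - {v}" e p] mn pT uv by auto
  ultimately have qp: "qpair p ?Z u v" unfolding qpair_def using uv by auto
  have cZ: "card ?Z = Suc (Suc m)" using Z(2) finZ eZ by simp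
  have sZ: "?Z \<subseteq> S" using Z(1) T_S0 S0_S eS by blast
  have rk: "rk ?Z u = Suc (rk Z u)" using rk_insert_min[OF finZ mn uv(1)] .
  have par: "Suc m - Suc (rk ?Z u) = m - Suc (rk Z u)" using rk by simp
  have e: "if odd (Suc m - Suc (rk ?Z u)) then (insert e A, insert e B) = (?Z - {u}, ?Z - {v})
           else (insert e A, insert e B) = (?Z - {v}, ?Z - {u})"
    unfolding par d1 using Z(4) by (cases "odd (m - Suc (rk Z u))") auto
  show ?thesis unfolding qE_def mem_Collect_eq case_prod_conv
    apply (rule exI[of _ ?Z], rule exI[of _ u], rule exI[of _ v])
    using sZ cZ qp e by blast
qed

lemma qmin:
  assumes "X \<subseteq> S0" "card X = Suc (Suc k')" "invd p X" "x \<in> X" "\<forall>z\<in>X. x \<le> z"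
    "p e < p x" "\<forall>y\<in>X - {x}. p y < p e"
  shows "(odd (Suc k') \<longrightarrow> (X, insert e (X - {x})) \<in> qE S p (Suc (Suc k'))) \<and>
         (even (Suc k') \<longrightarrow> (insert e (X - {x}), X) \<in> qE S p (Suc (Suc k')))"
proof -
  let ?Z = "insert e X"
  have finX: "finite X" using assms(1) finS0 finite_subset by blast
  have mn: "\<forall>z\<in>X. e < z" using minS0 assms(1) by blast
  have eX: "e \<notin> X" using mn by auto
  have d: "?Z - {e} = X" "?Z - {x} = insert e (X - {x})" using eX mn assms(4) by auto
  have "invd p (insert e (X - {x}))"
    using invd_insert[of "X - {x}" e p] mn assms invd_subset[OF assms(3)] by auto
  then have qp: "qpair p ?Z e x" unfolding qpair_def using d assms mn by auto
  have cZ: "card ?Z = Suc (Suc (Suc k'))" using assms(2) finX eX by simp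
  have sZ: "?Z \<subseteq> S" using assms(1) S0_S eS by blast
  have rk: "Suc (Suc k') - Suc (rk ?Z e) = Suc k'" using rk_min0[OF mn] by simp
  show ?thesis
  proof (intro conjI impI)
    assume o: "odd (Suc k')"
    have e: "if odd (Suc (Suc k') - Suc (rk ?Z e)) then (X, insert e (X - {x})) = (?Z - {e}, ?Z - {x})
      else (X, insert e (X - {x})) = (?Z - {x}, ?Z - {e})"
      unfolding rk d using o by simp
    show "(X, insert e (X - {x})) \<in> qE S p (Suc (Suc k'))"
      unfolding qE_def mem_Collect_eq case_prod_conv
      apply (rule exI[of _ ?Z], rule exI[of _ e], rule exI[of _ x])
      using sZ cZ qp e by blast
  next
    assume o: "even (Suc k')"
    have e: "if odd (Suc (Suc k') - Suc (rk ?Z e)) then (insert e (X - {x}), X) = (?Z - {e}, ?Z - {x})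
      else (insert e (X - {x}), X) = (?Z - {x}, ?Z - {e})"
      unfolding rk d using o by simp
    show "(insert e (X - {x}), X) \<in> qE S p (Suc (Suc k'))"
      unfolding qE_def mem_Collect_eq case_prod_conv
      apply (rule exI[of _ ?Z], rule exI[of _ e], rule exI[of _ x])
      using sZ cZ qp e by blast
  qed
qed

lemma L1: "cons1 S0 p (Suc (Suc k')) R0"
  unfolding cons1_def
proof (intro conjI allI impI ballI)
  show "R0 \<subseteq> IG S0 p (Suc (Suc k'))"
    using RIG unfolding R0_def IG_def S0_def by blast
next
  fix A B assume "(A, B) \<in> qE S0 p (Suc (Suc k'))" "B \<in> R0"
  moreover have "A \<in> IG S0 p (Suc (Suc k'))" using qE_IG(1) calculation(1) .
  ultimately show "A \<in> R0" using cons_low qE_mono[OF S0_S] unfolding R0_def IG_def S0_def by blast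
next
  fix X assume X: "X \<in> IG S0 p (Suc (Suc (Suc k')))"
  then have "X \<in> IG S p (Suc (Suc (Suc k')))" using IG_mono[OF S0_S] by blast
  moreover have "e \<notin> X" using X unfolding IG_def S0_def by blast
  then have "{x\<in>X. X - {x} \<in> R0} = {x\<in>X. X - {x} \<in> R}" unfolding R0_def by auto
  ultimately show "updown X {x\<in>X. X - {x} \<in> R0}" using cons_ud by simp
qed

lemma R1_iff:
  assumes "e \<notin> Y"
  shows "Y \<in> R1 \<longleftrightarrow> insert e Y \<in> R"
proof
  assume "Y \<in> R1"
  then obtain X where "X \<in> R" "e \<in> X" "Y = X - {e}" unfolding R1_def by blast
  then have "insert e Y = X" by auto
  then show "insert e Y \<in> R" using \<open>X \<in> R\<close> by simp
next
  assume "insert e Y \<in> R"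
  then show "Y \<in> R1" unfolding R1_def using assms by (intro image_eqI[of _ _ "insert e Y"]) auto
qed

lemma L2: "cons1 T p (Suc k') R1"
  unfolding cons1_def
proof (intro conjI allI impI ballI)
  show "R1 \<subseteq> IG T p (Suc k')"
  proof
    fix Y assume "Y \<in> R1"
    then obtain X where X: "X \<in> R" "e \<in> X" "Y = X - {e}" unfolding R1_def by blast
    then have XI: "X \<in> IG S p (Suc (Suc k'))" using RIG by blast
    then have finX: "finite X" using IG_fin finS by blast
    have "card Y = Suc k'" using X XI finX unfolding IG_def by simp
    moreover have "invd p Y" using XI X invd_subset unfolding IG_def by blast
    moreover have "Y \<subseteq> T"
    proof
      fix y assume "y \<in> Y"
      then have "y \<in> S" "y \<noteq> e" using X XI unfolding IG_def by auto
      then have "e < y" using e_less by simp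
      then have "p y < p e" using XI X \<open>y \<in> Y\<close> unfolding IG_def invd_def by blast
      then show "y \<in> T" unfolding T_def using \<open>y \<in> S\<close> by simp
    qed
    ultimately show "Y \<in> IG T p (Suc k')" unfolding IG_def by simp
  qed
next
  fix A B assume ab: "(A, B) \<in> qE T p (Suc k')" "B \<in> R1"
  have "(insert e A, insert e B) \<in> qE S p (Suc (Suc k'))" using qE_lift[OF ab(1)] .
  moreover have "e \<notin> B" "e \<notin> A" using qE_IG[OF ab(1)] eT unfolding IG_def by auto
  ultimately have l: "(insert e A, insert e B) \<in> qE S p (Suc (Suc k'))" "e \<notin> B" "e \<notin> A" by auto
  have "insert e B \<in> R" using R1_iff[OF l(2)] ab(2) by simp
  then have "insert e A \<in> R" using cons_low[OF l(1)] by simp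
  then show "A \<in> R1" using R1_iff[OF l(3)] by simp
next
  fix X assume X: "X \<in> IG T p (Suc (Suc k'))"
  let ?X = "insert e X"
  have XT: "X \<subseteq> T" "card X = Suc (Suc k')" "invd p X" using X unfolding IG_def by auto
  have finX: "finite X" using XT finT finite_subset by blast
  have mn: "\<forall>z\<in>X. e < z" using minS0 XT T_S0 by blast
  have eX: "e \<notin> X" using mn by auto
  have "invd p ?X" using invd_insert[of X e p] mn XT inT by blast
  then have XI: "?X \<in> IG S p (Suc (Suc (Suc k')))"
    unfolding IG_def using XT finX eX T_S0 S0_S eS by auto
  have ud: "updown ?X {x\<in>?X. ?X - {x} \<in> R}" using cons_ud[OF XI] .
  have J: "{x\<in>X. X - {x} \<in> R1} = {x\<in>?X. ?X - {x} \<in> R} - {e}"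
  proof -
    have "X - {x} \<in> R1 \<longleftrightarrow> ?X - {x} \<in> R" if "x \<in> X" for x
    proof -
      have "?X - {x} = insert e (X - {x})" using that eX by auto
      then show ?thesis using R1_iff[of "X - {x}"] eX by simp
    qed
    then show ?thesis using eX by auto
  qed
  show "updown X {x\<in>X. X - {x} \<in> R1}" unfolding J using updown_remove[OF ud eX] .
qed

end


lemma qE_I:
  assumes "Z \<subseteq> S" "card Z = Suc k" "qpair p Z u v"
    "(odd (k - Suc (rk Z u)) \<and> U = Z - {u} \<and> V = Z - {v}) \<or> (even (k - Suc (rk Z u)) \<and> U = Z - {v} \<and> V = Z - {u})"
  shows "(U, V) \<in> qE S p k"
  unfolding qE_def mem_Collect_eq case_prod_conv
  apply (rule exI[of _ Z], rule exI[of _ u], rule exI[of _ v])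
  using assms by auto

lemma GE_qI: "(U, V) \<in> qE S p k \<Longrightarrow> (U, V) \<in> GE S p k R"
  unfolding GE_def by blast

lemma GE_rI: "X \<in> R \<Longrightarrow> adj X x y \<Longrightarrow> (X - {x}, X - {y}) \<in> GE S p k R"
  unfolding GE_def by blast

lemma GE_nI: "X \<in> IG S p (Suc k) \<Longrightarrow> X \<notin> R \<Longrightarrow> adj X x y \<Longrightarrow> (X - {y}, X - {x}) \<in> GE S p k R"
  unfolding GE_def by blast

context msplit
begin

lemma rk_e: "Z \<subseteq> S \<Longrightarrow> rk Z e = 0"
  unfolding rk_def using e_le by fastforce

lemma XIG: "X \<in> R \<Longrightarrow> X \<in> IG S p (Suc (Suc k'))" using RIG by blast

lemma IG_parts:
  assumes "X \<in> IG S p m"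
  shows "X \<subseteq> S" "card X = m" "invd p X" "finite X"
  using assms IG_fin[OF finS assms] unfolding IG_def by auto

lemma sub_T:
  assumes "X \<subseteq> S" "invd p X" "e \<in> X"
  shows "X - {e} \<subseteq> T"
proof
  fix y assume y: "y \<in> X - {e}"
  then have "y \<in> S" "e < y" using assms e_less by auto
  then have "p y < p e" using assms y unfolding invd_def by blast
  then show "y \<in> T" unfolding T_def using \<open>y \<in> S\<close> by simp
qed

lemma edge_a:
  assumes "(U, V) \<in> GE S p (Suc k') R" "e \<notin> U" "e \<notin> V"
  shows "(U, V) \<in> GE S0 p (Suc k') R0"
  using assms(1)
proof (cases rule: GE_cases)
  case (q Z u v)
  have "u \<noteq> v" using q(3) unfolding qpair_def by simp
  then have "Z = U \<union> V" using q(4) q(3) unfolding qpair_def by auto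
  then have "Z \<subseteq> S0" using q(1) assms unfolding S0_def by auto
  then have "(U, V) \<in> qE S0 p (Suc k')" by (rule qE_I[OF _ q(2,3,4)])
  then show ?thesis by (rule GE_qI)
next
  case (r X x y)
  have "X = U \<union> V" using r unfolding adj_def by auto
  then have "X \<in> R0" using r assms unfolding R0_def by auto
  then show ?thesis using r GE_rI by blast
next
  case (n X x y)
  have "X = U \<union> V" using n unfolding adj_def by auto
  then have "e \<notin> X" using assms by auto
  then have "X \<in> IG S0 p (Suc (Suc k'))" "X \<notin> R0"
    using n unfolding IG_def S0_def R0_def by auto
  then show ?thesis using n GE_nI by blast
qed

lemma edge_b:
  assumes "(U, V) \<in> GE S p (Suc k') R" "e \<in> U" "e \<in> V"
  shows "(U - {e}, V - {e}) \<in> GE T p k' R1"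
  using assms(1)
proof (cases rule: GE_cases)
  case (q Z u v)
  have uv: "u \<in> Z" "v \<in> Z" "u < v" "p u < p v" "invd p (Z - {u})" "invd p (Z - {v})"
    using q(3) unfolding qpair_def by auto
  have ne: "e \<noteq> u" "e \<noteq> v" "e \<in> Z" using q(4) assms by auto
  define Z' where "Z' = Z - {e}"
  have finZ: "finite Z" using q(1) finS finite_subset by blast
  have finZ': "finite Z'" unfolding Z'_def using finZ by simp
  have ZS0: "Z' \<subseteq> S0" using q(1) unfolding S0_def Z'_def by auto
  have mn: "\<forall>z\<in>Z'. e < z" using minS0[OF ZS0] .
  have Zi: "Z = insert e Z'" using ne unfolding Z'_def by auto
  have eZ': "e \<notin> Z'" unfolding Z'_def by simp
  have u': "u \<in> Z'" "v \<in> Z'" using uv ne unfolding Z'_def by auto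
  have d: "Z - {u} = insert e (Z' - {u})" "Z - {v} = insert e (Z' - {v})" using ne Zi by auto
  have i1: "invd p (Z' - {u}) \<and> (\<forall>y\<in>Z' - {u}. p y < p e)"
    using invd_insert[of "Z' - {u}" e p] mn uv(5) d(1) by auto
  have i2: "invd p (Z' - {v}) \<and> (\<forall>y\<in>Z' - {v}. p y < p e)"
    using invd_insert[of "Z' - {v}" e p] mn uv(6) d(2) by auto
  have ZT: "Z' \<subseteq> T"
  proof
    fix z assume z: "z \<in> Z'"
    then have "p z < p e" using i1 i2 uv(3) by (cases "z = u") auto
    then show "z \<in> T" using z q(1) unfolding T_def Z'_def by auto
  qed
  have qp: "qpair p Z' u v" unfolding qpair_def using uv u' i1 i2 by auto
  have cZ: "card Z' = Suc k'" using q(2) finZ' eZ' Zi by simp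
  have rk: "rk Z u = Suc (rk Z' u)" unfolding Zi using rk_insert_min[OF finZ' mn u'(1)] .
  have par: "Suc k' - Suc (rk Z u) = k' - Suc (rk Z' u)" using rk by simp
  have "(odd (k' - Suc (rk Z' u)) \<and> U - {e} = Z' - {u} \<and> V - {e} = Z' - {v}) \<or>
        (even (k' - Suc (rk Z' u)) \<and> U - {e} = Z' - {v} \<and> V - {e} = Z' - {u})"
    using q(4) unfolding par Z'_def by auto
  then have "(U - {e}, V - {e}) \<in> qE T p k'" by (rule qE_I[OF ZT cZ qp])
  then show ?thesis by (rule GE_qI)
next
  case (r X x y)
  have XI: "X \<in> IG S p (Suc (Suc k'))" using XIG r(1) by blast
  have ne: "x \<noteq> e" "y \<noteq> e" "e \<in> X" using r assms by auto
  let ?X = "X - {e}"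
  have "insert e ?X = X" using ne by auto
  then have "?X \<in> R1" using R1_iff[of ?X] r(1) by simp
  moreover have "adj ?X x y"
    using adj_insert_min[of ?X e x y] ne minS0[of ?X] r(2) IG_parts[OF XI] \<open>insert e ?X = X\<close>
    unfolding S0_def by auto
  moreover have "U - {e} = ?X - {x}" "V - {e} = ?X - {y}" using r by auto
  ultimately show ?thesis using GE_rI[of ?X R1 x y] by simp
next
  case (n X x y)
  have ne: "x \<noteq> e" "y \<noteq> e" "e \<in> X" using n assms by auto
  let ?X = "X - {e}"
  have ins: "insert e ?X = X" using ne by auto
  then have "?X \<notin> R1" using R1_iff[of ?X] n(2) by simp
  moreover have "?X \<in> IG T p (Suc k')"
    using IG_parts[OF n(1)] sub_T[of X] ne invd_subset[of p X ?X] unfolding IG_def by auto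
  moreover have "adj ?X x y"
    using adj_insert_min[of ?X e x y] ne minS0[of ?X] n(3) IG_parts[OF n(1)] ins
    unfolding S0_def by auto
  moreover have "U - {e} = ?X - {y}" "V - {e} = ?X - {x}" using n by auto
  ultimately show ?thesis using GE_nI[of ?X T p k' R1 x y] by simp
qed

lemma edge_c:
  assumes "(U, V) \<in> GE S p (Suc k') R" "e \<notin> U" "e \<in> V"
  shows "U \<in> Q"
  using assms(1)
proof (cases rule: GE_cases)
  case (q Z u v)
  have uv: "u \<in> Z" "v \<in> Z" "u < v" "p u < p v" using q(3) unfolding qpair_def by auto
  have eZ: "e \<in> Z" using q(4) assms by auto
  show ?thesis
  proof (cases "U = Z - {u}")
    case True
    then have ue: "u = e" using eZ assms by auto
    then have "U = Z - {u} \<and> V = Z - {v}" using q(4) True uv by auto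
    then have "odd (Suc k' - Suc (rk Z u))" using q(4) uv by auto
    then have ev: "even (Suc k')" using rk_e[OF q(1)] ue by simp
    have "v \<in> U" using True uv by auto
    moreover have "v \<notin> T" using uv ue unfolding T_def by auto
    ultimately show ?thesis unfolding Q_def using ev by auto
  next
    case False
    then have "U = Z - {v}" using q(4) by auto
    then have "v = e" using eZ assms by auto
    then show ?thesis using uv e_le q(1) by force
  qed
next
  case (r X x y)
  have XI: "X \<in> IG S p (Suc (Suc k'))" using XIG r(1) by blast
  have "e \<in> X" using r assms by auto
  then have xe: "x = e" using r assms by auto
  have "U \<subseteq> T" using sub_T[of X] IG_parts[OF XI] \<open>e \<in> X\<close> r xe by auto
  moreover have "insert e U = X" using r xe \<open>e \<in> X\<close> by auto
  ultimately show ?thesis using r(1) unfolding Q_def by auto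
next
  case (n X x y)
  have "e \<in> X" using n assms by auto
  then have "y = e" using n assms by auto
  moreover have "x \<in> S" "x < y" using n IG_parts[OF n(1)] unfolding adj_def by auto
  ultimately show ?thesis using e_le by force
qed

lemma edge_d:
  assumes "(U, V) \<in> GE S p (Suc k') R" "e \<in> U" "e \<notin> V"
  shows "V \<notin> Q"
  using assms(1)
proof (cases rule: GE_cases)
  case (q Z u v)
  have uv: "u \<in> Z" "v \<in> Z" "u < v" "p u < p v" using q(3) unfolding qpair_def by auto
  have eZ: "e \<in> Z" using q(4) assms by auto
  show ?thesis
  proof (cases "V = Z - {v}")
    case True
    then have "v = e" using eZ assms by auto
    then show ?thesis using uv e_le q(1) by force
  next
    case False
    then have VU: "V = Z - {u}" "U = Z - {v}" using q(4) by auto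
    then have ue: "u = e" using eZ assms by auto
    have "even (Suc k' - Suc (rk Z u))" using q(4) False by auto
    then have od: "odd (Suc k')" using rk_e[OF q(1)] ue by simp
    have "v \<in> V" using VU uv by auto
    moreover have "v \<notin> T" using uv ue unfolding T_def by auto
    ultimately show ?thesis unfolding Q_def using od by auto
  qed
next
  case (r X x y)
  have "e \<in> X" using r assms by auto
  then have "y = e" using r assms by auto
  moreover have "x \<in> S" "x < y" using r XIG[OF r(1)] IG_parts unfolding adj_def by auto
  ultimately show ?thesis using e_le by force
next
  case (n X x y)
  have "e \<in> X" using n assms by auto
  then have xe: "x = e" using n assms by auto
  have "V \<subseteq> T" using sub_T[of X] IG_parts[OF n(1)] \<open>e \<in> X\<close> n xe by auto
  moreover have "insert e V = X" using n xe \<open>e \<in> X\<close> by auto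
  ultimately show ?thesis using n(2) unfolding Q_def by auto
qed


lemma hat:
  assumes "X \<subseteq> T" "X \<in> IG S p (Suc (Suc k'))"
  shows "insert e X \<in> IG S p (Suc (Suc (Suc k')))" "insert e X - {e} = X"
    "\<And>z. z \<in> X \<Longrightarrow> insert e X - {z} = insert e (X - {z})"
proof -
  have mn: "\<forall>z\<in>X. e < z" using minS0 assms(1) T_S0 by blast
  have eX: "e \<notin> X" using mn by auto
  have "invd p (insert e X)" using invd_insert[of X e p] mn IG_parts(3)[OF assms(2)] assms(1) inT by blast
  then show "insert e X \<in> IG S p (Suc (Suc (Suc k')))"
    using IG_parts[OF assms(2)] eX eS unfolding IG_def by auto
  show "insert e X - {e} = X" using eX by auto
  show "\<And>z. z \<in> X \<Longrightarrow> insert e X - {z} = insert e (X - {z})" using eX by auto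
qed

lemma noe_S0: "Y \<subseteq> S \<Longrightarrow> e \<notin> Y \<Longrightarrow> Y \<subseteq> S0"
  unfolding S0_def by auto

lemma downQ_Ai:
  assumes "(U, V) \<in> GE S p (Suc k') R" "e \<notin> U" "e \<notin> V"
    "V \<subseteq> T" "insert e V \<in> R" "U \<subseteq> T"
  shows "insert e U \<in> R"
  using assms(1)
proof (cases rule: GE_cases)
  case (q Z u v)
  have "u \<noteq> v" using q(3) unfolding qpair_def by simp
  then have "Z = U \<union> V" using q(4) q(3) unfolding qpair_def by auto
  then have ZT: "Z \<subseteq> T" using assms by auto
  have "(U, V) \<in> qE T p (Suc k')" by (rule qE_I[OF ZT q(2,3,4)])
  then have "(insert e U, insert e V) \<in> qE S p (Suc (Suc k'))" by (rule qE_lift)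
  then show ?thesis using cons_low assms(5) by blast
next
  case (r X x y)
  have xy: "x \<in> X" "y \<in> X" "x < y" using r(2) unfolding adj_def by auto
  have XT: "X \<subseteq> T" using r xy assms by auto
  have XI: "X \<in> IG S p (Suc (Suc k'))" using XIG r(1) by blast
  note h = hat[OF XT XI]
  let ?J = "{z\<in>insert e X. insert e X - {z} \<in> R}"
  have ud: "updown (insert e X) ?J" using cons_ud[OF h(1)] .
  have eJ: "e \<in> ?J" using h(2) r(1) by simp
  have yJ: "y \<in> ?J" using h(3)[OF xy(2)] r(4) assms(5) xy by simp
  have xS: "e \<le> x" using e_le xy XI IG_parts by blast
  have "x \<in> ?J" using ud eJ yJ xS xy unfolding updown_def by auto
  then show ?thesis using h(3)[OF xy(1)] r(3) by simp
next
  case (n X x y)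
  have xy: "x \<in> X" "y \<in> X" "x < y" using n(3) unfolding adj_def by auto
  have XT: "X \<subseteq> T" using n xy assms by auto
  note h = hat[OF XT n(1)]
  let ?J = "{z\<in>insert e X. insert e X - {z} \<in> R}"
  have ud: "updown (insert e X) ?J" using cons_ud[OF h(1)] .
  have eJ: "e \<notin> ?J" using h(2) n(2) by simp
  have xJ: "x \<in> ?J" using h(3)[OF xy(1)] n(5) assms(5) xy by simp
  have xS: "e \<le> x" using e_le xy n(1) IG_parts by blast
  have "y \<in> ?J" using ud eJ xJ xS xy unfolding updown_def by auto
  then show ?thesis using h(3)[OF xy(2)] n(4) by simp
qed

lemma downQ_Aii:
  assumes "(U, V) \<in> GE S p (Suc k') R" "e \<notin> U" "e \<notin> V"
    "V \<subseteq> T" "insert e V \<in> R" "\<not> U \<subseteq> T" "odd (Suc k')"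
  shows False
  using assms(1)
proof (cases rule: GE_cases)
  case (q Z u v)
  have uv: "u \<in> Z" "v \<in> Z" "u < v" "p u < p v" "invd p (Z - {u})" "invd p (Z - {v})"
    using q(3) unfolding qpair_def by auto
  have "Z = U \<union> V" using q(4) uv by auto
  then have ZS0: "Z \<subseteq> S0" using noe_S0[of Z] q(1) assms(2,3) by auto
  obtain t where t: "t \<in> U" "t \<notin> T" using assms(6) by blast
  show False
  proof (cases "U = Z - {u}")
    case True
    then have V: "V = Z - {v}" and par: "odd (Suc k' - Suc (rk Z u))" using q(4) uv by auto
    have "u \<in> V" using V uv by auto
    then have pu: "p u < p e" using assms(4) inT by blast
    have "t = v" using t True V assms(4) by auto
    then have pv: "p e < p v" using notT t ZS0 True by auto
    have "{z\<in>Z. z < u} = {}"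
    proof (rule ccontr)
      assume "{z\<in>Z. z < u} \<noteq> {}"
      then obtain z where z: "z \<in> Z" "z < u" by blast
      then have "z \<in> V" using V uv by auto
      then have "p z < p e" using assms(4) inT by blast
      moreover have "p v < p z" using uv(6) uv(5) z uv unfolding invd_def by auto
      ultimately show False using pv by simp
    qed
    then have "rk Z u = 0" unfolding rk_def by simp
    then show False using par assms(7) by simp
  next
    case False
    then have U: "U = Z - {v}" and V: "V = Z - {u}" using q(4) by auto
    have "v \<in> V" using V uv by auto
    then have pv: "p v < p e" using assms(4) inT by blast
    have "t = u" using t U V assms(4) by auto
    then have "p e < p u" using notT t ZS0 U by auto
    then show False using pv uv by simp
  qed
next
  case (r X x y)
  have xy: "x \<in> X" "y \<in> X" "x < y" using r(2) unfolding adj_def by auto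
  have XI: "X \<in> IG S p (Suc (Suc k'))" using XIG r(1) by blast
  have "X = U \<union> V" using r xy by auto
  then have XS0: "X \<subseteq> S0" using noe_S0[of X] IG_parts[OF XI] assms(2,3) by auto
  obtain t where t: "t \<in> U" "t \<notin> T" using assms(6) by blast
  have "t = y" using t r assms(4) by auto
  then have "p e < p y" using notT t XS0 r by auto
  moreover have "p x < p e" using xy r assms(4) inT by auto
  moreover have "p y < p x" using IG_parts(3)[OF XI] xy unfolding invd_def by blast
  ultimately show False by simp
next
  case (n X x y)
  have xy: "x \<in> X" "y \<in> X" "x < y" using n(3) unfolding adj_def by auto
  have "X = U \<union> V" using n xy by auto
  then have XS0: "X \<subseteq> S0" using noe_S0[of X] IG_parts[OF n(1)] assms(2,3) by auto
  obtain t where t: "t \<in> U" "t \<notin> T" using assms(6) by blast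
  have tx: "t = x" using t n assms(4) by auto
  then have px: "p e < p x" using notT t XS0 n by auto
  have mn: "\<forall>z\<in>X. x \<le> z"
  proof
    fix z assume z: "z \<in> X"
    show "x \<le> z"
    proof (rule ccontr)
      assume "\<not> x \<le> z"
      then have "z < x" by simp
      then have "z \<in> V" using n z by auto
      then have "p z < p e" using assms(4) inT by blast
      moreover have "p x < p z" using IG_parts(3)[OF n(1)] z xy \<open>z < x\<close> unfolding invd_def by blast
      ultimately show False using px by simp
    qed
  qed
  have "\<forall>y\<in>X - {x}. p y < p e" using n(5) assms(4) inT by blast
  then have "(X, insert e (X - {x})) \<in> qE S p (Suc (Suc k'))"
    using qmin[OF XS0 _ _ xy(1) mn px] IG_parts[OF n(1)] assms(7) by blast
  then have "X \<in> R" using cons_low assms(5) n(5) by blast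
  then show False using n(2) by simp
qed

lemma downQ_B:
  assumes "(U, V) \<in> GE S p (Suc k') R" "e \<notin> U" "e \<notin> V"
    "\<not> V \<subseteq> T" "even (Suc k')" "U \<subseteq> T"
  shows "insert e U \<in> R"
  using assms(1)
proof (cases rule: GE_cases)
  case (q Z u v)
  have uv: "u \<in> Z" "v \<in> Z" "u < v" "p u < p v" "invd p (Z - {u})" "invd p (Z - {v})"
    using q(3) unfolding qpair_def by auto
  have "Z = U \<union> V" using q(4) uv by auto
  then have ZS0: "Z \<subseteq> S0" using noe_S0[of Z] q(1) assms(2,3) by auto
  obtain t where t: "t \<in> V" "t \<notin> T" using assms(4) by blast
  show ?thesis
  proof (cases "U = Z - {u}")
    case True
    then have V: "V = Z - {v}" using q(4) uv by auto
    have "v \<in> U" using True uv by auto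
    then have pv: "p v < p e" using assms(6) inT by blast
    have "t = u" using t True V assms(6) by auto
    then have "p e < p u" using notT t ZS0 V by auto
    then show ?thesis using pv uv by simp
  next
    case False
    then have U: "U = Z - {v}" and V: "V = Z - {u}" and par: "even (Suc k' - Suc (rk Z u))"
      using q(4) by auto
    have "t = v" using t U V assms(6) by auto
    then have pv: "p e < p v" using notT t ZS0 V by auto
    have "{z\<in>Z. z < u} = {}"
    proof (rule ccontr)
      assume "{z\<in>Z. z < u} \<noteq> {}"
      then obtain z where z: "z \<in> Z" "z < u" by blast
      then have "z \<in> U" using U uv by auto
      then have "p z < p e" using assms(6) inT by blast
      moreover have "p v < p z" using uv(5) z uv unfolding invd_def by auto
      ultimately show False using pv by simp
    qed
    then have "rk Z u = 0" unfolding rk_def by simp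
    then show ?thesis using par assms(5) by simp
  qed
next
  case (r X x y)
  have xy: "x \<in> X" "y \<in> X" "x < y" using r(2) unfolding adj_def by auto
  have XI: "X \<in> IG S p (Suc (Suc k'))" using XIG r(1) by blast
  have "X = U \<union> V" using r xy by auto
  then have XS0: "X \<subseteq> S0" using noe_S0[of X] IG_parts[OF XI] assms(2,3) by auto
  obtain t where t: "t \<in> V" "t \<notin> T" using assms(4) by blast
  have "t = x" using t r assms(6) by auto
  then have px: "p e < p x" using notT t XS0 r by auto
  have mn: "\<forall>z\<in>X. x \<le> z"
  proof
    fix z assume z: "z \<in> X"
    show "x \<le> z"
    proof (rule ccontr)
      assume "\<not> x \<le> z"
      then have "z < x" by simp
      then have "z \<in> U" using r z by auto
      then have "p z < p e" using assms(6) inT by blast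
      moreover have "p x < p z" using IG_parts(3)[OF XI] z xy \<open>z < x\<close> unfolding invd_def by blast
      ultimately show False using px by simp
    qed
  qed
  have "\<forall>y\<in>X - {x}. p y < p e" using r(3) assms(6) inT by blast
  then have "(insert e (X - {x}), X) \<in> qE S p (Suc (Suc k'))"
    using qmin[OF XS0 _ _ xy(1) mn px] IG_parts[OF XI] assms(5) by blast
  then show ?thesis using cons_low r(1) r(3) by blast
next
  case (n X x y)
  have xy: "x \<in> X" "y \<in> X" "x < y" using n(3) unfolding adj_def by auto
  have "X = U \<union> V" using n xy by auto
  then have XS0: "X \<subseteq> S0" using noe_S0[of X] IG_parts[OF n(1)] assms(2,3) by auto
  obtain t where t: "t \<in> V" "t \<notin> T" using assms(4) by blast
  have "t = y" using t n assms(6) by auto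
  then have "p e < p y" using notT t XS0 n by auto
  moreover have "p x < p e" using xy n assms(6) inT by auto
  moreover have "p y < p x" using IG_parts(3)[OF n(1)] xy unfolding invd_def by blast
  ultimately show ?thesis by simp
qed

lemma downQ:
  assumes "(U, V) \<in> GE S p (Suc k') R" "e \<notin> U" "e \<notin> V" "V \<in> Q"
  shows "U \<in> Q"
proof (cases "U \<subseteq> T")
  case True
  have "insert e U \<in> R"
  proof (cases "V \<subseteq> T \<and> insert e V \<in> R")
    case True
    then show ?thesis using downQ_Ai assms \<open>U \<subseteq> T\<close> by blast
  next
    case False
    then have "even (Suc k') \<and> \<not> V \<subseteq> T" using assms(4) unfolding Q_def by blast
    then show ?thesis using downQ_B assms \<open>U \<subseteq> T\<close> by blast
  qed
  then show ?thesis using True unfolding Q_def by blast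
next
  case False
  show ?thesis
  proof (cases "even (Suc k')")
    case True
    then show ?thesis using False unfolding Q_def by blast
  next
    case odd: False
    then have "V \<subseteq> T \<and> insert e V \<in> R" using assms(4) unfolding Q_def by blast
    then show ?thesis using downQ_Aii assms False odd by blast
  qed
qed

end


lemma IG_finite_set: "finite S \<Longrightarrow> finite (IG S p m)"
  unfolding IG_def by (rule finite_subset[of _ "Pow S"]) auto

lemma no_edges_0:
  assumes "R \<subseteq> IG S p (Suc 0)" "finite S"
  shows "(U, V) \<notin> GE S p 0 R"
proof
  assume "(U, V) \<in> GE S p 0 R"
  then show False
  proof (cases rule: GE_cases)
    case (q Z u v)
    have fZ: "finite Z" using q(1) assms(2) finite_subset by blast
    have sub: "{u, v} \<subseteq> Z" and "u \<noteq> v" using q(3) unfolding qpair_def by auto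
    have "card {u, v} \<le> card Z" using card_mono[OF fZ sub] .
    then show False using q(2) \<open>u \<noteq> v\<close> by simp
  next
    case (r X x y)
    have X: "X \<in> IG S p (Suc 0)" using r assms by blast
    have fX: "finite X" using IG_fin[OF assms(2) X] .
    have sub: "{x, y} \<subseteq> X" and "x \<noteq> y" using r(2) unfolding adj_def by auto
    have "card {x, y} \<le> card X" using card_mono[OF fX sub] .
    then show False using X \<open>x \<noteq> y\<close> unfolding IG_def by simp
  next
    case (n X x y)
    have fX: "finite X" using IG_fin[OF assms(2) n(1)] .
    have sub: "{x, y} \<subseteq> X" and "x \<noteq> y" using n(3) unfolding adj_def by auto
    have "card {x, y} \<le> card X" using card_mono[OF fX sub] .
    then show False using n(1) \<open>x \<noteq> y\<close> unfolding IG_def by simp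
  qed
qed

theorem acyc:
  assumes "finite S" "inj_on p S" "cons1 S p (Suc k) R"
  shows "\<exists>f :: nat set \<Rightarrow> nat. \<forall>U V. (U, V) \<in> GE S p k R \<longrightarrow> f U < f V"
  using assms
proof (induction "card S" arbitrary: S k R rule: less_induct)
  case less
  have RIG0: "R \<subseteq> IG S p (Suc k)" using less.prems(3) unfolding cons1_def by simp
  show ?case
  proof (cases k)
    case 0
    then show ?thesis using no_edges_0[of R S p] RIG0 less.prems(1) by auto
  next
    case (Suc k')
    show ?thesis
    proof (cases "S = {}")
      case True
      have "IG S p k = {}" using True Suc unfolding IG_def by auto
      then show ?thesis using GE_IG[OF RIG0] by blast
    next
      case False
      interpret m: msplit S p k' R
        using less.prems False Suc by unfold_locales auto
      have c0: "card m.S0 < card S" unfolding m.S0_def using card_Diff1_less[OF less.prems(1) m.eS] .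
      have cT: "card m.T < card S"
        using psubset_card_mono[OF less.prems(1)] m.T_S0 m.S0_S m.eS unfolding m.S0_def by blast
      obtain f0 :: "nat set \<Rightarrow> nat" where f0: "\<forall>U V. (U, V) \<in> GE m.S0 p (Suc k') m.R0 \<longrightarrow> f0 U < f0 V"
        using less.hyps[OF c0 m.finS0 inj_on_subset[OF less.prems(2) m.S0_S] m.L1] by blast
      obtain f1 :: "nat set \<Rightarrow> nat" where f1: "\<forall>U V. (U, V) \<in> GE m.T p k' m.R1 \<longrightarrow> f1 U < f1 V"
        using less.hyps[OF cT m.finT inj_on_subset[OF less.prems(2)] m.L2] m.T_S0 m.S0_S by blast
      define M where "M = Suc (Max (f0 ` IG m.S0 p (Suc k') \<union> f1 ` IG m.T p k'))"
      have finI: "finite (f0 ` IG m.S0 p (Suc k') \<union> f1 ` IG m.T p k')"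
        using IG_finite_set m.finS0 m.finT by blast
      have M0: "f0 Y < M" if "Y \<in> IG m.S0 p (Suc k')" for Y
        unfolding M_def using Max_ge[OF finI] that by (simp add: le_imp_less_Suc)
      have M1: "f1 Y < M" if "Y \<in> IG m.T p k'" for Y
        unfolding M_def using Max_ge[OF finI] that by (simp add: le_imp_less_Suc)
      define f where "f Y = (if m.e \<in> Y then M + f1 (Y - {m.e}) else if Y \<in> m.Q then f0 Y else 2 * M + f0 Y)" for Y
      have "f U < f V" if uv: "(U, V) \<in> GE S p k R" for U V
      proof -
        have uv': "(U, V) \<in> GE S p (Suc k') R" using uv Suc by simp
        have UI: "U \<in> IG S p (Suc k')" and VI: "V \<in> IG S p (Suc k')"
          using GE_IG[OF RIG0 uv] Suc by auto
        have toS0: "Y \<in> IG m.S0 p (Suc k')" if "Y \<in> IG S p (Suc k')" "m.e \<notin> Y" for Y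
          using that unfolding IG_def m.S0_def by auto
        have toT: "Y - {m.e} \<in> IG m.T p k'" if "Y \<in> IG S p (Suc k')" "m.e \<in> Y" for Y
        proof -
          have "Y - {m.e} \<subseteq> m.T" using m.sub_T[of Y] m.IG_parts[OF that(1)] that(2) by blast
          moreover have "card (Y - {m.e}) = k'" using m.IG_parts[OF that(1)] that(2) by simp
          moreover have "invd p (Y - {m.e})" using m.IG_parts[OF that(1)] invd_subset by blast
          ultimately show ?thesis unfolding IG_def by simp
        qed
        show ?thesis
        proof (cases "m.e \<in> U")
          case eU: True
          show ?thesis
          proof (cases "m.e \<in> V")
            case True
            then show ?thesis using m.edge_b[OF uv' eU True] f1 eU unfolding f_def by auto
          next
            case False
            have "V \<notin> m.Q" using m.edge_d[OF uv' eU False] .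
            then show ?thesis using M1[OF toT[OF UI eU]] eU False unfolding f_def by auto
          qed
        next
          case eU: False
          show ?thesis
          proof (cases "m.e \<in> V")
            case True
            have "U \<in> m.Q" using m.edge_c[OF uv' eU True] .
            then show ?thesis using M0[OF toS0[OF UI eU]] eU True unfolding f_def by auto
          next
            case False
            have lt: "f0 U < f0 V" using f0 m.edge_a[OF uv' eU False] by blast
            show ?thesis
            proof (cases "V \<in> m.Q")
              case True
              then have "U \<in> m.Q" using m.downQ[OF uv' eU False] by blast
              then show ?thesis using True lt eU False unfolding f_def by auto
            next
              case vQ: False
              then show ?thesis using lt eU False unfolding f_def by auto
            qed
          qed
        qed
      qed
      then show ?thesis by blast
    qed
  qed
qed


definition bef :: "'a list \<Rightarrow> 'a \<Rightarrow> 'a \<Rightarrow> bool" where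
  "bef l a b = (\<exists>i j. i < j \<and> j < length l \<and> l ! i = a \<and> l ! j = b)"

lemma bef_Nil[simp]: "\<not> bef [] a b"
  unfolding bef_def by simp

lemma bef_Cons: "bef (x # l) a b \<longleftrightarrow> (x = a \<and> b \<in> set l) \<or> bef l a b"
proof
  assume "bef (x # l) a b"
  then obtain i j where ij: "i < j" "j < length (x # l)" "(x # l) ! i = a" "(x # l) ! j = b"
    unfolding bef_def by blast
  show "(x = a \<and> b \<in> set l) \<or> bef l a b"
  proof (cases i)
    case 0
    then have "x = a" using ij by simp
    moreover obtain j' where "j = Suc j'" using ij 0 by (cases j) auto
    then have "b \<in> set l" using ij by auto
    ultimately show ?thesis by simp
  next
    case (Suc i')
    then obtain j' where j: "j = Suc j'" using ij by (cases j) auto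
    then have "bef l a b" unfolding bef_def using ij Suc
      by (intro exI[of _ i'] exI[of _ j']) auto
    then show ?thesis by simp
  qed
next
  assume "(x = a \<and> b \<in> set l) \<or> bef l a b"
  then show "bef (x # l) a b"
  proof
    assume h: "x = a \<and> b \<in> set l"
    then obtain j where "j < length l" "l ! j = b" by (auto simp: in_set_conv_nth)
    then show ?thesis unfolding bef_def using h by (intro exI[of _ 0] exI[of _ "Suc j"]) auto
  next
    assume "bef l a b"
    then obtain i j where "i < j" "j < length l" "l ! i = a" "l ! j = b" unfolding bef_def by blast
    then show ?thesis unfolding bef_def by (intro exI[of _ "Suc i"] exI[of _ "Suc j"]) auto
  qed
qed

lemma bef_set: "bef l a b \<Longrightarrow> a \<in> set l \<and> b \<in> set l"
  by (induction l) (auto simp: bef_Cons)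

lemma bef_append: "bef (l1 @ l2) a b \<longleftrightarrow> bef l1 a b \<or> bef l2 a b \<or> (a \<in> set l1 \<and> b \<in> set l2)"
  by (induction l1) (auto simp: bef_Cons)

lemma bef_asym: "distinct l \<Longrightarrow> bef l a b \<Longrightarrow> \<not> bef l b a"
  by (induction l) (auto simp: bef_Cons dest: bef_set)

lemma bef_irrefl: "distinct l \<Longrightarrow> \<not> bef l a a"
  using bef_asym by fastforce

lemma bef_trans: "distinct l \<Longrightarrow> bef l a b \<Longrightarrow> bef l b c \<Longrightarrow> bef l a c"
  by (induction l) (auto simp: bef_Cons dest: bef_set)

lemma bef_total: "a \<in> set l \<Longrightarrow> b \<in> set l \<Longrightarrow> a \<noteq> b \<Longrightarrow> bef l a b \<or> bef l b a"
  by (induction l) (auto simp: bef_Cons)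

lemma bef_filter: "bef (filter P l) a b \<Longrightarrow> bef l a b"
  by (induction l) (auto simp: bef_Cons split: if_splits)

lemma bef_filter2: "P a \<Longrightarrow> P b \<Longrightarrow> bef l a b \<Longrightarrow> bef (filter P l) a b"
  by (induction l) (auto simp: bef_Cons)

lemma bef_nth: "distinct l \<Longrightarrow> i < length l \<Longrightarrow> j < length l \<Longrightarrow> bef l (l ! i) (l ! j) \<longleftrightarrow> i < j"
proof
  assume d: "distinct l" "i < length l" "j < length l"
  assume "bef l (l ! i) (l ! j)"
  then obtain i' j' where "i' < j'" "j' < length l" "l ! i' = l ! i" "l ! j' = l ! j" unfolding bef_def by blast
  then show "i < j" using d nth_eq_iff_index_eq by (metis order.strict_trans)
next
  assume "i < j" "j < length l"
  then show "bef l (l ! i) (l ! j)" unfolding bef_def by blast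
qed

lemma bef_rev: "bef (rev l) a b \<longleftrightarrow> bef l b a"
  by (induction l) (auto simp: bef_Cons bef_append)

lemma bef_map: "inj_on f (set l) \<Longrightarrow> a \<in> set l \<Longrightarrow> b \<in> set l \<Longrightarrow> bef (map f l) (f a) (f b) \<longleftrightarrow> bef l a b"
proof (induction l)
  case Nil then show ?case by simp
next
  case (Cons x l)
  have i: "inj_on f (set l)" using Cons.prems(1) by simp
  have fa: "f x = f a \<longleftrightarrow> x = a" "f x = f b \<longleftrightarrow> x = b"
    using Cons.prems unfolding inj_on_def by auto
  have fb: "f b \<in> f ` set l \<longleftrightarrow> b \<in> set l"
    using Cons.prems unfolding inj_on_def by auto
  show ?case
  proof (cases "a \<in> set l \<and> b \<in> set l")
    case True
    then show ?thesis using Cons.IH[OF i] fa fb by (simp add: bef_Cons)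
  next
    case False
    then have "\<not> bef l a b" using bef_set by metis
    moreover have "\<not> bef (map f l) (f a) (f b)"
    proof
      assume "bef (map f l) (f a) (f b)"
      then have "f a \<in> f ` set l" "f b \<in> f ` set l" using bef_set by fastforce+
      then have "a \<in> set l" "b \<in> set l" using Cons.prems unfolding inj_on_def by auto
      then show False using False by simp
    qed
    ultimately show ?thesis using fa fb by (simp add: bef_Cons)
  qed
qed

definition resp :: "('a \<times> 'a) set \<Rightarrow> 'a list \<Rightarrow> bool" where
  "resp r l = (\<forall>a b. (a, b) \<in> r \<longrightarrow> \<not> bef l b a)"

lemma linext_iff: "is_linext S r l \<longleftrightarrow> distinct l \<and> set l = S \<and> resp r l"
proof -
  have "(\<forall>i<length l. \<forall>j<length l. (l ! i, l ! j) \<in> r \<longrightarrow> i \<le> j) \<longleftrightarrow> resp r l"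
  proof
    assume h: "\<forall>i<length l. \<forall>j<length l. (l ! i, l ! j) \<in> r \<longrightarrow> i \<le> j"
    show "resp r l" unfolding resp_def bef_def
    proof (intro allI impI notI)
      fix a b assume "(a, b) \<in> r" "\<exists>i j. i < j \<and> j < length l \<and> l ! i = b \<and> l ! j = a"
      then obtain i j where ij: "i < j" "j < length l" "l ! i = b" "l ! j = a" "(a, b) \<in> r" by blast
      then have "(l ! j, l ! i) \<in> r" by simp
      moreover have "i < length l" using ij by simp
      ultimately have "j \<le> i" using h ij(2) by blast
      then show False using ij by simp
    qed
  next
    assume h: "resp r l"
    show "\<forall>i<length l. \<forall>j<length l. (l ! i, l ! j) \<in> r \<longrightarrow> i \<le> j"
    proof (intro allI impI)
      fix i j assume "i < length l" "j < length l" "(l ! i, l ! j) \<in> r"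
      then show "i \<le> j"
      proof (rule_tac ccontr)
        assume a: "i < length l" "j < length l" "(l ! i, l ! j) \<in> r" "\<not> i \<le> j"
        then have "j < i" by simp
        then have "bef l (l ! j) (l ! i)" unfolding bef_def using a by blast
        then show False using h a(3) unfolding resp_def by blast
      qed
    qed
  qed
  then show ?thesis unfolding is_linext_def by blast
qed

lemma bef_eq_list:
  assumes "distinct ys" "distinct zs" "set ys = set zs" "\<forall>a b. bef zs a b \<longrightarrow> bef ys a b"
  shows "ys = zs"
  using assms
proof (induction zs arbitrary: ys)
  case Nil then show ?case by simp
next
  case (Cons z zs)
  obtain y ys' where ys: "ys = y # ys'" using Cons.prems(3) by (cases ys) auto
  have "y = z"
  proof (rule ccontr)
    assume "y \<noteq> z"
    then have "y \<in> set zs" using Cons.prems(3) ys by auto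
    then have "bef (z # zs) z y" by (simp add: bef_Cons)
    then have "bef (y # ys') z y" using Cons.prems(4) ys by blast
    then have "y \<in> set ys'" using \<open>y \<noteq> z\<close> by (auto simp: bef_Cons dest: bef_set)
    then show False using Cons.prems(1) ys by simp
  qed
  have "ys' = zs"
  proof (rule Cons.IH)
    show "distinct ys'" "distinct zs" using Cons.prems ys by auto
    show "set ys' = set zs" using Cons.prems ys \<open>y = z\<close> by auto
    show "\<forall>a b. bef zs a b \<longrightarrow> bef ys' a b"
    proof (intro allI impI)
      fix a b assume "bef zs a b"
      then have "bef (z # zs) a b" "a \<in> set zs" by (auto simp: bef_Cons dest: bef_set)
      then have "bef (z # ys') a b" using Cons.prems(4) ys \<open>y = z\<close> by blast
      moreover have "a \<noteq> z" using \<open>a \<in> set zs\<close> Cons.prems(2) by auto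
      ultimately show "bef ys' a b" by (simp add: bef_Cons)
    qed
  qed
  then show ?case using ys \<open>y = z\<close> by simp
qed

lemma chain_list_eq:
  assumes "distinct ys" "distinct zs" "set ys = set zs"
    "\<forall>i. Suc i < length zs \<longrightarrow> bef ys (zs ! i) (zs ! Suc i)"
  shows "ys = zs"
proof (rule bef_eq_list[OF assms(1-3)], intro allI impI)
  fix a b assume "bef zs a b"
  then obtain i j where ij: "i < j" "j < length zs" "zs ! i = a" "zs ! j = b" unfolding bef_def by blast
  have "\<forall>j. i < j \<longrightarrow> j < length zs \<longrightarrow> bef ys (zs ! i) (zs ! j)"
  proof (intro allI impI)
    fix j assume "i < j" "j < length zs"
    then show "bef ys (zs ! i) (zs ! j)"
    proof (induction j)
      case 0 then show ?case by simp
    next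
      case (Suc j)
      show ?case
      proof (cases "i = j")
        case True
        then show ?thesis using assms(4) Suc.prems by simp
      next
        case False
        then have "bef ys (zs ! i) (zs ! j)" using Suc by simp
        moreover have "bef ys (zs ! j) (zs ! Suc j)" using assms(4) Suc.prems by simp
        ultimately show ?thesis using bef_trans[OF assms(1)] by blast
      qed
    qed
  qed
  then show "bef ys a b" using ij by blast
qed

lemma exists_sorted:
  assumes "finite A"
  shows "\<exists>l. distinct l \<and> set l = A \<and> sorted (map f l)"
proof -
  obtain xs where "distinct xs" "set xs = A" using finite_distinct_list[OF assms] by blast
  then show ?thesis
    by (intro exI[of _ "sort_key f xs"]) (auto simp: distinct_sort sorted_sort_key)
qed

lemma sorted_bef:
  fixes f :: "'a \<Rightarrow> nat"
  assumes "sorted (map f l)" "a \<in> set l" "b \<in> set l" "f a < f b"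
  shows "bef l a b"
proof -
  have "a \<noteq> b" using assms by auto
  have "\<not> bef l b a"
  proof
    assume "bef l b a"
    then obtain i j where "i < j" "j < length l" "l ! i = b" "l ! j = a" unfolding bef_def by blast
    then have "f b \<le> f a" using sorted_nth_mono[OF assms(1), of i j] by simp
    then show False using assms by simp
  qed
  then show ?thesis using bef_total[OF assms(2,3) \<open>a \<noteq> b\<close>] by blast
qed


definition stp :: "('a \<times> 'a) set \<Rightarrow> ('a list \<times> 'a list) set" where
  "stp r = {(xs @ [a, b] @ ys, xs @ [b, a] @ ys) | xs a b ys. (a, b) \<notin> r \<and> (b, a) \<notin> r \<and>
     distinct (xs @ [a, b] @ ys) \<and> resp r (xs @ [a, b] @ ys) \<and> resp r (xs @ [b, a] @ ys)}"

lemma resp_Cons: "resp r (z # l) \<longleftrightarrow> resp r l \<and> (\<forall>b\<in>set l. (b, z) \<notin> r)"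
  unfolding resp_def by (auto simp: bef_Cons)

lemma stp_set: "(l1, l2) \<in> stp r \<Longrightarrow> set l2 = set l1 \<and> distinct l2 \<and> distinct l1"
  unfolding stp_def by auto

lemma stp_rtrancl_set: "(l1, l2) \<in> (stp r)\<^sup>* \<Longrightarrow> set l2 = set l1"
  by (induction rule: rtrancl_induct) (auto dest: stp_set)

lemma stp_Cons:
  assumes "(l1, l2) \<in> (stp r)\<^sup>*" "z \<notin> set l1" "\<forall>b\<in>set l1. (b, z) \<notin> r"
  shows "(z # l1, z # l2) \<in> (stp r)\<^sup>*"
  using assms(1)
proof (induction rule: rtrancl_induct)
  case base then show ?case by simp
next
  case (step l2 l3)
  have s2: "set l2 = set l1" using stp_rtrancl_set[OF step.hyps(1)] .
  obtain xs a b ys where e: "l2 = xs @ [a, b] @ ys" "l3 = xs @ [b, a] @ ys" "(a, b) \<notin> r" "(b, a) \<notin> r"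
    "distinct (xs @ [a, b] @ ys)" "resp r (xs @ [a, b] @ ys)" "resp r (xs @ [b, a] @ ys)"
    using step.hyps(2) unfolding stp_def by blast
  have "(z # l2, z # l3) \<in> stp r"
    unfolding stp_def mem_Collect_eq
    apply (rule exI[of _ "z # xs"], rule exI[of _ a], rule exI[of _ b], rule exI[of _ ys])
    using e s2 assms(2,3) by (auto simp: resp_Cons)
  then show ?case using step.IH by simp
qed

lemma move_front:
  assumes "distinct (as @ z # bs)" "resp r (as @ z # bs)" "\<forall>a\<in>set as. (a, z) \<notin> r \<and> (z, a) \<notin> r"
  shows "(as @ z # bs, z # as @ bs) \<in> (stp r)\<^sup>*"
  using assms
proof (induction as arbitrary: bs rule: rev_induct)
  case Nil then show ?case by simp
next
  case (snoc a as)
  have az: "(a, z) \<notin> r" "(z, a) \<notin> r" using snoc.prems(3) by auto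
  have l: "as @ [a] @ z # bs = as @ [a, z] @ bs" by simp
  have r2: "resp r (as @ [z, a] @ bs)"
  proof -
    have "\<not> bef (as @ [z, a] @ bs) d c" if "(c, d) \<in> r" for c d
    proof
      assume b: "bef (as @ [z, a] @ bs) d c"
      have "\<not> bef (as @ [a, z] @ bs) d c" using snoc.prems(2) that unfolding resp_def by simp
      then show False using b az that by (auto simp: bef_append bef_Cons)
    qed
    then show ?thesis unfolding resp_def by blast
  qed
  have st: "(as @ [a, z] @ bs, as @ [z, a] @ bs) \<in> stp r"
    unfolding stp_def mem_Collect_eq
    apply (rule exI[of _ as], rule exI[of _ a], rule exI[of _ z], rule exI[of _ bs])
    using az snoc.prems r2 by auto
  have "(as @ z # (a # bs), z # as @ (a # bs)) \<in> (stp r)\<^sup>*"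
  proof (rule snoc.IH)
    show "distinct (as @ z # a # bs)" using snoc.prems(1) by auto
    show "resp r (as @ z # a # bs)" using r2 by simp
    show "\<forall>a\<in>set as. (a, z) \<notin> r \<and> (z, a) \<notin> r" using snoc.prems(3) by simp
  qed
  then show ?case using st l by simp
qed

lemma swap_conn:
  assumes "distinct l1" "distinct l2" "set l1 = set l2" "resp r l1" "resp r l2"
  shows "(l1, l2) \<in> (stp r)\<^sup>*"
  using assms
proof (induction l2 arbitrary: l1)
  case Nil then show ?case by simp
next
  case (Cons z l2)
  have "z \<in> set l1" using Cons.prems(3) by simp
  then obtain as bs where l1: "l1 = as @ z # bs" by (meson split_list)
  have c: "\<forall>a\<in>set as. (a, z) \<notin> r \<and> (z, a) \<notin> r"
  proof
    fix a assume a: "a \<in> set as"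
    have az: "a \<noteq> z" using a Cons.prems(1) l1 by auto
    have "bef l1 a z" using a l1 by (simp add: bef_append bef_Cons)
    then have "(z, a) \<notin> r" using Cons.prems(4) unfolding resp_def by blast
    moreover have "a \<in> set l2" using a az Cons.prems(3) l1 by auto
    then have "bef (z # l2) z a" by (simp add: bef_Cons)
    then have "(a, z) \<notin> r" using Cons.prems(5) unfolding resp_def by blast
    ultimately show "(a, z) \<notin> r \<and> (z, a) \<notin> r" by simp
  qed
  have m: "(l1, z # as @ bs) \<in> (stp r)\<^sup>*" using move_front[of as z bs r] Cons.prems l1 c by simp
  have rz: "resp r (z # as @ bs)" using stp_rtrancl_set[OF m] m
  proof -
    have "resp r (as @ bs)" using Cons.prems(4) l1 unfolding resp_def by (auto simp: bef_append bef_Cons)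
    moreover have "\<forall>b\<in>set (as @ bs). (b, z) \<notin> r"
    proof
      fix b assume "b \<in> set (as @ bs)"
      then have "b \<in> set l2" "b \<noteq> z" using Cons.prems(1,3) l1 by auto
      then have "bef (z # l2) z b" by (simp add: bef_Cons)
      then show "(b, z) \<notin> r" using Cons.prems(5) unfolding resp_def by blast
    qed
    ultimately show ?thesis by (simp add: resp_Cons)
  qed
  have ih: "(as @ bs, l2) \<in> (stp r)\<^sup>*"
  proof (rule Cons.IH)
    show "distinct (as @ bs)" "distinct l2" using Cons.prems l1 by auto
    show "set (as @ bs) = set l2" using Cons.prems(1,2,3) l1 by auto
    show "resp r (as @ bs)" using rz by (simp add: resp_Cons)
    show "resp r l2" using Cons.prems(5) by (simp add: resp_Cons)
  qed
  have "(z # as @ bs, z # l2) \<in> (stp r)\<^sup>*"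
    using stp_Cons[OF ih] Cons.prems(1) l1 rz by (auto simp: resp_Cons)
  then show ?case using m by simp
qed


lemma adj_nth:
  assumes "finite X" "Suc i < card X"
  shows "adj X (sorted_list_of_set X ! i) (sorted_list_of_set X ! Suc i)"
  using rk_adj[OF assms(1) nth_in[OF assms(1)] nth_in[OF assms(1)]] rk_nth[OF assms(1)] assms by simp

lemma packet_set_anti: "finite X \<Longrightarrow> set (antilexl X) = packet X"
  unfolding antilexl_eq packet_eq by simp

lemma packet_set_lex: "finite X \<Longrightarrow> set (lexl X) = packet X"
  unfolding lexl_eq packet_eq by simp

lemma distinct_anti: "finite X \<Longrightarrow> distinct (antilexl X)"
  unfolding antilexl_eq by (simp add: distinct_map inj_rem)

lemma distinct_lex: "finite X \<Longrightarrow> distinct (lexl X)"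
  unfolding lexl_eq by (simp add: distinct_map inj_rem)

lemma bef_anti:
  assumes "finite X" "x \<in> X" "y \<in> X" "x < y"
  shows "bef (antilexl X) (X - {x}) (X - {y})"
proof -
  let ?xs = "sorted_list_of_set X"
  have "bef ?xs x y"
  proof -
    have "?xs ! rk X x = x" "?xs ! rk X y = y" using nth_rk assms by auto
    moreover have "rk X x < rk X y" "rk X y < length ?xs"
      using rk_mono[OF assms] rk_less_card[OF assms(1,3)] assms(1) by auto
    ultimately show ?thesis unfolding bef_def by metis
  qed
  moreover have "inj_on (\<lambda>x. X - {x}) (set ?xs)" using inj_rem[of X] assms(1) by simp
  ultimately show ?thesis unfolding antilexl_eq[OF assms(1)] using bef_map[of "\<lambda>x. X - {x}" ?xs x y] assms by simp
qed

lemma bef_lex: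
  assumes "finite X" "x \<in> X" "y \<in> X" "x < y"
  shows "bef (lexl X) (X - {y}) (X - {x})"
  using bef_anti[OF assms] unfolding lexl_rev by (simp add: bef_rev)

lemma lex_ne_anti:
  assumes "finite X" "2 \<le> card X"
  shows "lexl X \<noteq> antilexl X"
proof -
  obtain x y where "x \<in> X" "y \<in> X" "x < y"
  proof -
    obtain x y where "x \<in> X" "y \<in> X" "x \<noteq> y" using assms
      by (metis card_le_Suc0_iff_eq not_less_eq_eq numeral_2_eq_2)
    then show ?thesis using that by (metis nat_neq_iff)
  qed
  then have "bef (antilexl X) (X - {x}) (X - {y})" "bef (lexl X) (X - {y}) (X - {x})"
    using bef_anti bef_lex assms by auto
  then show ?thesis using bef_asym[OF distinct_anti[OF assms(1)]] by metis
qed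

lemma rank_trancl:
  fixes f :: "'a \<Rightarrow> nat"
  assumes "\<forall>U V. (U, V) \<in> G \<longrightarrow> f U < f V" "(a, b) \<in> G\<^sup>+"
  shows "f a < f b"
  using assms(2) by (induction rule: trancl_induct) (use assms(1) in fastforce)+

lemma rank_rtrancl:
  fixes f :: "'a \<Rightarrow> nat"
  assumes "\<forall>U V. (U, V) \<in> G \<longrightarrow> f U < f V" "(a, b) \<in> G\<^sup>*"
  shows "a = b \<or> f a < f b"
  using assms rank_trancl by (metis rtranclD)

lemma bef_rtrancl:
  assumes "distinct l" "\<forall>U V. (U, V) \<in> G \<longrightarrow> bef l U V" "(a, b) \<in> G\<^sup>*"
  shows "a = b \<or> bef l a b"
  using assms(3)
proof (induction rule: rtrancl_induct)
  case base then show ?case by simp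
next
  case (step y z)
  then show ?case using assms(1,2) bef_trans by metis
qed

locale ctx =
  fixes n k :: nat and w :: "nat \<Rightarrow> nat"
  assumes perm: "w permutes {1..n}" and k1: "1 \<le> k"
begin

abbreviation "SS \<equiv> {1..n}"
abbreviation "pp \<equiv> inv w"

lemma injp: "inj_on pp SS"
  using inj_on_subset[OF permutes_inj[OF permutes_inv[OF perm]] subset_UNIV] .

lemma finSS: "finite SS" by simp

lemma Inv_fin: "X \<in> Inv n w m \<Longrightarrow> finite X"
  unfolding Inv_eq using IG_fin[OF finSS] by blast

lemma Inv_card: "X \<in> Inv n w m \<Longrightarrow> card X = m"
  unfolding Inv_eq IG_def by blast

lemma finI: "finite (Inv n w m)"
  unfolding Inv_eq using IG_finite_set[OF finSS] .

lemma packet_sub: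
  assumes "X \<in> Inv n w (Suc m)"
  shows "packet X \<subseteq> Inv n w m"
proof
  fix Y assume "Y \<in> packet X"
  then obtain x where x: "x \<in> X" "Y = X - {x}" unfolding packet_eq by blast
  have "finite X" using Inv_fin assms by blast
  then show "Y \<in> Inv n w m" using assms x invd_subset unfolding Inv_eq IG_def by fastforce
qed

lemma rem_in: "X \<in> Inv n w (Suc m) \<Longrightarrow> x \<in> X \<Longrightarrow> X - {x} \<in> Inv n w m"
  using packet_sub unfolding packet_eq by blast

lemma Aw_parts:
  assumes "\<rho> \<in> Aw n w k"
  shows "distinct \<rho>" "set \<rho> = Inv n w k" "is_linext (Inv n w k) (Pw n w k) \<rho>"
    "\<And>X. X \<in> Inv n w (k + 1) \<Longrightarrow> filter (\<lambda>Y. Y \<in> packet X) \<rho> \<in> {lexl X, antilexl X}"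
  using assms unfolding Aw_def is_linext_def by auto

lemma F3:
  assumes "\<rho> \<in> Aw n w k" "X \<in> Inv n w (Suc k)" "x \<in> X" "y \<in> X" "x < y"
  shows "bef \<rho> (X - {x}) (X - {y}) \<longleftrightarrow> X \<in> Rev n w k \<rho>"
proof -
  have fX: "finite X" using Inv_fin assms(2) by blast
  have d: "distinct \<rho>" using Aw_parts[OF assms(1)] by simp
  have f: "filter (\<lambda>Y. Y \<in> packet X) \<rho> \<in> {lexl X, antilexl X}" using Aw_parts(4)[OF assms(1)] assms(2) by simp
  have ne: "X - {x} \<noteq> X - {y}" using assms by auto
  have inx: "X - {x} \<in> set \<rho>" "X - {y} \<in> set \<rho>"
    using rem_in[OF assms(2)] assms Aw_parts(2)[OF assms(1)] by auto
  show ?thesis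
  proof (cases "X \<in> Rev n w k \<rho>")
    case True
    then have "filter (\<lambda>Y. Y \<in> packet X) \<rho> = antilexl X" unfolding Rev_def by simp
    then have "bef \<rho> (X - {x}) (X - {y})" using bef_anti[OF fX assms(3-5)] bef_filter by metis
    then show ?thesis using True by simp
  next
    case False
    then have "filter (\<lambda>Y. Y \<in> packet X) \<rho> = lexl X" using f assms(2) unfolding Rev_def by auto
    then have "bef \<rho> (X - {y}) (X - {x})" using bef_lex[OF fX assms(3-5)] bef_filter by metis
    then show ?thesis using False bef_asym[OF d] by metis
  qed
qed

lemma F2:
  assumes "\<rho> \<in> Aw n w k" "(A, B) \<in> qE SS pp k"
  shows "bef \<rho> A B"
proof -
  have AB: "A \<in> Inv n w k" "B \<in> Inv n w k" using qE_IG[OF assms(2)] unfolding Inv_eq by auto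
  have ne: "A \<noteq> B"
  proof -
    obtain Z u v where "qpair pp Z u v"
      "(A, B) = (Z - {u}, Z - {v}) \<or> (A, B) = (Z - {v}, Z - {u})"
      using assms(2) unfolding qE_def by (auto split: if_splits)
    then show ?thesis unfolding qpair_def by auto
  qed
  have "(A, B) \<in> Pw n w k" unfolding Pw_eq using assms(2) AB unfolding Inv_eq by auto
  then have "\<not> bef \<rho> B A" using Aw_parts(3)[OF assms(1)] unfolding linext_iff resp_def by blast
  then show ?thesis using bef_total[of A \<rho> B] AB ne Aw_parts(2)[OF assms(1)] by blast
qed


lemma GE_ne: "(a, b) \<in> GE S p m R \<Longrightarrow> a \<noteq> b"
  by (erule GE_cases) (auto simp: qpair_def adj_def)

lemma leR_eq: "R \<subseteq> Inv n w (Suc k) \<Longrightarrow> leR n w k R = (GE SS pp k R)\<^sup>* \<inter> (Inv n w k \<times> Inv n w k)"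
  unfolding leR_def using GR_eq[of R n w k] by simp

lemma GE_I:
  assumes "R \<subseteq> Inv n w (Suc k)" "(a, b) \<in> GE SS pp k R"
  shows "a \<in> Inv n w k" "b \<in> Inv n w k"
  using GE_IG[of R SS pp k a b] assms unfolding Inv_eq by auto

lemma edge_bef:
  assumes "R \<subseteq> Inv n w (Suc k)" "is_linext (Inv n w k) (leR n w k R) \<rho>" "(a, b) \<in> GE SS pp k R"
  shows "bef \<rho> a b"
proof -
  have ab: "a \<in> Inv n w k" "b \<in> Inv n w k" using GE_I[OF assms(1,3)] by auto
  have "(a, b) \<in> leR n w k R" unfolding leR_eq[OF assms(1)] using assms(3) ab by auto
  then have "\<not> bef \<rho> b a" using assms(2) unfolding linext_iff resp_def by blast
  moreover have "a \<noteq> b" using GE_ne[OF assms(3)] .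
  ultimately show ?thesis using bef_total[of a \<rho> b] ab assms(2) unfolding linext_iff by blast
qed

lemma linext_filter:
  assumes "R \<subseteq> Inv n w (Suc k)" "is_linext (Inv n w k) (leR n w k R) \<rho>" "X \<in> Inv n w (Suc k)"
  shows "filter (\<lambda>Y. Y \<in> packet X) \<rho> = (if X \<in> R then antilexl X else lexl X)"
proof -
  have fX: "finite X" using Inv_fin assms(3) by blast
  have cX: "card X = Suc k" using Inv_card assms(3) by blast
  have d: "distinct \<rho>" and sr: "set \<rho> = Inv n w k" using assms(2) unfolding linext_iff by auto
  have pk: "packet X \<subseteq> Inv n w k" using packet_sub[OF assms(3)] .
  let ?xs = "sorted_list_of_set X"
  let ?f = "\<lambda>x. X - {x}"
  have lxs: "length ?xs = card X" using fX by simp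
  have XI: "X \<in> IG SS pp (Suc k)" using assms(3) unfolding Inv_eq .
  have inP: "X - {z} \<in> packet X" if "z \<in> X" for z using that unfolding packet_eq by blast
  have nthX: "?xs ! i \<in> X" if "i < card X" for i using nth_in[OF fX that] .
  show ?thesis
  proof (cases "X \<in> R")
    case True
    have "filter (\<lambda>Y. Y \<in> packet X) \<rho> = antilexl X"
    proof (rule chain_list_eq)
      show "distinct (filter (\<lambda>Y. Y \<in> packet X) \<rho>)" using d by simp
      show "distinct (antilexl X)" using distinct_anti[OF fX] .
      show "set (filter (\<lambda>Y. Y \<in> packet X) \<rho>) = set (antilexl X)"
        using sr pk packet_set_anti[OF fX] by auto
      show "\<forall>i. Suc i < length (antilexl X) \<longrightarrow> bef (filter (\<lambda>Y. Y \<in> packet X) \<rho>) (antilexl X ! i) (antilexl X ! Suc i)"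
      proof (intro allI impI)
        fix i assume i: "Suc i < length (antilexl X)"
        then have i': "Suc i < card X" unfolding antilexl_eq[OF fX] using lxs by simp
        have e: "antilexl X ! i = X - {?xs ! i}" "antilexl X ! Suc i = X - {?xs ! Suc i}"
          unfolding antilexl_eq[OF fX] using i' lxs by auto
        have "(X - {?xs ! i}, X - {?xs ! Suc i}) \<in> GE SS pp k R"
          using GE_rI[OF True adj_nth[OF fX i']] .
        then have "bef \<rho> (X - {?xs ! i}) (X - {?xs ! Suc i})" using edge_bef[OF assms(1,2)] by blast
        then show "bef (filter (\<lambda>Y. Y \<in> packet X) \<rho>) (antilexl X ! i) (antilexl X ! Suc i)"
          unfolding e using bef_filter2[of "\<lambda>Y. Y \<in> packet X"] inP nthX i' by auto
      qed
    qed
    then show ?thesis using True by simp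
  next
    case False
    have "filter (\<lambda>Y. Y \<in> packet X) \<rho> = lexl X"
    proof (rule chain_list_eq)
      show "distinct (filter (\<lambda>Y. Y \<in> packet X) \<rho>)" using d by simp
      show "distinct (lexl X)" using distinct_lex[OF fX] .
      show "set (filter (\<lambda>Y. Y \<in> packet X) \<rho>) = set (lexl X)"
        using sr pk packet_set_lex[OF fX] by auto
      show "\<forall>i. Suc i < length (lexl X) \<longrightarrow> bef (filter (\<lambda>Y. Y \<in> packet X) \<rho>) (lexl X ! i) (lexl X ! Suc i)"
      proof (intro allI impI)
        fix i assume i: "Suc i < length (lexl X)"
        then have i': "Suc i < card X" unfolding lexl_eq[OF fX] using lxs by simp
        define j where "j = card X - Suc (Suc i)"
        have j: "Suc j < card X" "card X - Suc i = Suc j" "card X - Suc (Suc i) = j" using i' unfolding j_def by auto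
        have e: "lexl X ! i = X - {?xs ! Suc j}" "lexl X ! Suc i = X - {?xs ! j}"
          unfolding lexl_eq[OF fX] using i' lxs j by (auto simp: rev_nth)
        have "(X - {?xs ! Suc j}, X - {?xs ! j}) \<in> GE SS pp k R"
          using GE_nI[OF XI False adj_nth[OF fX j(1)]] .
        then have "bef \<rho> (X - {?xs ! Suc j}) (X - {?xs ! j})" using edge_bef[OF assms(1,2)] by blast
        then show "bef (filter (\<lambda>Y. Y \<in> packet X) \<rho>) (lexl X ! i) (lexl X ! Suc i)"
          unfolding e using bef_filter2[of "\<lambda>Y. Y \<in> packet X"] inP nthX j by auto
      qed
    qed
    then show ?thesis using False by simp
  qed
qed

lemma linext_Aw:
  assumes "R \<subseteq> Inv n w (Suc k)" "is_linext (Inv n w k) (leR n w k R) \<rho>"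
  shows "\<rho> \<in> Aw n w k" "Rev n w k \<rho> = R"
proof -
  have d: "distinct \<rho>" and sr: "set \<rho> = Inv n w k" and rs: "resp (leR n w k R) \<rho>"
    using assms(2) unfolding linext_iff by auto
  have "Pw n w k \<subseteq> leR n w k R"
  proof -
    have "qE SS pp k \<subseteq> GE SS pp k R" unfolding GE_def by blast
    then have "(qE SS pp k)\<^sup>* \<subseteq> (GE SS pp k R)\<^sup>*" by (rule rtrancl_mono)
    then show ?thesis unfolding Pw_eq leR_eq[OF assms(1)] Inv_eq by blast
  qed
  then have "resp (Pw n w k) \<rho>" using rs unfolding resp_def by blast
  then have l: "is_linext (Inv n w k) (Pw n w k) \<rho>" using d sr unfolding linext_iff by simp
  have f: "filter (\<lambda>Y. Y \<in> packet X) \<rho> \<in> {lexl X, antilexl X}" if "X \<in> Inv n w (k + 1)" for X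
    using linext_filter[OF assms] that by simp
  show "\<rho> \<in> Aw n w k" unfolding Aw_def using l f by blast
  show "Rev n w k \<rho> = R"
  proof (intro set_eqI iffI)
    fix X assume "X \<in> Rev n w k \<rho>"
    then have X: "X \<in> Inv n w (Suc k)" "filter (\<lambda>Y. Y \<in> packet X) \<rho> = antilexl X" unfolding Rev_def by auto
    have "2 \<le> card X" using Inv_card[OF X(1)] k1 by simp
    then have "lexl X \<noteq> antilexl X" using lex_ne_anti Inv_fin X(1) by blast
    then show "X \<in> R" using linext_filter[OF assms X(1)] X(2) by (auto split: if_splits)
  next
    fix X assume "X \<in> R"
    then show "X \<in> Rev n w k \<rho>" using linext_filter[OF assms] assms(1) unfolding Rev_def by auto
  qed
qed

lemma Aw_linext:
  assumes "\<rho> \<in> Aw n w k"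
  shows "is_linext (Inv n w k) (leR n w k (Rev n w k \<rho>)) \<rho>"
proof -
  let ?R = "Rev n w k \<rho>"
  have RI: "?R \<subseteq> Inv n w (Suc k)" unfolding Rev_def by auto
  have d: "distinct \<rho>" and sr: "set \<rho> = Inv n w k" using Aw_parts[OF assms] by auto
  have eb: "\<forall>U V. (U, V) \<in> GE SS pp k ?R \<longrightarrow> bef \<rho> U V"
  proof (intro allI impI)
    fix U V assume e: "(U, V) \<in> GE SS pp k ?R"
    show "bef \<rho> U V" using e
    proof (cases rule: GE_cases)
      case (q Z u v)
      then have "(U, V) \<in> qE SS pp k" unfolding qE_def by auto
      then show ?thesis using F2[OF assms] by blast
    next
      case (r X x y)
      then have "X \<in> Inv n w (Suc k)" using RI by blast
      then show ?thesis using F3[OF assms] r unfolding adj_def by auto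
    next
      case (n X x y)
      then have X: "X \<in> Inv n w (Suc k)" unfolding Inv_eq by simp
      have xy: "x \<in> X" "y \<in> X" "x < y" using n unfolding adj_def by auto
      have "\<not> bef \<rho> (X - {x}) (X - {y})" using F3[OF assms X xy] n(2) by simp
      moreover have "X - {x} \<in> set \<rho>" "X - {y} \<in> set \<rho>" "X - {x} \<noteq> X - {y}"
        using rem_in[OF X] xy sr by auto
      ultimately show ?thesis using bef_total n by metis
    qed
  qed
  have "\<not> bef \<rho> b a" if "(a, b) \<in> leR n w k ?R" for a b
  proof -
    have "(a, b) \<in> (GE SS pp k ?R)\<^sup>*" using that unfolding leR_eq[OF RI] by auto
    then have "a = b \<or> bef \<rho> a b" using bef_rtrancl[OF d eb] by blast
    then show ?thesis using bef_irrefl[OF d] bef_asym[OF d] by metis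
  qed
  then show ?thesis unfolding linext_iff resp_def using d sr by blast
qed

lemma linext_exists:
  assumes "cons1 SS pp (Suc k) R"
  shows "\<exists>\<rho>. is_linext (Inv n w k) (leR n w k R) \<rho>"
proof -
  have RI: "R \<subseteq> Inv n w (Suc k)" using assms unfolding cons1_def Inv_eq by simp
  obtain f :: "nat set \<Rightarrow> nat" where f: "\<forall>U V. (U, V) \<in> GE SS pp k R \<longrightarrow> f U < f V"
    using acyc[OF finSS injp assms] by blast
  obtain l where l: "distinct l" "set l = Inv n w k" "sorted (map f l)"
    using exists_sorted[OF finI] by blast
  have "\<not> bef l b a" if "(a, b) \<in> leR n w k R" for a b
  proof -
    have ab: "(a, b) \<in> (GE SS pp k R)\<^sup>*" "a \<in> set l" "b \<in> set l" using that l unfolding leR_eq[OF RI] by auto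
    then have "a = b \<or> f a < f b" using rank_rtrancl[OF f] by blast
    then show ?thesis
    proof
      assume "a = b" then show ?thesis using bef_irrefl[OF l(1)] by simp
    next
      assume "f a < f b"
      then have "bef l a b" using sorted_bef[OF l(3) ab(2,3)] by simp
      then show ?thesis using bef_asym[OF l(1)] by blast
    qed
  qed
  then show ?thesis unfolding linext_iff resp_def using l by blast
qed


lemma rk_remove_gt:
  assumes "finite Z" "c \<in> Z" "u < c"
  shows "rk (Z - {c}) u = rk Z u"
proof -
  have "{z\<in>Z - {c}. z < u} = {z\<in>Z. z < u}" using assms by auto
  then show ?thesis unfolding rk_def by simp
qed

lemma rk_remove_lt:
  assumes "finite Z" "c \<in> Z" "c < u"
  shows "rk (Z - {c}) u = rk Z u - 1"
proof -
  have "{z\<in>Z - {c}. z < u} = {z\<in>Z. z < u} - {c}" using assms by auto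
  moreover have "c \<in> {z\<in>Z. z < u}" using assms by auto
  ultimately show ?thesis unfolding rk_def using assms(1) by simp
qed

lemma Rev_sub: "Rev n w k \<rho> \<subseteq> Inv n w (Suc k)"
  unfolding Rev_def by auto

lemma tri:
  assumes "\<rho> \<in> Aw n w k" "X \<in> Inv n w (Suc (Suc k))" "a \<in> X" "b \<in> X" "c \<in> X" "a < b" "b < c"
  shows "\<not> (X - {a} \<in> Rev n w k \<rho> \<and> X - {c} \<in> Rev n w k \<rho> \<and> X - {b} \<notin> Rev n w k \<rho>)"
        "\<not> (X - {a} \<notin> Rev n w k \<rho> \<and> X - {c} \<notin> Rev n w k \<rho> \<and> X - {b} \<in> Rev n w k \<rho>)"
proof -
  have d: "distinct \<rho>" and sr: "set \<rho> = Inv n w k" using Aw_parts[OF assms(1)] by auto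
  define A where "A = X - {a} - {b}"
  define B where "B = X - {a} - {c}"
  define C where "C = X - {b} - {c}"
  have Xa: "X - {a} \<in> Inv n w (Suc k)" "X - {b} \<in> Inv n w (Suc k)" "X - {c} \<in> Inv n w (Suc k)"
    using rem_in[OF assms(2)] assms by auto
  have e1: "bef \<rho> A B \<longleftrightarrow> X - {a} \<in> Rev n w k \<rho>"
    unfolding A_def B_def using F3[OF assms(1) Xa(1), of b c] assms by auto
  have e2: "bef \<rho> A C \<longleftrightarrow> X - {b} \<in> Rev n w k \<rho>"
  proof -
    have "A = X - {b} - {a}" unfolding A_def by auto
    then show ?thesis unfolding C_def using F3[OF assms(1) Xa(2), of a c] assms by auto
  qed
  have e3: "bef \<rho> B C \<longleftrightarrow> X - {c} \<in> Rev n w k \<rho>"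
  proof -
    have "B = X - {c} - {a}" "C = X - {c} - {b}" unfolding B_def C_def by auto
    then show ?thesis using F3[OF assms(1) Xa(3), of a b] assms by auto
  qed
  have inr: "A \<in> set \<rho>" "B \<in> set \<rho>" "C \<in> set \<rho>"
    unfolding A_def B_def C_def sr using rem_in Xa assms by auto
  have m: "c \<in> A" "c \<notin> B" "a \<in> C" "a \<notin> A" "b \<in> B" "b \<notin> C"
    unfolding A_def B_def C_def using assms by auto
  have ne: "A \<noteq> B" "A \<noteq> C" "B \<noteq> C" using m by blast+
  show "\<not> (X - {a} \<in> Rev n w k \<rho> \<and> X - {c} \<in> Rev n w k \<rho> \<and> X - {b} \<notin> Rev n w k \<rho>)"
  proof
    assume h: "X - {a} \<in> Rev n w k \<rho> \<and> X - {c} \<in> Rev n w k \<rho> \<and> X - {b} \<notin> Rev n w k \<rho>"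
    then have "bef \<rho> A B" "bef \<rho> B C" "\<not> bef \<rho> A C" using e1 e2 e3 by auto
    then show False using bef_trans[OF d] by blast
  qed
  show "\<not> (X - {a} \<notin> Rev n w k \<rho> \<and> X - {c} \<notin> Rev n w k \<rho> \<and> X - {b} \<in> Rev n w k \<rho>)"
  proof
    assume h: "X - {a} \<notin> Rev n w k \<rho> \<and> X - {c} \<notin> Rev n w k \<rho> \<and> X - {b} \<in> Rev n w k \<rho>"
    then have "\<not> bef \<rho> A B" "\<not> bef \<rho> B C" "bef \<rho> A C" using e1 e2 e3 by auto
    then have "bef \<rho> B A" "bef \<rho> C B" using bef_total inr ne by metis+
    then show False using bef_trans[OF d] \<open>bef \<rho> A C\<close> bef_asym[OF d] by blast
  qed
qed

lemma Rev_updown: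
  assumes "\<rho> \<in> Aw n w k" "X \<in> Inv n w (Suc (Suc k))"
  shows "updown X {x\<in>X. X - {x} \<in> Rev n w k \<rho>}"
proof (rule ccontr)
  let ?J = "{x\<in>X. X - {x} \<in> Rev n w k \<rho>}"
  assume "\<not> updown X ?J"
  then obtain x y x' y' where h: "x \<in> ?J" "y \<in> X" "x \<le> y" "y \<notin> ?J" "x' \<in> ?J" "y' \<in> X" "y' \<le> x'" "y' \<notin> ?J"
    unfolding updown_def by blast
  have xy: "x < y" "y' < x'" using h by (auto simp: le_less)
  have "x \<noteq> y'" using h by auto
  then show False
  proof (cases "y' < x")
    case True
    then show ?thesis using tri(2)[OF assms, of y' x y] h xy by auto
  next
    case False
    then have "x < y'" using \<open>x \<noteq> y'\<close> by simp
    then show ?thesis using tri(1)[OF assms, of x y' x'] h xy by auto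
  qed
qed

lemma Rev_low:
  assumes "\<rho> \<in> Aw n w k" "(A, B) \<in> qE SS pp (Suc k)" "B \<in> Rev n w k \<rho>"
  shows "A \<in> Rev n w k \<rho>"
proof -
  have d: "distinct \<rho>" and sr: "set \<rho> = Inv n w k" using Aw_parts[OF assms(1)] by auto
  obtain Z u v where Z: "Z \<subseteq> SS" "card Z = Suc (Suc k)" "qpair pp Z u v"
    "if odd (Suc k - Suc (rk Z u)) then (A, B) = (Z - {u}, Z - {v}) else (A, B) = (Z - {v}, Z - {u})"
    using assms(2) unfolding qE_def by (simp only: mem_Collect_eq case_prod_conv) blast
  have fZ: "finite Z" using Z(1) finite_subset by blast
  have uv: "u \<in> Z" "v \<in> Z" "u < v" "invd pp (Z - {u})" "invd pp (Z - {v})" using Z(3) unfolding qpair_def by auto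
  have aj: "adj Z u v" using qpair_adj[OF Z(3)] .
  have rkv: "rk Z v = Suc (rk Z u)" using rk_adj[OF fZ uv(1,2)] aj by simp
  have Zu: "Z - {u} \<in> Inv n w (Suc k)" "Z - {v} \<in> Inv n w (Suc k)"
    using Z fZ uv unfolding Inv_eq IG_def by auto
  obtain c where c: "c \<in> Z" "c \<noteq> u" "c \<noteq> v"
  proof -
    have "card {u, v} < card Z" using Z(2) k1 uv by simp
    then have "\<not> Z \<subseteq> {u, v}"
    proof (intro notI)
      assume "Z \<subseteq> {u, v}"
      then have "card Z \<le> card {u, v}" by (intro card_mono) auto
      then show False using \<open>card {u, v} < card Z\<close> by simp
    qed
    then show ?thesis using that by blast
  qed
  have cuv: "c < u \<or> v < c" using aj c unfolding adj_def by (meson nat_neq_iff)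
  define W where "W = Z - {c}"
  have pl: "pp u < pp v" using Z(3) unfolding qpair_def by simp
  have i1: "invd pp (Z - {c} - {u})" by (rule invd_subset[OF uv(4)]) auto
  have i2: "invd pp (Z - {c} - {v})" by (rule invd_subset[OF uv(5)]) auto
  have qW: "qpair pp W u v" unfolding qpair_def W_def using uv c pl i1 i2 by simp
  have cW: "card W = Suc k" unfolding W_def using Z(2) fZ c by simp
  have WS: "W \<subseteq> SS" unfolding W_def using Z(1) by auto
  define A0 where "A0 = Z - {u} - {v}"
  define B0 where "B0 = Z - {u} - {c}"
  define C0 where "C0 = Z - {v} - {c}"
  have Wu: "W - {u} = B0" "W - {v} = C0" unfolding W_def B0_def C0_def by auto
  have inr: "A0 \<in> set \<rho>" "B0 \<in> set \<rho>" "C0 \<in> set \<rho>"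
    unfolding A0_def B0_def C0_def sr using rem_in Zu uv c by auto
  have m: "c \<in> A0" "c \<notin> B0" "u \<in> C0" "u \<notin> A0" "v \<in> B0" "v \<notin> C0"
    unfolding A0_def B0_def C0_def using uv c by auto
  have ne: "A0 \<noteq> B0" "A0 \<noteq> C0" "B0 \<noteq> C0" using m by blast+
  have A0v: "A0 = Z - {v} - {u}" unfolding A0_def by auto
  let ?su = "Z - {u} \<in> Rev n w k \<rho>" and ?sv = "Z - {v} \<in> Rev n w k \<rho>"
  have qq: "if odd (k - Suc (rk W u)) then bef \<rho> B0 C0 else bef \<rho> C0 B0"
  proof (cases "odd (k - Suc (rk W u))")
    case True
    then have "(B0, C0) \<in> qE SS pp k" using qE_I[OF WS cW qW, of B0 C0] Wu by auto
    then show ?thesis using F2[OF assms(1)] True by simp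
  next
    case False
    then have "(C0, B0) \<in> qE SS pp k" using qE_I[OF WS cW qW, of C0 B0] Wu by auto
    then show ?thesis using F2[OF assms(1)] False by simp
  qed
  have tot: "bef \<rho> y x" if "x \<in> set \<rho>" "y \<in> set \<rho>" "x \<noteq> y" "\<not> bef \<rho> x y" for x y
    using bef_total[OF that(1,2,3)] that(4) by blast
  note tr = bef_trans[OF d] and asy = bef_asym[OF d]
  show ?thesis
  proof (cases "v < c")
    case True
    have rW: "rk W u = rk Z u" unfolding W_def using rk_remove_gt[OF fZ c(1)] True uv by simp
    have "rk Z v < rk Z c" using rk_mono[OF fZ uv(2) c(1) True] .
    moreover have "rk Z c < Suc (Suc k)" using rk_less_card[OF fZ c(1)] Z(2) by simp
    ultimately have rlt: "rk Z u < k" using rkv by simp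
    have e1: "bef \<rho> A0 B0 \<longleftrightarrow> ?su" unfolding A0_def B0_def using F3[OF assms(1) Zu(1), of v c] uv c True by auto
    have e2: "bef \<rho> A0 C0 \<longleftrightarrow> ?sv" unfolding A0v C0_def using F3[OF assms(1) Zu(2), of u c] uv c True by auto
    show ?thesis
    proof (cases "odd (Suc k - Suc (rk Z u))")
      case True
      then have AB: "A = Z - {u}" "B = Z - {v}" using Z(4) by auto
      have "bef \<rho> C0 B0" using qq rW True rlt by (auto split: if_splits)
      moreover have "?sv" using assms(3) AB by simp
      ultimately show ?thesis using AB e1 e2 tot[OF inr(1) inr(2) ne(1)] ne tr asy by blast
    next
      case False
      then have AB: "A = Z - {v}" "B = Z - {u}" using Z(4) by auto
      have "bef \<rho> B0 C0" using qq rW False rlt by (auto split: if_splits)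
      moreover have "?su" using assms(3) AB by simp
      ultimately show ?thesis using AB e1 e2 tot[OF inr(1) inr(3) ne(2)] ne tr asy by blast
    qed
  next
    case False
    then have cu: "c < u" using cuv by simp
    have rW: "rk W u = rk Z u - 1" unfolding W_def using rk_remove_lt[OF fZ c(1) cu] .
    have "rk Z c < rk Z u" using rk_mono[OF fZ c(1) uv(1) cu] .
    then have r1: "1 \<le> rk Z u" by simp
    have cv: "c < v" using cu uv by simp
    have e1: "bef \<rho> B0 A0 \<longleftrightarrow> ?su" unfolding A0_def B0_def using F3[OF assms(1) Zu(1), of c v] uv c cv by auto
    have e2: "bef \<rho> C0 A0 \<longleftrightarrow> ?sv" unfolding A0v C0_def using F3[OF assms(1) Zu(2), of c u] uv c cu by auto
    have par: "k - Suc (rk W u) = Suc k - Suc (rk Z u)" using rW r1 by simp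
    show ?thesis
    proof (cases "odd (Suc k - Suc (rk Z u))")
      case True
      then have AB: "A = Z - {u}" "B = Z - {v}" using Z(4) by auto
      have "bef \<rho> B0 C0" using qq par True by simp
      moreover have "?sv" using assms(3) AB by simp
      ultimately show ?thesis using AB e1 e2 tot[OF inr(2) inr(1) ne(1)[symmetric]] ne tr asy by blast
    next
      case False
      then have AB: "A = Z - {v}" "B = Z - {u}" using Z(4) by auto
      have "bef \<rho> C0 B0" using qq par False by simp
      moreover have "?su" using assms(3) AB by simp
      ultimately show ?thesis using AB e1 e2 tot[OF inr(3) inr(1) ne(2)[symmetric]] ne tr asy by blast
    qed
  qed
qed

lemma Rev_cons: "\<rho> \<in> Aw n w k \<Longrightarrow> cons1 SS pp (Suc k) (Rev n w k \<rho>)"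
  unfolding cons1_def
proof (intro conjI allI impI ballI)
  show "Rev n w k \<rho> \<subseteq> IG SS pp (Suc k)" using Rev_sub unfolding Inv_eq .
next
  fix A B assume "\<rho> \<in> Aw n w k" "(A, B) \<in> qE SS pp (Suc k)" "B \<in> Rev n w k \<rho>"
  then show "A \<in> Rev n w k \<rho>" using Rev_low by blast
next
  fix X assume "\<rho> \<in> Aw n w k" "X \<in> IG SS pp (Suc (Suc k))"
  then show "updown X {x\<in>X. X - {x} \<in> Rev n w k \<rho>}" using Rev_updown unfolding Inv_eq by blast
qed

end


lemma packet_inter:
  assumes "finite X" "finite X'" "card X = card X'" "X \<noteq> X'" "Y \<in> packet X" "Y \<in> packet X'"
  shows "Y = X \<inter> X'"
proof -
  obtain x x' where x: "x \<in> X" "Y = X - {x}" "x' \<in> X'" "Y = X' - {x'}"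
    using assms(5,6) unfolding packet_eq by blast
  have sub: "Y \<subseteq> X \<inter> X'" using x by auto
  have "\<not> X \<subseteq> X'"
  proof
    assume "X \<subseteq> X'"
    then have "X = X'" using card_subset_eq[OF assms(2)] assms(3) by simp
    then show False using assms(4) by simp
  qed
  then have "X \<inter> X' \<subset> X" by auto
  then have "card (X \<inter> X') < card X" using psubset_card_mono[OF assms(1)] by blast
  moreover have "card Y = card X - 1" using x assms(1) by simp
  ultimately have "card (X \<inter> X') \<le> card Y" by simp
  moreover have "finite (X \<inter> X')" using assms(1) by simp
  ultimately show ?thesis using card_seteq[OF _ sub] by blast
qed

context ctx
begin

lemma swap_Rev:
  assumes "(\<rho>, \<sigma>) \<in> swapstep n w k"
  shows "Rev n w k \<sigma> = Rev n w k \<rho>"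
proof -
  obtain xs a b ys where e: "\<rho> = xs @ [a, b] @ ys" "\<sigma> = xs @ [b, a] @ ys" "commute n w k a b"
    using assms unfolding swapstep_def by blast
  have "filter (\<lambda>Y. Y \<in> packet X) \<sigma> = filter (\<lambda>Y. Y \<in> packet X) \<rho>" if "X \<in> Inv n w (k + 1)" for X
  proof -
    have "X \<in> subs n (k + 1)" using that unfolding Inv_def by simp
    then have "\<not> (a \<in> packet X \<and> b \<in> packet X)" using e(3) unfolding commute_def by blast
    then show ?thesis using e by auto
  qed
  then show ?thesis unfolding Rev_def by auto
qed

lemma chain_R:
  assumes "X \<in> IG SS pp (Suc k)" "X \<in> R" "x \<in> X" "y \<in> X" "x < y"
  shows "(X - {x}, X - {y}) \<in> (GE SS pp k R)\<^sup>+"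
proof -
  let ?xs = "sorted_list_of_set X"
  have fX: "finite X" using IG_fin[OF finSS assms(1)] .
  have main: "\<forall>i. i + Suc d < card X \<longrightarrow> (X - {?xs ! i}, X - {?xs ! (i + Suc d)}) \<in> (GE SS pp k R)\<^sup>+" for d
  proof (induction d)
    case 0
    show ?case using GE_rI[OF assms(2) adj_nth[OF fX]] by auto
  next
    case (Suc d)
    show ?case
    proof (intro allI impI)
      fix i assume i: "i + Suc (Suc d) < card X"
      have "(X - {?xs ! i}, X - {?xs ! (i + Suc d)}) \<in> (GE SS pp k R)\<^sup>+" using Suc i by simp
      moreover have "(X - {?xs ! (i + Suc d)}, X - {?xs ! Suc (i + Suc d)}) \<in> GE SS pp k R"
        using GE_rI[OF assms(2) adj_nth[OF fX]] i by simp
      ultimately show "(X - {?xs ! i}, X - {?xs ! (i + Suc (Suc d))}) \<in> (GE SS pp k R)\<^sup>+" by simp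
    qed
  qed
  have lt: "rk X x < rk X y" using rk_mono[OF fX assms(3-5)] .
  define d where "d = rk X y - rk X x - 1"
  have d: "rk X y = rk X x + Suc d" using lt unfolding d_def by simp
  have "rk X y < card X" using rk_less_card[OF fX assms(4)] .
  then have "rk X x + Suc d < card X" using d by simp
  then have h: "(X - {?xs ! rk X x}, X - {?xs ! (rk X x + Suc d)}) \<in> (GE SS pp k R)\<^sup>+"
    using main[of d] by blast
  show ?thesis using h unfolding d[symmetric] nth_rk[OF fX assms(3)] nth_rk[OF fX assms(4)] .
qed

lemma chain_nR:
  assumes "X \<in> IG SS pp (Suc k)" "X \<notin> R" "x \<in> X" "y \<in> X" "x < y"
  shows "(X - {y}, X - {x}) \<in> (GE SS pp k R)\<^sup>+"
proof -
  let ?xs = "sorted_list_of_set X"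
  have fX: "finite X" using IG_fin[OF finSS assms(1)] .
  have main: "\<forall>i. i + Suc d < card X \<longrightarrow> (X - {?xs ! (i + Suc d)}, X - {?xs ! i}) \<in> (GE SS pp k R)\<^sup>+" for d
  proof (induction d)
    case 0
    show ?case using GE_nI[OF assms(1,2) adj_nth[OF fX]] by auto
  next
    case (Suc d)
    show ?case
    proof (intro allI impI)
      fix i assume i: "i + Suc (Suc d) < card X"
      have "(X - {?xs ! (i + Suc d)}, X - {?xs ! i}) \<in> (GE SS pp k R)\<^sup>+" using Suc i by simp
      moreover have "(X - {?xs ! Suc (i + Suc d)}, X - {?xs ! (i + Suc d)}) \<in> GE SS pp k R"
        using GE_nI[OF assms(1,2) adj_nth[OF fX]] i by simp
      ultimately show "(X - {?xs ! (i + Suc (Suc d))}, X - {?xs ! i}) \<in> (GE SS pp k R)\<^sup>+"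
        by (metis add_Suc_right trancl_into_trancl2)
    qed
  qed
  have lt: "rk X x < rk X y" using rk_mono[OF fX assms(3-5)] .
  define d where "d = rk X y - rk X x - 1"
  have d: "rk X y = rk X x + Suc d" using lt unfolding d_def by simp
  have "rk X y < card X" using rk_less_card[OF fX assms(4)] .
  then have "rk X x + Suc d < card X" using d by simp
  then have h: "(X - {?xs ! (rk X x + Suc d)}, X - {?xs ! rk X x}) \<in> (GE SS pp k R)\<^sup>+"
    using main[of d] by blast
  show ?thesis using h unfolding d[symmetric] nth_rk[OF fX assms(3)] nth_rk[OF fX assms(4)] .
qed

lemma packet_comparable:
  assumes "R \<subseteq> Inv n w (Suc k)" "a \<in> Inv n w k" "b \<in> Inv n w k" "a \<noteq> b"
    "Z \<in> subs n (k + 1)" "a \<in> packet Z" "b \<in> packet Z"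
  shows "(a, b) \<in> leR n w k R \<or> (b, a) \<in> leR n w k R"
proof -
  let ?G = "GE SS pp k R"
  obtain x y where xy: "x \<in> Z" "a = Z - {x}" "y \<in> Z" "b = Z - {y}" using assms(6,7) unfolding packet_eq by blast
  have xny: "x \<noteq> y" using xy assms(4) by auto
  have ZS: "Z \<subseteq> SS" "card Z = Suc k" using assms(5) unfolding subs_def by auto
  have fZ: "finite Z" using ZS finite_subset by blast
  have ia: "invd pp (Z - {x})" "invd pp (Z - {y})" using assms(2,3) xy unfolding Inv_eq IG_def by auto
  have "(a, b) \<in> ?G\<^sup>+ \<or> (b, a) \<in> ?G\<^sup>+"
  proof (cases "invd pp Z")
    case True
    then have ZI: "Z \<in> IG SS pp (Suc k)" using ZS unfolding IG_def by simp
    show ?thesis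
    proof (cases "Z \<in> R")
      case True
      show ?thesis
      proof (cases "x < y")
        case True then show ?thesis using chain_R[OF ZI \<open>Z \<in> R\<close> xy(1,3)] xy by simp
      next
        case False then have "y < x" using xny by simp
        then show ?thesis using chain_R[OF ZI \<open>Z \<in> R\<close> xy(3,1)] xy by simp
      qed
    next
      case False
      show ?thesis
      proof (cases "x < y")
        case True then show ?thesis using chain_nR[OF ZI \<open>Z \<notin> R\<close> xy(1,3)] xy by simp
      next
        case f2: False then have "y < x" using xny by simp
        then show ?thesis using chain_nR[OF ZI \<open>Z \<notin> R\<close> xy(3,1)] xy by simp
      qed
    qed
  next
    case False
    then obtain s t where st: "s \<in> Z" "t \<in> Z" "s < t" "\<not> pp t < pp s" unfolding invd_def by blast
    have "s = x \<or> t = x"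
    proof (rule ccontr)
      assume "\<not> (s = x \<or> t = x)"
      then have "s \<in> Z - {x}" "t \<in> Z - {x}" using st by auto
      then show False using ia(1) st unfolding invd_def by blast
    qed
    moreover have "s = y \<or> t = y"
    proof (rule ccontr)
      assume "\<not> (s = y \<or> t = y)"
      then have "s \<in> Z - {y}" "t \<in> Z - {y}" using st by auto
      then show False using ia(2) st unfolding invd_def by blast
    qed
    ultimately have stxy: "(s = x \<and> t = y) \<or> (s = y \<and> t = x)" using st xny by auto
    have "pp s \<noteq> pp t" using injp st ZS unfolding inj_on_def by (metis less_irrefl subsetD)
    then have plt: "pp s < pp t" using st by simp
    have qp: "qpair pp Z s t" unfolding qpair_def using st plt ia stxy by auto
    have "(Z - {s}, Z - {t}) \<in> qE SS pp k \<or> (Z - {t}, Z - {s}) \<in> qE SS pp k"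
      using qE_I[OF ZS(1) ZS(2) qp, of "Z - {s}" "Z - {t}"] qE_I[OF ZS(1) ZS(2) qp, of "Z - {t}" "Z - {s}"] by auto
    then have "(Z - {s}, Z - {t}) \<in> ?G \<or> (Z - {t}, Z - {s}) \<in> ?G" using GE_qI by blast
    then show ?thesis using stxy xy by auto
  qed
  then have "(a, b) \<in> ?G\<^sup>* \<or> (b, a) \<in> ?G\<^sup>*" by (auto dest: trancl_into_rtrancl)
  then show ?thesis unfolding leR_eq[OF assms(1)] using assms(2,3) by auto
qed


lemma Pw_sub_leR:
  assumes "R \<subseteq> Inv n w (Suc k)"
  shows "Pw n w k \<subseteq> leR n w k R"
proof -
  have "qE SS pp k \<subseteq> GE SS pp k R" unfolding GE_def by blast
  then have "(qE SS pp k)\<^sup>* \<subseteq> (GE SS pp k R)\<^sup>*" by (rule rtrancl_mono)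
  then show ?thesis unfolding Pw_eq leR_eq[OF assms] Inv_eq by blast
qed

lemma stp_to_simw:
  assumes "R \<subseteq> Inv n w (Suc k)" "(l1, l2) \<in> (stp (leR n w k R))\<^sup>*" "is_linext (Inv n w k) (leR n w k R) l1"
  shows "(l1, l2) \<in> (swapstep n w k \<inter> (Aw n w k \<times> Aw n w k))\<^sup>* \<and> is_linext (Inv n w k) (leR n w k R) l2"
  using assms(2)
proof (induction rule: rtrancl_induct)
  case base then show ?case using assms(3) by simp
next
  case (step y z)
  have ly: "is_linext (Inv n w k) (leR n w k R) y" using step.IH by simp
  obtain xs a b ys where e: "y = xs @ [a, b] @ ys" "z = xs @ [b, a] @ ys" "(a, b) \<notin> leR n w k R"
    "(b, a) \<notin> leR n w k R" "distinct (xs @ [a, b] @ ys)" "resp (leR n w k R) (xs @ [b, a] @ ys)"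
    using step.hyps(2) unfolding stp_def by blast
  have lz: "is_linext (Inv n w k) (leR n w k R) z"
    using ly e unfolding linext_iff by auto
  have ab: "a \<in> Inv n w k" "b \<in> Inv n w k" "a \<noteq> b" using ly e unfolding linext_iff by auto
  have c: "commute n w k a b"
    unfolding commute_def
  proof (intro conjI)
    show "a \<in> Inv n w k" "b \<in> Inv n w k" using ab by auto
    show "(a, b) \<notin> Pw n w k" "(b, a) \<notin> Pw n w k" using e(3,4) Pw_sub_leR[OF assms(1)] by auto
    show "\<not> (\<exists>Z'\<in>subs n (k + 1). a \<in> packet Z' \<and> b \<in> packet Z')"
      using packet_comparable[OF assms(1) ab] e(3,4) by blast
  qed
  have "(y, z) \<in> swapstep n w k" unfolding swapstep_def using e(1,2) c by blast
  moreover have "y \<in> Aw n w k" "z \<in> Aw n w k" using linext_Aw[OF assms(1)] ly lz by auto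
  ultimately have yz: "(y, z) \<in> swapstep n w k \<inter> (Aw n w k \<times> Aw n w k)" by blast
  have "(l1, z) \<in> (swapstep n w k \<inter> (Aw n w k \<times> Aw n w k))\<^sup>*"
    using rtrancl_into_rtrancl[OF conjunct1[OF step.IH] yz] .
  then show ?case using lz by simp
qed

lemma class_eq:
  assumes "\<rho> \<in> Aw n w k"
  shows "simw n w k `` {\<rho>} = Linext n w k (Rev n w k \<rho>)"
proof
  let ?R = "Rev n w k \<rho>"
  have RI: "?R \<subseteq> Inv n w (Suc k)" using Rev_sub .
  have l\<rho>: "is_linext (Inv n w k) (leR n w k ?R) \<rho>" using Aw_linext[OF assms] .
  show "Linext n w k ?R \<subseteq> simw n w k `` {\<rho>}"
  proof
    fix \<sigma> assume "\<sigma> \<in> Linext n w k ?R"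
    then have l\<sigma>: "is_linext (Inv n w k) (leR n w k ?R) \<sigma>" unfolding Linext_def by simp
    have "(\<rho>, \<sigma>) \<in> (stp (leR n w k ?R))\<^sup>*"
      using swap_conn[of \<rho> \<sigma> "leR n w k ?R"] l\<rho> l\<sigma> unfolding linext_iff by auto
    then show "\<sigma> \<in> simw n w k `` {\<rho>}" using stp_to_simw[OF RI _ l\<rho>] unfolding simw_def by blast
  qed
  show "simw n w k `` {\<rho>} \<subseteq> Linext n w k ?R"
  proof
    fix \<sigma> assume "\<sigma> \<in> simw n w k `` {\<rho>}"
    then have "(\<rho>, \<sigma>) \<in> (swapstep n w k \<inter> (Aw n w k \<times> Aw n w k))\<^sup>*" unfolding simw_def by simp
    then have "is_linext (Inv n w k) (leR n w k ?R) \<sigma>"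
    proof (induction rule: rtrancl_induct)
      case base then show ?case using l\<rho> .
    next
      case (step y z)
      have "Rev n w k y = ?R" using linext_Aw(2)[OF RI step.IH] .
      moreover have "Rev n w k z = Rev n w k y" using swap_Rev step.hyps(2) by blast
      moreover have "z \<in> Aw n w k" using step.hyps(2) by blast
      ultimately show ?case using Aw_linext by metis
    qed
    then show "\<sigma> \<in> Linext n w k ?R" unfolding Linext_def by simp
  qed
qed

lemma Bw_iff: "c \<in> Bw n w k \<longleftrightarrow> (\<exists>\<rho>\<in>Aw n w k. c = Linext n w k (Rev n w k \<rho>))"
  unfolding Bw_def quotient_def using class_eq by auto

lemma flip_Rev:
  assumes "(\<rho>, \<sigma>) \<in> flipstep n w k" "\<rho> \<in> Aw n w k" "\<sigma> \<in> Aw n w k"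
  shows "\<exists>X. X \<notin> Rev n w k \<rho> \<and> Rev n w k \<sigma> = insert X (Rev n w k \<rho>)"
proof -
  obtain xs X ys where e: "\<rho> = xs @ lexl X @ ys" "\<sigma> = xs @ antilexl X @ ys" "X \<in> Inv n w (k + 1)"
    using assms(1) unfolding flipstep_def by blast
  have fX: "finite X" and cX: "card X = Suc k" using Inv_fin Inv_card e(3) by auto
  have d: "distinct \<rho>" using Aw_parts[OF assms(2)] by simp
  have dj: "\<forall>z\<in>set xs. z \<notin> packet X" "\<forall>z\<in>set ys. z \<notin> packet X"
    using d e(1) packet_set_lex[OF fX] by auto
  have fr: "filter (\<lambda>Y. Y \<in> packet X) \<rho> = lexl X" "filter (\<lambda>Y. Y \<in> packet X) \<sigma> = antilexl X"
    using dj e packet_set_lex[OF fX] packet_set_anti[OF fX] by (auto simp: filter_empty_conv)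
  have ne: "lexl X \<noteq> antilexl X" using lex_ne_anti[OF fX] cX k1 by simp
  have same: "filter (\<lambda>Y. Y \<in> packet X') \<sigma> = filter (\<lambda>Y. Y \<in> packet X') \<rho>"
    if "X' \<in> Inv n w (k + 1)" "X' \<noteq> X" for X'
  proof -
    let ?F = "filter (\<lambda>Y. Y \<in> packet X') (lexl X)"
    have fX': "finite X'" and cX': "card X' = Suc k" using Inv_fin Inv_card that(1) by auto
    have "set ?F \<subseteq> {X \<inter> X'}"
      using packet_inter[OF fX fX' _ that(2)[symmetric]] cX cX' packet_set_lex[OF fX] by auto
    moreover have "distinct ?F" using distinct_lex[OF fX] by simp
    ultimately have "length ?F \<le> 1"
      using distinct_card[of ?F] card_mono[of "{X \<inter> X'}" "set ?F"] by auto
    then have "rev ?F = ?F" by (cases ?F) auto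
    then have "filter (\<lambda>Y. Y \<in> packet X') (antilexl X) = ?F"
      unfolding lexl_rev by (simp add: rev_filter[symmetric] lexl_rev)
    then show ?thesis using e by simp
  qed
  have "X \<notin> Rev n w k \<rho>" using fr ne unfolding Rev_def by simp
  moreover have "Rev n w k \<sigma> = insert X (Rev n w k \<rho>)"
  proof (intro set_eqI iffI)
    fix X' assume h: "X' \<in> Rev n w k \<sigma>"
    show "X' \<in> insert X (Rev n w k \<rho>)"
    proof (cases "X' = X")
      case True then show ?thesis by simp
    next
      case False
      have X'I: "X' \<in> Inv n w (k + 1)" using h unfolding Rev_def by simp
      have "filter (\<lambda>Y. Y \<in> packet X') \<sigma> = antilexl X'" using h unfolding Rev_def by simp
      then have "filter (\<lambda>Y. Y \<in> packet X') \<rho> = antilexl X'" using same[OF X'I False] by simp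
      then show ?thesis using X'I unfolding Rev_def by simp
    qed
  next
    fix X' assume h: "X' \<in> insert X (Rev n w k \<rho>)"
    show "X' \<in> Rev n w k \<sigma>"
    proof (cases "X' = X")
      case True then show ?thesis using fr e(3) unfolding Rev_def by simp
    next
      case False
      then have h2: "X' \<in> Rev n w k \<rho>" using h by simp
      have X'I: "X' \<in> Inv n w (k + 1)" using h2 unfolding Rev_def by simp
      have "filter (\<lambda>Y. Y \<in> packet X') \<rho> = antilexl X'" using h2 unfolding Rev_def by simp
      then have "filter (\<lambda>Y. Y \<in> packet X') \<sigma> = antilexl X'" using same[OF X'I False] by simp
      then show ?thesis using X'I unfolding Rev_def by simp
    qed
  qed
  ultimately show ?thesis by blast
qed


lemma within_packet:
  assumes "R0 \<subseteq> IG SS pp (Suc k)" "X \<in> IG SS pp (Suc k)" "(a, b) \<in> GE SS pp k R0"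
    "a \<in> packet X" "b \<in> packet X"
  shows "\<exists>x y. adj X x y \<and> ((X \<in> R0 \<and> a = X - {x} \<and> b = X - {y}) \<or> (X \<notin> R0 \<and> a = X - {y} \<and> b = X - {x}))"
proof -
  have fX: "finite X" and cX: "card X = Suc k" and iX: "invd pp X"
    using assms(2) IG_fin[OF finSS assms(2)] unfolding IG_def by auto
  have aX: "a \<subseteq> X" "b \<subseteq> X" using assms(4,5) unfolding packet_eq by auto
  have same: "Y = X" if "Y \<subseteq> X" "card Y = Suc k" for Y
    using card_subset_eq[OF fX that(1)] that(2) cX by simp
  show ?thesis using assms(3)
  proof (cases rule: GE_cases)
    case (q Z u v)
    have uv: "u \<in> Z" "v \<in> Z" "u < v" "pp u < pp v" using q(3) unfolding qpair_def by auto
    have "Z = a \<union> b" using q(4) uv by auto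
    then have "Z = X" using same[of Z] aX q(2) by auto
    then have "pp v < pp u" using iX uv unfolding invd_def by blast
    then show ?thesis using uv by simp
  next
    case (r X0 x y)
    have xy: "x \<in> X0" "y \<in> X0" "x < y" using r(2) unfolding adj_def by auto
    have "X0 \<in> IG SS pp (Suc k)" using r(1) assms(1) by blast
    then have "card X0 = Suc k" unfolding IG_def by simp
    moreover have "X0 = a \<union> b" using r xy by auto
    ultimately have "X0 = X" using same[of X0] aX by auto
    then show ?thesis using r by blast
  next
    case (n X0 x y)
    have xy: "x \<in> X0" "y \<in> X0" "x < y" using n(3) unfolding adj_def by auto
    have "card X0 = Suc k" using n(1) unfolding IG_def by simp
    moreover have "X0 = a \<union> b" using n xy by auto
    ultimately have "X0 = X" using same[of X0] aX by auto
    then show ?thesis using n by blast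
  qed
qed

lemma GE_transfer:
  assumes "X \<notin> R" "(a, b) \<in> GE SS pp k R" "\<not> (a \<in> packet X \<and> b \<in> packet X)"
  shows "(a, b) \<in> GE SS pp k (insert X R)"
  using assms(2)
proof (cases rule: GE_cases)
  case (q Z u v)
  then have "(a, b) \<in> qE SS pp k" unfolding qE_def by auto
  then show ?thesis by (rule GE_qI)
next
  case (r X0 x y)
  then show ?thesis using GE_rI[of X0 "insert X R" x y] by simp
next
  case (n X0 x y)
  have "X0 \<noteq> X" using n assms(3) unfolding packet_eq adj_def by auto
  then show ?thesis using n GE_nI[of X0 SS pp k "insert X R" x y] by simp
qed

lemma GE_transfer2:
  assumes "(a, b) \<in> GE SS pp k (insert X R)" "\<not> (a \<in> packet X \<and> b \<in> packet X)"
  shows "(a, b) \<in> GE SS pp k R"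
  using assms(1)
proof (cases rule: GE_cases)
  case (q Z u v)
  then have "(a, b) \<in> qE SS pp k" unfolding qE_def by auto
  then show ?thesis by (rule GE_qI)
next
  case (r X0 x y)
  have "X0 \<noteq> X" using r assms(2) unfolding packet_eq adj_def by auto
  then show ?thesis using r GE_rI[of X0 R x y] by simp
next
  case (n X0 x y)
  then show ?thesis using GE_nI[of X0 SS pp k R x y] by simp
qed

lemma block:
  assumes cR: "cons1 SS pp (Suc k) R" and cR': "cons1 SS pp (Suc k) (insert X R)"
    and XI: "X \<in> Inv n w (Suc k)" and XR: "X \<notin> R"
  shows "\<exists>xs ys. is_linext (Inv n w k) (leR n w k R) (xs @ lexl X @ ys) \<and>
                 is_linext (Inv n w k) (leR n w k (insert X R)) (xs @ antilexl X @ ys)"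
proof -
  let ?R' = "insert X R"
  let ?G = "GE SS pp k R" and ?G' = "GE SS pp k ?R'"
  let ?I = "Inv n w k"
  have RI: "R \<subseteq> Inv n w (Suc k)" using cR unfolding cons1_def Inv_eq by simp
  have R'I: "?R' \<subseteq> Inv n w (Suc k)" using cR' unfolding cons1_def Inv_eq by simp
  have XIG: "X \<in> IG SS pp (Suc k)" using XI unfolding Inv_eq .
  have fX: "finite X" using Inv_fin XI by blast
  obtain f :: "nat set \<Rightarrow> nat" where f: "\<forall>U V. (U, V) \<in> ?G \<longrightarrow> f U < f V"
    using acyc[OF finSS injp cR] by blast
  obtain f' :: "nat set \<Rightarrow> nat" where f': "\<forall>U V. (U, V) \<in> ?G' \<longrightarrow> f' U < f' V"
    using acyc[OF finSS injp cR'] by blast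
  define M where "M = packet X"
  have MI: "M \<subseteq> ?I" unfolding M_def using packet_sub[OF XI] .
  define D where "D = {Y \<in> ?I - M. \<exists>m\<in>M. (Y, m) \<in> ?G\<^sup>*}"
  define U where "U = ?I - M - D"
  have finD: "finite D" unfolding D_def using finI by simp
  have finU: "finite U" unfolding U_def using finI by simp
  obtain l1 where l1: "distinct l1" "set l1 = D" "sorted (map f l1)" using exists_sorted[OF finD] by blast
  obtain l2 where l2: "distinct l2" "set l2 = U" "sorted (map f l2)" using exists_sorted[OF finU] by blast
  have GI: "a \<in> ?I" "b \<in> ?I" if "(a, b) \<in> ?G" for a b using GE_I[OF RI that] by auto
  have nobetween: False if nb: "a \<in> M" "(a, b) \<in> ?G" "b \<notin> M" "(b, c) \<in> ?G\<^sup>*" "c \<in> M" for a b c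
  proof -
    let ?H = "{e \<in> ?G. \<not> (fst e \<in> M \<and> snd e \<in> M)}"
    have claim: "b \<notin> M \<longrightarrow> (\<exists>m\<in>M. (b, m) \<in> ?H\<^sup>+)" if "(b, c) \<in> ?G\<^sup>*" for b
      using that
    proof (induction rule: converse_rtrancl_induct)
      case base then show ?case using \<open>c \<in> M\<close> by simp
    next
      case (step y z)
      show ?case
      proof
        assume "y \<notin> M"
        then have yz: "(y, z) \<in> ?H" using step.hyps(1) by simp
        show "\<exists>m\<in>M. (y, m) \<in> ?H\<^sup>+"
        proof (cases "z \<in> M")
          case True then show ?thesis using yz by blast
        next
          case False
          then obtain m where "m \<in> M" "(z, m) \<in> ?H\<^sup>+" using step.IH by blast
          then show ?thesis using yz by (meson trancl_into_trancl2)
        qed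
      qed
    qed
    obtain m where m: "m \<in> M" "(b, m) \<in> ?H\<^sup>+" using claim[OF nb(4)] nb(3) by blast
    have "(a, b) \<in> ?H" using nb(2,3) by simp
    then have am: "(a, m) \<in> ?H\<^sup>+" using m(2) by (meson trancl_into_trancl2)
    have HG: "?H \<subseteq> ?G" by blast
    have HG': "?H \<subseteq> ?G'" using GE_transfer[OF XR] unfolding M_def by auto
    have amG: "(a, m) \<in> ?G\<^sup>+" using trancl_mono[OF am HG] .
    have amG': "(a, m) \<in> ?G'\<^sup>+" using trancl_mono[OF am HG'] .
    obtain x1 x2 where x: "x1 \<in> X" "a = X - {x1}" "x2 \<in> X" "m = X - {x2}"
      using nb(1) m(1) unfolding M_def packet_eq by blast
    have fam: "f a < f m" using rank_trancl[OF f amG] .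
    have fam': "f' a < f' m" using rank_trancl[OF f' amG'] .
    show False
    proof (cases x1 x2 rule: linorder_cases)
      case equal then show ?thesis using fam x by simp
    next
      case less
      have "(m, a) \<in> ?G\<^sup>+" using chain_nR[OF XIG XR x(1,3) less] x by simp
      then show ?thesis using rank_trancl[OF f] fam by fastforce
    next
      case greater
      have "(m, a) \<in> ?G'\<^sup>+" using chain_R[OF XIG _ x(3,1) greater] x by simp
      then show ?thesis using rank_trancl[OF f'] fam' by fastforce
    qed
  qed
  have generic: "bef (l1 @ L @ l2) a b"
    if L: "set L = M" and e: "(a, b) \<in> ?G" "\<not> (a \<in> M \<and> b \<in> M)" for L a b
  proof -
    have ab: "a \<in> ?I" "b \<in> ?I" using GI[OF e(1)] by auto
    have loc: "\<And>z. z \<in> ?I \<Longrightarrow> z \<in> D \<or> z \<in> M \<or> z \<in> U" unfolding U_def by blast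
    have DM: "D \<inter> M = {}" "U \<inter> M = {}" "U \<inter> D = {}" unfolding D_def U_def by auto
    show ?thesis
    proof (cases "a \<in> D")
      case aD: True
      show ?thesis
      proof (cases "b \<in> D")
        case True
        have "bef l1 a b" using sorted_bef[OF l1(3)] l1(2) aD True f e(1) by blast
        then show ?thesis by (simp add: bef_append)
      next
        case False
        then have "b \<in> set (L @ l2)" using loc[OF ab(2)] L l2(2) by auto
        then show ?thesis using aD l1(2) by (simp add: bef_append)
      qed
    next
      case aD: False
      show ?thesis
      proof (cases "a \<in> M")
        case aM: True
        then have bM: "b \<notin> M" using e(2) by simp
        show ?thesis
        proof (cases "b \<in> D")
          case True
          then obtain c where "c \<in> M" "(b, c) \<in> ?G\<^sup>*" unfolding D_def by blast
          then show ?thesis using nobetween[OF aM e(1) bM] by blast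
        next
          case False
          then have "b \<in> U" using loc[OF ab(2)] bM by blast
          then have "bef (L @ l2) a b" using aM L l2(2) by (simp add: bef_append)
          then show ?thesis by (simp add: bef_append)
        qed
      next
        case aM: False
        then have aU: "a \<in> U" using loc[OF ab(1)] aD by blast
        show ?thesis
        proof (cases "b \<in> U")
          case True
          have "bef l2 a b" using sorted_bef[OF l2(3)] l2(2) aU True f e(1) by blast
          then show ?thesis by (simp add: bef_append)
        next
          case False
          then have "b \<in> D \<or> b \<in> M" using loc[OF ab(2)] by blast
          then obtain c where c: "c \<in> M" "(b, c) \<in> ?G\<^sup>*" unfolding D_def by blast
          then have "(a, c) \<in> ?G\<^sup>*" using e(1) by (meson converse_rtrancl_into_rtrancl)
          then have "a \<in> D" unfolding D_def using ab(1) aM c(1) by blast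
          then show ?thesis using aD by simp
        qed
      qed
    qed
  qed
  have dj: "set l1 \<inter> M = {}" "set l2 \<inter> M = {}" "set l1 \<inter> set l2 = {}"
    using l1(2) l2(2) unfolding D_def U_def by auto
  have setall: "set l1 \<union> M \<union> set l2 = ?I" using l1(2) l2(2) MI unfolding D_def U_def by auto
  define \<rho> where "\<rho> = l1 @ lexl X @ l2"
  define \<sigma> where "\<sigma> = l1 @ antilexl X @ l2"
  have sl: "set (lexl X) = M" "set (antilexl X) = M" unfolding M_def
    using packet_set_lex[OF fX] packet_set_anti[OF fX] by auto
  have d\<rho>: "distinct \<rho>" unfolding \<rho>_def using l1(1) l2(1) distinct_lex[OF fX] dj sl by auto
  have d\<sigma>: "distinct \<sigma>" unfolding \<sigma>_def using l1(1) l2(1) distinct_anti[OF fX] dj sl by auto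
  have s\<rho>: "set \<rho> = ?I" unfolding \<rho>_def using setall sl by auto
  have s\<sigma>: "set \<sigma> = ?I" unfolding \<sigma>_def using setall sl by auto
  have e\<rho>: "\<forall>a b. (a, b) \<in> ?G \<longrightarrow> bef \<rho> a b"
  proof (intro allI impI)
    fix a b assume e: "(a, b) \<in> ?G"
    show "bef \<rho> a b"
    proof (cases "a \<in> M \<and> b \<in> M")
      case True
      then obtain x y where "adj X x y" "a = X - {y}" "b = X - {x}"
        using within_packet[OF _ XIG e] RI XR unfolding M_def Inv_eq by blast
      then have "bef (lexl X) a b" using bef_lex[OF fX] unfolding adj_def by auto
      then show ?thesis unfolding \<rho>_def by (simp add: bef_append)
    next
      case False
      then show ?thesis using generic[OF sl(1) e] unfolding \<rho>_def by simp
    qed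
  qed
  have e\<sigma>: "\<forall>a b. (a, b) \<in> ?G' \<longrightarrow> bef \<sigma> a b"
  proof (intro allI impI)
    fix a b assume e: "(a, b) \<in> ?G'"
    show "bef \<sigma> a b"
    proof (cases "a \<in> M \<and> b \<in> M")
      case True
      then obtain x y where "adj X x y" "a = X - {x}" "b = X - {y}"
        using within_packet[OF _ XIG e] R'I unfolding M_def Inv_eq by blast
      then have "bef (antilexl X) a b" using bef_anti[OF fX] unfolding adj_def by auto
      then show ?thesis unfolding \<sigma>_def by (simp add: bef_append)
    next
      case False
      then have "(a, b) \<in> ?G" using GE_transfer2[OF e] unfolding M_def by blast
      then show ?thesis using generic[OF sl(2) _ False] unfolding \<sigma>_def by simp
    qed
  qed
  have r\<rho>: "resp (leR n w k R) \<rho>"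
    unfolding resp_def leR_eq[OF RI]
  proof (intro allI impI)
    fix a b assume "(a, b) \<in> ?G\<^sup>* \<inter> ?I \<times> ?I"
    then have "a = b \<or> bef \<rho> a b" using bef_rtrancl[OF d\<rho> e\<rho>] by blast
    then show "\<not> bef \<rho> b a" using bef_irrefl[OF d\<rho>] bef_asym[OF d\<rho>] by metis
  qed
  have r\<sigma>: "resp (leR n w k ?R') \<sigma>"
    unfolding resp_def leR_eq[OF R'I]
  proof (intro allI impI)
    fix a b assume "(a, b) \<in> ?G'\<^sup>* \<inter> ?I \<times> ?I"
    then have "a = b \<or> bef \<sigma> a b" using bef_rtrancl[OF d\<sigma> e\<sigma>] by blast
    then show "\<not> bef \<sigma> b a" using bef_irrefl[OF d\<sigma>] bef_asym[OF d\<sigma>] by metis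
  qed
  show ?thesis using d\<rho> d\<sigma> s\<rho> s\<sigma> r\<rho> r\<sigma> unfolding linext_iff \<rho>_def \<sigma>_def by blast
qed


lemma cons_iff: "R \<in> Cw n w (Suc k) \<longleftrightarrow> cons1 SS pp (Suc k) R"
  unfolding Cw_def using consistent_eq[of n w "Suc k" R] by simp

lemma Bw_elem:
  assumes "c \<in> Bw n w k"
  obtains \<rho> where "\<rho> \<in> Aw n w k" "c = Linext n w k (Rev n w k \<rho>)" "\<rho> \<in> c"
    "\<forall>\<sigma>\<in>c. Rev n w k \<sigma> = Rev n w k \<rho>" "RevB n w k c = Rev n w k \<rho>"
proof -
  obtain \<rho> where \<rho>: "\<rho> \<in> Aw n w k" "c = Linext n w k (Rev n w k \<rho>)" using assms Bw_iff by blast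
  have "\<rho> \<in> c" using \<rho> Aw_linext unfolding Linext_def by simp
  moreover have all: "\<forall>\<sigma>\<in>c. Rev n w k \<sigma> = Rev n w k \<rho>"
    using \<rho>(2) linext_Aw(2)[OF Rev_sub] unfolding Linext_def by blast
  moreover have "RevB n w k c = Rev n w k \<rho>"
  proof -
    have "Rev n w k ` c = {Rev n w k \<rho>}" using all \<open>\<rho> \<in> c\<close> by blast
    then show ?thesis unfolding RevB_def by simp
  qed
  ultimately show ?thesis using that \<rho> by blast
qed

lemma Linext_in:
  assumes "cons1 SS pp (Suc k) R"
  shows "Linext n w k R \<in> Bw n w k" "RevB n w k (Linext n w k R) = R" "Linext n w k R \<noteq> {}"
proof -
  have RI: "R \<subseteq> Inv n w (Suc k)" using assms unfolding cons1_def Inv_eq by simp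
  obtain \<rho> where l: "is_linext (Inv n w k) (leR n w k R) \<rho>" using linext_exists[OF assms] by blast
  have a: "\<rho> \<in> Aw n w k" "Rev n w k \<rho> = R" using linext_Aw[OF RI l] by auto
  show b: "Linext n w k R \<in> Bw n w k" using Bw_iff a by metis
  show "Linext n w k R \<noteq> {}" using l unfolding Linext_def by blast
  obtain \<sigma> where "RevB n w k (Linext n w k R) = Rev n w k \<sigma>" "\<sigma> \<in> Linext n w k R"
    using Bw_elem[OF b] by metis
  then show "RevB n w k (Linext n w k R) = R" using linext_Aw(2)[OF RI] unfolding Linext_def by simp
qed

definition "CR = {(S, S'). S \<in> Cw n w (k + 1) \<and> S' \<in> Cw n w (k + 1) \<and> S \<subset> S' \<and> card (S' - S) = 1}"
definition "steps = (swapstep n w k \<union> flipstep n w k) \<inter> (Aw n w k \<times> Aw n w k)"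

lemma steps_Rev:
  assumes "(\<rho>, \<sigma>) \<in> steps\<^sup>*" "\<rho> \<in> Aw n w k"
  shows "(Rev n w k \<rho>, Rev n w k \<sigma>) \<in> CR\<^sup>*"
  using assms(1)
proof (induction rule: rtrancl_induct)
  case base then show ?case by simp
next
  case (step y z)
  have yz: "y \<in> Aw n w k" "z \<in> Aw n w k" using step.hyps(2) unfolding steps_def by auto
  show ?case
  proof (cases "(y, z) \<in> swapstep n w k")
    case True
    then show ?thesis using swap_Rev step.IH by simp
  next
    case False
    then have "(y, z) \<in> flipstep n w k" using step.hyps(2) unfolding steps_def by blast
    then obtain X where X: "X \<notin> Rev n w k y" "Rev n w k z = insert X (Rev n w k y)"
      using flip_Rev yz by blast
    have "Rev n w k y \<in> Cw n w (k + 1)" "Rev n w k z \<in> Cw n w (k + 1)"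
      using Rev_cons yz cons_iff by auto
    moreover have "Rev n w k y \<subset> Rev n w k z" using X by auto
    moreover have "Rev n w k z - Rev n w k y = {X}" using X by auto
    ultimately have "(Rev n w k y, Rev n w k z) \<in> CR" unfolding CR_def by simp
    then show ?thesis using step.IH by simp
  qed
qed

lemma same_class_steps:
  assumes "cons1 SS pp (Suc k) S" "\<rho> \<in> Linext n w k S" "\<sigma> \<in> Linext n w k S"
  shows "(\<rho>, \<sigma>) \<in> steps\<^sup>*"
proof -
  have RI: "S \<subseteq> Inv n w (Suc k)" using assms unfolding cons1_def Inv_eq by simp
  have a: "\<rho> \<in> Aw n w k" "Rev n w k \<rho> = S" using linext_Aw[OF RI] assms(2) unfolding Linext_def by auto
  have "\<sigma> \<in> simw n w k `` {\<rho>}" using class_eq[OF a(1)] a(2) assms(3) by simp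
  then have "(\<rho>, \<sigma>) \<in> (swapstep n w k \<inter> (Aw n w k \<times> Aw n w k))\<^sup>*" unfolding simw_def by simp
  moreover have "swapstep n w k \<inter> (Aw n w k \<times> Aw n w k) \<subseteq> steps" unfolding steps_def by blast
  ultimately show ?thesis using rtrancl_mono by blast
qed

lemma CR_steps:
  assumes "(R, S) \<in> CR\<^sup>*" "R \<in> Cw n w (k + 1)"
  shows "\<forall>\<rho>\<in>Linext n w k R. \<forall>\<sigma>\<in>Linext n w k S. (\<rho>, \<sigma>) \<in> steps\<^sup>*"
  using assms(1)
proof (induction rule: rtrancl_induct)
  case base
  then show ?case using same_class_steps assms(2) cons_iff by simp
next
  case (step S S')
  have SS': "S \<in> Cw n w (k + 1)" "S' \<in> Cw n w (k + 1)" "S \<subset> S'" "card (S' - S) = 1"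
    using step.hyps(2) unfolding CR_def by auto
  obtain X where X: "S' - S = {X}" using SS'(4) card_1_singletonE by blast
  have S'e: "S' = insert X S" "X \<notin> S" using X SS'(3) by auto
  have cS: "cons1 SS pp (Suc k) S" and cS': "cons1 SS pp (Suc k) (insert X S)" using SS' S'e cons_iff by auto
  have XI: "X \<in> Inv n w (Suc k)" using cS' unfolding cons1_def Inv_eq by auto
  obtain xs ys where b: "is_linext (Inv n w k) (leR n w k S) (xs @ lexl X @ ys)"
    "is_linext (Inv n w k) (leR n w k (insert X S)) (xs @ antilexl X @ ys)"
    using block[OF cS cS' XI S'e(2)] by blast
  have SI: "S \<subseteq> Inv n w (Suc k)" "insert X S \<subseteq> Inv n w (Suc k)"
    using cS cS' unfolding cons1_def Inv_eq by auto
  have "xs @ lexl X @ ys \<in> Aw n w k" "xs @ antilexl X @ ys \<in> Aw n w k"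
    using linext_Aw(1)[OF SI(1) b(1)] linext_Aw(1)[OF SI(2) b(2)] by auto
  moreover have "(xs @ lexl X @ ys, xs @ antilexl X @ ys) \<in> flipstep n w k"
    unfolding flipstep_def using XI by auto
  ultimately have fl: "(xs @ lexl X @ ys, xs @ antilexl X @ ys) \<in> steps" unfolding steps_def by blast
  show ?case
  proof (intro ballI)
    fix \<rho> \<sigma> assume r: "\<rho> \<in> Linext n w k R" and s: "\<sigma> \<in> Linext n w k S'"
    have "(\<rho>, xs @ lexl X @ ys) \<in> steps\<^sup>*" using step.IH r b(1) unfolding Linext_def by blast
    moreover have "(xs @ antilexl X @ ys, \<sigma>) \<in> steps\<^sup>*"
      using same_class_steps[OF cS'] b(2) s S'e(1) unfolding Linext_def by simp
    ultimately show "(\<rho>, \<sigma>) \<in> steps\<^sup>*" using fl by (meson rtrancl_into_rtrancl rtrancl_trans)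
  qed
qed

lemma main:
  shows "(\<forall>c\<in>Bw n w k. \<exists>R. Rev n w k ` c = {R})
    \<and> bij_betw (RevB n w k) (Bw n w k) (Cw n w (k + 1))
    \<and> (\<forall>c\<in>Bw n w k. \<forall>d\<in>Bw n w k.
          Bw_le n w k c d \<longleftrightarrow> Cw_le n w (k + 1) (RevB n w k c) (RevB n w k d))
    \<and> (\<forall>R\<in>Cw n w (k + 1). Linext n w k R \<in> Bw n w k \<and> RevB n w k (Linext n w k R) = R)"
proof (intro conjI ballI)
  fix c assume "c \<in> Bw n w k"
  then obtain \<rho> where "\<rho> \<in> c" "\<forall>\<sigma>\<in>c. Rev n w k \<sigma> = Rev n w k \<rho>" using Bw_elem by metis
  then show "\<exists>R. Rev n w k ` c = {R}" by blast
next
  show "bij_betw (RevB n w k) (Bw n w k) (Cw n w (k + 1))"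
    unfolding bij_betw_def
  proof
    show "inj_on (RevB n w k) (Bw n w k)"
    proof
      fix c d assume c: "c \<in> Bw n w k" and d: "d \<in> Bw n w k" and e: "RevB n w k c = RevB n w k d"
      obtain \<rho> where "c = Linext n w k (Rev n w k \<rho>)" "RevB n w k c = Rev n w k \<rho>" using Bw_elem[OF c] by metis
      moreover obtain \<sigma> where "d = Linext n w k (Rev n w k \<sigma>)" "RevB n w k d = Rev n w k \<sigma>" using Bw_elem[OF d] by metis
      ultimately show "c = d" using e by simp
    qed
    show "RevB n w k ` Bw n w k = Cw n w (k + 1)"
    proof
      show "RevB n w k ` Bw n w k \<subseteq> Cw n w (k + 1)"
      proof
        fix R assume "R \<in> RevB n w k ` Bw n w k"
        then obtain c where c: "c \<in> Bw n w k" "R = RevB n w k c" by blast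
        obtain \<rho> where "\<rho> \<in> Aw n w k" "RevB n w k c = Rev n w k \<rho>" using Bw_elem[OF c(1)] by metis
        then show "R \<in> Cw n w (k + 1)" using c Rev_cons cons_iff by simp
      qed
      show "Cw n w (k + 1) \<subseteq> RevB n w k ` Bw n w k"
      proof
        fix R assume "R \<in> Cw n w (k + 1)"
        then have "cons1 SS pp (Suc k) R" using cons_iff by simp
        then show "R \<in> RevB n w k ` Bw n w k" using Linext_in by (metis image_eqI)
      qed
    qed
  qed
next
  fix c d assume c: "c \<in> Bw n w k" and d: "d \<in> Bw n w k"
  obtain \<rho> where \<rho>: "\<rho> \<in> Aw n w k" "c = Linext n w k (Rev n w k \<rho>)" "\<rho> \<in> c"
    "\<forall>\<sigma>\<in>c. Rev n w k \<sigma> = Rev n w k \<rho>" "RevB n w k c = Rev n w k \<rho>" using Bw_elem[OF c] by metis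
  obtain \<rho>' where \<rho>': "\<rho>' \<in> Aw n w k" "d = Linext n w k (Rev n w k \<rho>')" "\<rho>' \<in> d"
    "\<forall>\<sigma>\<in>d. Rev n w k \<sigma> = Rev n w k \<rho>'" "RevB n w k d = Rev n w k \<rho>'" using Bw_elem[OF d] by metis
  have inC: "Rev n w k \<rho> \<in> Cw n w (k + 1)" "Rev n w k \<rho>' \<in> Cw n w (k + 1)"
    using Rev_cons \<rho>(1) \<rho>'(1) cons_iff by auto
  have CRe: "Cw_le n w (k + 1) R R' \<longleftrightarrow> R \<in> Cw n w (k + 1) \<and> R' \<in> Cw n w (k + 1) \<and> (R, R') \<in> CR\<^sup>*" for R R'
    unfolding Cw_le_def CR_def by simp
  show "Bw_le n w k c d \<longleftrightarrow> Cw_le n w (k + 1) (RevB n w k c) (RevB n w k d)"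
  proof
    assume "Bw_le n w k c d"
    then obtain \<rho>1 \<sigma>1 where h: "\<rho>1 \<in> c" "\<sigma>1 \<in> d" "(\<rho>1, \<sigma>1) \<in> steps\<^sup>*"
      unfolding Bw_le_def steps_def by blast
    have "\<rho>1 \<in> Aw n w k" using h(1) \<rho>(2) linext_Aw(1)[OF Rev_sub] unfolding Linext_def by blast
    then have "(Rev n w k \<rho>1, Rev n w k \<sigma>1) \<in> CR\<^sup>*" using steps_Rev h(3) by blast
    then have "(Rev n w k \<rho>, Rev n w k \<rho>') \<in> CR\<^sup>*" using \<rho>(4) \<rho>'(4) h by simp
    then show "Cw_le n w (k + 1) (RevB n w k c) (RevB n w k d)" using CRe inC \<rho>(5) \<rho>'(5) by simp
  next
    assume "Cw_le n w (k + 1) (RevB n w k c) (RevB n w k d)"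
    then have "(Rev n w k \<rho>, Rev n w k \<rho>') \<in> CR\<^sup>*" using CRe \<rho>(5) \<rho>'(5) by simp
    then have "(\<rho>, \<rho>') \<in> steps\<^sup>*" using CR_steps inC(1) \<rho>(2,3) \<rho>'(2,3) by blast
    then show "Bw_le n w k c d" unfolding Bw_le_def steps_def using \<rho>(3) \<rho>'(3) by blast
  qed
next
  fix R assume "R \<in> Cw n w (k + 1)"
  then have "cons1 SS pp (Suc k) R" using cons_iff by simp
  then show "Linext n w k R \<in> Bw n w k" using Linext_in by simp
next
  fix R assume "R \<in> Cw n w (k + 1)"
  then have "cons1 SS pp (Suc k) R" using cons_iff by simp
  then show "RevB n w k (Linext n w k R) = R" using Linext_in by simp
qed

end

theorem theorem3p12:
  fixes n k :: nat and w :: "nat \<Rightarrow> nat"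
  assumes "0 < n" and "1 \<le> k" and "k \<le> n" and "w permutes {1..n}"
  shows "(\<forall>c\<in>Bw n w k. \<exists>R. Rev n w k ` c = {R})
    \<and> bij_betw (RevB n w k) (Bw n w k) (Cw n w (k + 1))
    \<and> (\<forall>c\<in>Bw n w k. \<forall>d\<in>Bw n w k.
          Bw_le n w k c d \<longleftrightarrow> Cw_le n w (k + 1) (RevB n w k c) (RevB n w k d))
    \<and> (\<forall>R\<in>Cw n w (k + 1). Linext n w k R \<in> Bw n w k \<and> RevB n w k (Linext n w k R) = R)"
proof -
  interpret ctx n k w using assms(2,4) by unfold_locales
  show ?thesis using main .
qed


end
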